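(* In the process algebra $\mathcal{G}$ described in the context, if the instance INST has a solution then $X\simeq Y$.
   Context: Process algebras: a triple $(\mathcal{C},\mathcal{A},\Delta)$ of finitely many constants, actions (including silent $\tau$) and rules $X\stackrel{\ell}{\longrightarrow}P$. Processes: $P::=\epsilon\mid X\mid PP'\mid P\|P'$, sequential composition associative, parallel composition associative and commutative, $\epsilon$ a unit for both. Semantics: rules of $\Delta$; if $P\stackrel{\ell}{\longrightarrow}P'$ then $PQ\stackrel{\ell}{\longrightarrow}P'Q$, $P\|Q\stackrel{\ell}{\longrightarrow}P'\|Q$, $Q\|P\stackrel{\ell}{\longrightarrow}Q\|P'$. $\Longrightarrow$ is the reflexive transitive closure of $\stackrel{\tau}{\longrightarrow}$. Branching bisimilarity $\simeq$ is the largest relation $\mathcal{B}$ such that whenever $P\mathcal{B}Q$ and $P\stackrel{\ell}{\longrightarrow}P'$, either $Q\Longrightarrow Q''\stackrel{\ell}{\longrightarrow}Q'$ with $P\mathcal{B}Q''$ and $P'\mathcal{B}Q'$, or $\ell=\tau$ and $P'\mathcal{B}Q$; and symmetrically. The algebra $\mathcal{G}$: fix a finite alphabet $\Sigma$ with $|\Sigma|\ge2$ and a Post Correspondence instance $\mathrm{INST}=\{(u_1,v_1),\dots,(u_n,v_n)\}$ with $u_k,v_k\in\Sigma^{+}$; INST has a solution if there exist $m\ge1$ and $i_1,\dots,i_m\in\{1,\dots,n\}$ with $u_{i_1}\cdots u_{i_m}=v_{i_1}\cdots v_{i_m}$. Let $\mathcal{N}=\{1,\dots,n\}$. Actions: $\{\lambda_U,\lambda_V,\lambda_D,\lambda_I,\lambda_S,\lambda_Z\}\cup\mathcal{N}\cup\Sigma\cup\{\tau\}$.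 Constants: $X,Y,Z,I,S,C,C',D,G,G',G_u,G_v,G_v'$, $U_k,V_k$ ($k\in\mathcal{N}$), and $W(\omega,k),W(\omega,0)$ for $k\in\mathcal{N}$ and $\omega$ a (possibly empty) suffix of $u_k$ or of $v_k$; $\mathcal{W}$ is the set of these $W$-constants. Rules (with $k$ ranging over $\mathcal{N}$, $a$ over $\Sigma$, $W$ over $\mathcal{W}$): $X\stackrel{\lambda_U}{\longrightarrow}D\|G_v$, $X\stackrel{\tau}{\longrightarrow}D$, $Y\stackrel{\tau}{\longrightarrow}D$, $D\stackrel{\tau}{\longrightarrow}D\|G_u$, $D\stackrel{\lambda_D}{\longrightarrow}C$; $G_u\stackrel{\tau}{\longrightarrow}G_uU_k$, $G_u\stackrel{\lambda_U}{\longrightarrow}G_vU_k$, $G_u\stackrel{\tau}{\longrightarrow}G_v'$, $G_v'\stackrel{\tau}{\longrightarrow}G_v'V_k$, $G_v'\stackrel{\tau}{\longrightarrow}Z$; $G_v\stackrel{\tau}{\longrightarrow}G_vV_k$, $G_v\stackrel{\tau}{\longrightarrow}\epsilon$, $G_v\stackrel{\lambda_V}{\longrightarrow}Z$, $Z\stackrel{\tau}{\longrightarrow}\epsilon$, $Z\stackrel{\lambda_Z}{\longrightarrow}\epsilon$; $C\stackrel{\lambda_I}{\longrightarrow}I$, $C\stackrel{\lambda_S}{\longrightarrow}S$, $C\stackrel{\tau}{\longrightarrow}C\|G$, $C\stackrel{\tau}{\longrightarrow}C\|G_v$; $G\stackrel{\tau}{\longrightarrow}GU_k$, $G\stackrel{\tau}{\longrightarrow}GV_k$,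 $G\stackrel{\tau}{\longrightarrow}\epsilon$; $I\stackrel{\lambda_I}{\longrightarrow}C'$, $I\stackrel{k}{\longrightarrow}I$, $S\stackrel{\lambda_S}{\longrightarrow}C'$, $S\stackrel{a}{\longrightarrow}S$, $C'\stackrel{\tau}{\longrightarrow}C'\|G'$, $C'\stackrel{\tau}{\longrightarrow}\epsilon$; $G'\stackrel{\tau}{\longrightarrow}G'U_k$, $G'\stackrel{\tau}{\longrightarrow}G'V_k$, $G'\stackrel{\tau}{\longrightarrow}G'W$, $G'\stackrel{\tau}{\longrightarrow}G_v$, $G'\stackrel{\tau}{\longrightarrow}Z$; $U_k\stackrel{\tau}{\longrightarrow}W(u_k,k)$, $V_k\stackrel{\tau}{\longrightarrow}W(v_k,k)$; $W(a\omega,k)\stackrel{a}{\longrightarrow}W(\omega,k)$, $W(a\omega,0)\stackrel{a}{\longrightarrow}W(\omega,0)$, $W(\omega,k)\stackrel{k}{\longrightarrow}W(\omega,0)$, $W(a\omega,k)\stackrel{\tau}{\longrightarrow}W(\omega,k)$, $W(a\omega,0)\stackrel{\tau}{\longrightarrow}W(\omega,0)$, $W(\omega,k)\stackrel{\tau}{\longrightarrow}W(\omega,0)$, $W(\epsilon,0)\stackrel{\tau}{\longrightarrow}\epsilon$. *)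

theory Defs
  imports Main "HOL-Library.Sublist"
begin

datatype 'c proc = Eps | Cst 'c | Seq "'c proc" "'c proc" | Par "'c proc" "'c proc"

inductive scong :: "'c proc \<Rightarrow> 'c proc \<Rightarrow> bool" where
  refl: "scong P P"
| sym: "scong P Q \<Longrightarrow> scong Q P"
| trans: "scong P Q \<Longrightarrow> scong Q R \<Longrightarrow> scong P R"
| seq_ctx: "scong P P' \<Longrightarrow> scong Q Q' \<Longrightarrow> scong (Seq P Q) (Seq P' Q')"
| par_ctx: "scong P P' \<Longrightarrow> scong Q Q' \<Longrightarrow> scong (Par P Q) (Par P' Q')"
| seq_assoc: "scong (Seq (Seq P Q) R) (Seq P (Seq Q R))"
| par_assoc: "scong (Par (Par P Q) R) (Par P (Par Q R))"
| par_comm: "scong (Par P Q) (Par Q P)"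
| seq_unitl: "scong (Seq Eps P) P"
| seq_unitr: "scong (Seq P Eps) P"
| par_unitl: "scong (Par Eps P) P"
| par_unitr: "scong (Par P Eps) P"

inductive step :: "('c \<Rightarrow> 'a \<Rightarrow> 'c proc \<Rightarrow> bool) \<Rightarrow> 'c proc \<Rightarrow> 'a \<Rightarrow> 'c proc \<Rightarrow> bool"
  for Delta where
  rule: "Delta X l P \<Longrightarrow> step Delta (Cst X) l P"
| seq: "step Delta P l P' \<Longrightarrow> step Delta (Seq P Q) l (Seq P' Q)"
| parl: "step Delta P l P' \<Longrightarrow> step Delta (Par P Q) l (Par P' Q)"
| parr: "step Delta P l P' \<Longrightarrow> step Delta (Par Q P) l (Par Q P')"
| cong: "scong P P0 \<Longrightarrow> step Delta P0 l Q0 \<Longrightarrow> scong Q0 Q \<Longrightarrow> step Delta P l Q"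

definition weak_tau :: "('c \<Rightarrow> 'a \<Rightarrow> 'c proc \<Rightarrow> bool) \<Rightarrow> 'a \<Rightarrow> 'c proc \<Rightarrow> 'c proc \<Rightarrow> bool" where
  "weak_tau Delta tau = (\<lambda>P Q. step Delta P tau Q)\<^sup>*\<^sup>*"

definition branching_bisim_rel ::
  "('c \<Rightarrow> 'a \<Rightarrow> 'c proc \<Rightarrow> bool) \<Rightarrow> 'a \<Rightarrow> ('c proc \<Rightarrow> 'c proc \<Rightarrow> bool) \<Rightarrow> bool" where
  "branching_bisim_rel Delta tau B \<longleftrightarrow>
     (\<forall>P Q l P'. B P Q \<and> step Delta P l P' \<longrightarrow>
        (\<exists>Q'' Q'. weak_tau Delta tau Q Q'' \<and> step Delta Q'' l Q' \<and> B P Q'' \<and> B P' Q')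
        \<or> (l = tau \<and> B P' Q)) \<and>
     (\<forall>P Q l Q'. B P Q \<and> step Delta Q l Q' \<longrightarrow>
        (\<exists>P'' P'. weak_tau Delta tau P P'' \<and> step Delta P'' l P' \<and> B P'' Q \<and> B P' Q')
        \<or> (l = tau \<and> B P Q'))"

definition branching_bisimilar ::
  "('c \<Rightarrow> 'a \<Rightarrow> 'c proc \<Rightarrow> bool) \<Rightarrow> 'a \<Rightarrow> 'c proc \<Rightarrow> 'c proc \<Rightarrow> bool" where
  "branching_bisimilar Delta tau P Q \<longleftrightarrow> (\<exists>B. branching_bisim_rel Delta tau B \<and> B P Q)"

datatype 's act = Tau | LU | LV | LD | LI | LS | LZ | Idx nat | Sym 's

datatype 's const = X | Y | Z | I | S | C | C' | D | G | G' | Gu | Gv | Gv'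
  | U nat | V nat | W "'s list" nat

type_synonym 's pcp = "('s list \<times> 's list) list"

definition idx :: "'s pcp \<Rightarrow> nat set" where
  "idx inst = {1..length inst}"

definition uw :: "'s pcp \<Rightarrow> nat \<Rightarrow> 's list" where
  "uw inst k = fst (inst ! (k - 1))"

definition vw :: "'s pcp \<Rightarrow> nat \<Rightarrow> 's list" where
  "vw inst k = snd (inst ! (k - 1))"

definition Wset :: "'s pcp \<Rightarrow> 's const set" where
  "Wset inst = {W w j | w j k. k \<in> idx inst \<and> (j = k \<or> j = 0) \<and>
                  (suffix w (uw inst k) \<or> suffix w (vw inst k))}"

definition pcp_solvable :: "'s pcp \<Rightarrow> bool" where
  "pcp_solvable inst \<longleftrightarrow> (\<exists>is. is \<noteq> [] \<and> set is \<subseteq> idx inst \<and>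
      concat (map (uw inst) is) = concat (map (vw inst) is))"

inductive rulesG :: "'s set \<Rightarrow> 's pcp \<Rightarrow> 's const \<Rightarrow> 's act \<Rightarrow> 's const proc \<Rightarrow> bool"
  for Sig inst where
  "rulesG Sig inst X LU (Par (Cst D) (Cst Gv))"
| "rulesG Sig inst X Tau (Cst D)"
| "rulesG Sig inst Y Tau (Cst D)"
| "rulesG Sig inst D Tau (Par (Cst D) (Cst Gu))"
| "rulesG Sig inst D LD (Cst C)"
| "k \<in> idx inst \<Longrightarrow> rulesG Sig inst Gu Tau (Seq (Cst Gu) (Cst (U k)))"
| "k \<in> idx inst \<Longrightarrow> rulesG Sig inst Gu LU (Seq (Cst Gv) (Cst (U k)))"
| "rulesG Sig inst Gu Tau (Cst Gv')"
| "k \<in> idx inst \<Longrightarrow> rulesG Sig inst Gv' Tau (Seq (Cst Gv') (Cst (V k)))"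
| "rulesG Sig inst Gv' Tau (Cst Z)"
| "k \<in> idx inst \<Longrightarrow> rulesG Sig inst Gv Tau (Seq (Cst Gv) (Cst (V k)))"
| "rulesG Sig inst Gv Tau Eps"
| "rulesG Sig inst Gv LV (Cst Z)"
| "rulesG Sig inst Z Tau Eps"
| "rulesG Sig inst Z LZ Eps"
| "rulesG Sig inst C LI (Cst I)"
| "rulesG Sig inst C LS (Cst S)"
| "rulesG Sig inst C Tau (Par (Cst C) (Cst G))"
| "rulesG Sig inst C Tau (Par (Cst C) (Cst Gv))"
| "k \<in> idx inst \<Longrightarrow> rulesG Sig inst G Tau (Seq (Cst G) (Cst (U k)))"
| "k \<in> idx inst \<Longrightarrow> rulesG Sig inst G Tau (Seq (Cst G) (Cst (V k)))"
| "rulesG Sig inst G Tau Eps"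
| "rulesG Sig inst I LI (Cst C')"
| "k \<in> idx inst \<Longrightarrow> rulesG Sig inst I (Idx k) (Cst I)"
| "rulesG Sig inst S LS (Cst C')"
| "a \<in> Sig \<Longrightarrow> rulesG Sig inst S (Sym a) (Cst S)"
| "rulesG Sig inst C' Tau (Par (Cst C') (Cst G'))"
| "rulesG Sig inst C' Tau Eps"
| "k \<in> idx inst \<Longrightarrow> rulesG Sig inst G' Tau (Seq (Cst G') (Cst (U k)))"
| "k \<in> idx inst \<Longrightarrow> rulesG Sig inst G' Tau (Seq (Cst G') (Cst (V k)))"
| "w \<in> Wset inst \<Longrightarrow> rulesG Sig inst G' Tau (Seq (Cst G') (Cst w))"
| "rulesG Sig inst G' Tau (Cst Gv)"
| "rulesG Sig inst G' Tau (Cst Z)"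
| "k \<in> idx inst \<Longrightarrow> rulesG Sig inst (U k) Tau (Cst (W (uw inst k) k))"
| "k \<in> idx inst \<Longrightarrow> rulesG Sig inst (V k) Tau (Cst (W (vw inst k) k))"
| "k \<in> idx inst \<Longrightarrow> a \<in> Sig \<Longrightarrow> W (a # w) k \<in> Wset inst \<Longrightarrow>
     rulesG Sig inst (W (a # w) k) (Sym a) (Cst (W w k))"
| "a \<in> Sig \<Longrightarrow> W (a # w) 0 \<in> Wset inst \<Longrightarrow>
     rulesG Sig inst (W (a # w) 0) (Sym a) (Cst (W w 0))"
| "k \<in> idx inst \<Longrightarrow> W w k \<in> Wset inst \<Longrightarrow>
     rulesG Sig inst (W w k) (Idx k) (Cst (W w 0))"
| "k \<in> idx inst \<Longrightarrow> a \<in> Sig \<Longrightarrow> W (a # w) k \<in> Wset inst \<Longrightarrow>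
     rulesG Sig inst (W (a # w) k) Tau (Cst (W w k))"
| "a \<in> Sig \<Longrightarrow> W (a # w) 0 \<in> Wset inst \<Longrightarrow>
     rulesG Sig inst (W (a # w) 0) Tau (Cst (W w 0))"
| "k \<in> idx inst \<Longrightarrow> W w k \<in> Wset inst \<Longrightarrow>
     rulesG Sig inst (W w k) Tau (Cst (W w 0))"
| "W [] 0 \<in> Wset inst \<Longrightarrow> rulesG Sig inst (W [] 0) Tau Eps"

end

theory Submission
  imports Defs "HOL-Library.Multiset"
begin


section \<open>Flat semantics of processes\<close>

definition seqm :: "'c list multiset \<Rightarrow> 'c list multiset \<Rightarrow> 'c list multiset option" where
  "seqm x y = (if x = {#} then Some y else if y = {#} then Some x else
     if (\<exists>w w'. x = {#w#} \<and> y = {#w'#}) then Some {#(THE w. x = {#w#}) @ (THE w. y = {#w#})#} else None)"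

fun seqO :: "'c list multiset option \<Rightarrow> 'c list multiset option \<Rightarrow> 'c list multiset option" where
  "seqO (Some x) (Some y) = seqm x y"
| "seqO _ _ = None"

fun parO :: "'c list multiset option \<Rightarrow> 'c list multiset option \<Rightarrow> 'c list multiset option" where
  "parO (Some x) (Some y) = Some (x + y)"
| "parO _ _ = None"

fun sem :: "'c proc \<Rightarrow> 'c list multiset option" where
  "sem Eps = Some {#}"
| "sem (Cst c) = Some {#[c]#}"
| "sem (Par P Q) = parO (sem P) (sem Q)"
| "sem (Seq P Q) = seqO (sem P) (sem Q)"

lemma seqm_single[simp]: "seqm {#w#} {#w'#} = Some {#w @ w'#}"
  by (simp add: seqm_def)

lemma seqm_empty1[simp]: "seqm {#} y = Some y" by (simp add: seqm_def)
lemma seqm_empty2[simp]: "seqm x {#} = Some x" by (simp add: seqm_def)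

lemma seqm_cases:
  assumes "seqm x y = Some z"
  shows "(x = {#} \<and> z = y) \<or> (y = {#} \<and> z = x) \<or> (\<exists>w w'. x = {#w#} \<and> y = {#w'#} \<and> z = {#w@w'#})"
  using assms by (auto simp: seqm_def split: if_splits)

lemma seqm_none:
  assumes "x \<noteq> {#}" "y \<noteq> {#}" "\<not>(\<exists>w w'. x = {#w#} \<and> y = {#w'#})"
  shows "seqm x y = None"
  using assms by (auto simp: seqm_def)

lemma seqO_None2[simp]: "seqO x None = None"
  by (cases x) auto

lemma parO_None2[simp]: "parO x None = None"
  by (cases x) auto

lemma seqO_unitl[simp]: "seqO (Some {#}) y = y"
  by (cases y) auto
lemma seqO_unitr[simp]: "seqO x (Some {#}) = x"
  by (cases x) auto
lemma parO_unitl[simp]: "parO (Some {#}) y = y"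
  by (cases y) auto
lemma parO_unitr[simp]: "parO x (Some {#}) = x"
  by (cases x) auto

lemma parO_comm: "parO x y = parO y x"
  by (cases x; cases y) (auto simp: add.commute)

lemma parO_assoc: "parO (parO x y) z = parO x (parO y z)"
  by (cases x; cases y; cases z) (auto simp: add.assoc)

lemma single_neq_empty_aux: "{#w#} \<noteq> {#}" by simp

lemma seqm_assoc:
  "seqO (seqm x y) (Some z) = seqO (Some x) (seqm y z)"
proof (cases "x = {#}")
  case True then show ?thesis by simp
next
  case x: False
  show ?thesis
  proof (cases "y = {#}")
    case True then show ?thesis by simp
  next
    case y: False
    show ?thesis
    proof (cases "z = {#}")
      case True then show ?thesis by simp
    next
      case z: False
      show ?thesis
      proof (cases "(\<exists>w. x = {#w#}) \<and> (\<exists>w. y = {#w#}) \<and> (\<exists>w. z = {#w#})")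
        case True then show ?thesis by auto
      next
        case False
        have "seqO (seqm x y) (Some z) = None"
        proof (cases "seqm x y")
          case (Some a)
          then have "(\<exists>w w'. x = {#w#} \<and> y = {#w'#} \<and> a = {#w@w'#})"
            using seqm_cases[OF Some] x y by auto
          then obtain w w' where "a = {#w@w'#}" "x = {#w#}" "y = {#w'#}" by blast
          then show ?thesis using Some False z by (auto intro!: seqm_none)
        qed simp
        moreover have "seqO (Some x) (seqm y z) = None"
        proof (cases "seqm y z")
          case (Some a)
          then have "(\<exists>w w'. y = {#w#} \<and> z = {#w'#} \<and> a = {#w@w'#})"
            using seqm_cases[OF Some] y z by auto
          then obtain w w' where "a = {#w@w'#}" "y = {#w#}" "z = {#w'#}" by blast
          then show ?thesis using Some False x by (auto intro!: seqm_none)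
        qed simp
        ultimately show ?thesis by simp
      qed
    qed
  qed
qed

lemma seqO_assoc: "seqO (seqO x y) z = seqO x (seqO y z)"
  by (cases x; cases y; cases z) (auto simp: seqm_assoc)

lemma parO_lcomm: "parO x (parO y z) = parO y (parO x z)"
  by (cases x; cases y; cases z) (auto simp: add_ac)

lemma scong_sem: "scong P Q \<Longrightarrow> sem P = sem Q"
  by (induction rule: scong.induct) (auto simp: seqO_assoc parO_assoc parO_comm parO_lcomm)

fun wm :: "'c list \<Rightarrow> 'c list multiset" where
  "wm [] = {#}"
| "wm w = {#w#}"

lemma sem_nonempty: "sem P = Some m \<Longrightarrow> [] \<notin># m"
proof (induction P arbitrary: m)
  case (Seq P Q)
  then show ?case
    by (cases "sem P"; cases "sem Q") (auto dest!: seqm_cases)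
next
  case (Par P Q)
  then show ?case by (cases "sem P"; cases "sem Q") auto
qed auto

lemma seqO_wm: "seqO (Some (wm a)) (Some (wm b)) = Some (wm (a @ b))"
  by (cases a; cases b) auto

lemma step_sem:
  assumes "step Delta P l P'" "sem P = Some m"
  shows "\<exists>t m0 R. m = add_mset t m0 \<and> t \<noteq> [] \<and> Delta (hd t) l R \<and>
           sem P' = parO (Some m0) (seqO (sem R) (Some (wm (tl t))))"
  using assms
proof (induction arbitrary: m rule: step.induct)
  case (rule X l P)
  then show ?case by (intro exI[of _ "[X]"] exI[of _ "{#}"] exI[of _ P]) auto
next
  case (seq P l P' Q)
  from seq.prems obtain x y where x: "sem P = Some x" and y: "sem Q = Some y" and xy: "seqm x y = Some m"
    by (cases "sem P"; cases "sem Q") auto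
  from seq.IH[OF x] obtain t m0 R where t: "x = add_mset t m0" "t \<noteq> []" "Delta (hd t) l R"
     "sem P' = parO (Some m0) (seqO (sem R) (Some (wm (tl t))))" by blast
  from seqm_cases[OF xy] t(1) consider "y = {#}" "m = x" | w w' where "x = {#w#}" "y = {#w'#}" "m = {#w@w'#}"
    by auto
  then show ?case
  proof cases
    case 1
    then show ?thesis using t y by (intro exI[of _ t] exI[of _ m0] exI[of _ R]) auto
  next
    case 2
    then have "t = w" "m0 = {#}" using t(1) by auto
    have "sem (Seq P' Q) = seqO (seqO (sem R) (Some (wm (tl w)))) (Some {#w'#})"
      using t(4) y \<open>m0 = {#}\<close> 2 \<open>t = w\<close> by simp
    also have "\<dots> = seqO (sem R) (Some (wm (tl w @ w')))"
      using seqO_wm[of "tl w" w'] seqO_assoc[of "sem R" "Some (wm (tl w))" "Some {#w'#}"]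
        sem_nonempty[OF y] 2
      by (cases w') auto
    finally show ?thesis using 2 t \<open>t = w\<close>
      by (intro exI[of _ "w @ w'"] exI[of _ "{#}"] exI[of _ R]) auto
  qed
next
  case (parl P l P' Q)
  from parl.prems obtain x y where x: "sem P = Some x" and y: "sem Q = Some y" and xy: "m = x + y"
    by (cases "sem P"; cases "sem Q") auto
  from parl.IH[OF x] obtain t m0 R where t: "x = add_mset t m0" "t \<noteq> []" "Delta (hd t) l R"
     "sem P' = parO (Some m0) (seqO (sem R) (Some (wm (tl t))))" by blast
  show ?case using t xy y
    by (intro exI[of _ t] exI[of _ "m0 + y"] exI[of _ R])
       (cases "seqO (sem R) (Some (wm (tl t)))"; auto simp: add_ac)
next
  case (parr P l P' Q)
  from parr.prems obtain x y where x: "sem P = Some x" and y: "sem Q = Some y" and xy: "m = y + x"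
    by (cases "sem P"; cases "sem Q") auto
  from parr.IH[OF x] obtain t m0 R where t: "x = add_mset t m0" "t \<noteq> []" "Delta (hd t) l R"
     "sem P' = parO (Some m0) (seqO (sem R) (Some (wm (tl t))))" by blast
  show ?case using t xy y
    by (intro exI[of _ t] exI[of _ "m0 + y"] exI[of _ R])
       (cases "seqO (sem R) (Some (wm (tl t)))"; auto simp: add_ac)
next
  case (cong P P0 l Q0 Q)
  then show ?case using scong_sem by metis
qed

lemma scong_trans_calc[trans]: "scong P Q \<Longrightarrow> scong Q R \<Longrightarrow> scong P R"
  by (rule scong.trans)

fun wterm :: "'c list \<Rightarrow> 'c proc" where
  "wterm [] = Eps"
| "wterm (c # w) = Seq (Cst c) (wterm w)"

lemma sem_wterm: "sem (wterm w) = Some (wm w)"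
proof (induction w)
  case (Cons c w) then show ?case by (cases w) auto
qed auto

lemma wterm_app: "scong (Seq (wterm a) (wterm b)) (wterm (a @ b))"
proof (induction a)
  case Nil then show ?case by (simp add: scong.seq_unitl)
next
  case (Cons c a)
  have "scong (Seq (Seq (Cst c) (wterm a)) (wterm b)) (Seq (Cst c) (Seq (wterm a) (wterm b)))"
    by (rule scong.seq_assoc)
  also have "scong \<dots> (Seq (Cst c) (wterm (a @ b)))"
    using Cons by (intro scong.seq_ctx scong.refl)
  finally show ?case by simp
qed
  

lemma sem_empty_scong: "sem A = Some {#} \<Longrightarrow> scong A Eps"
proof (induction A)
  case Eps show ?case by (rule scong.refl)
next
  case (Cst x) then show ?case by simp
next
  case (Seq P Q)
  then obtain x y where "sem P = Some x" "sem Q = Some y" "seqm x y = Some {#}"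
    by (cases "sem P"; cases "sem Q") auto
  then have "x = {#}" "y = {#}" by (auto dest!: seqm_cases)
  then have "scong (Seq P Q) (Seq Eps Eps)" using Seq \<open>sem P = _\<close> \<open>sem Q = _\<close>
    by (auto intro: scong.seq_ctx)
  also have "scong (Seq Eps Eps) Eps" by (rule scong.seq_unitl)
  finally show ?case .
next
  case (Par P Q)
  then obtain x y where "sem P = Some x" "sem Q = Some y" "x + y = {#}"
    by (cases "sem P"; cases "sem Q") auto
  then have "x = {#}" "y = {#}" by auto
  then have "scong (Par P Q) (Par Eps Eps)" using Par \<open>sem P = _\<close> \<open>sem Q = _\<close>
    by (auto intro: scong.par_ctx)
  also have "scong (Par Eps Eps) Eps" by (rule scong.par_unitl)
  finally show ?case .
qed

lemma decomp:
  "sem Q = Some (add_mset t m0) \<Longrightarrow> \<exists>P0. sem P0 = Some m0 \<and> scong Q (Par (wterm t) P0)"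
proof (induction Q arbitrary: t m0)
  case Eps then show ?case by simp
next
  case (Cst c)
  then have "t = [c]" "m0 = {#}" by auto
  have "scong (Cst c) (Seq (Cst c) Eps)" by (rule scong.sym, rule scong.seq_unitr)
  also have "scong \<dots> (Par (Seq (Cst c) Eps) Eps)" by (rule scong.sym, rule scong.par_unitr)
  finally show ?case using \<open>t = _\<close> \<open>m0 = _\<close> by (intro exI[of _ Eps]) auto
next
  case (Par A B)
  then obtain x y where x: "sem A = Some x" and y: "sem B = Some y" and xy: "x + y = add_mset t m0"
    by (cases "sem A"; cases "sem B") auto
  have "t \<in># x + y" using xy by simp
  then consider "t \<in># x" | "t \<in># y" by auto
  then show ?case
  proof cases
    case 1
    then obtain x0 where x0: "x = add_mset t x0" by (metis multi_member_split)
    from Par.IH(1)[of t x0] x x0 obtain A0 where A0: "sem A0 = Some x0" "scong A (Par (wterm t) A0)" by auto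
    have "scong (Par A B) (Par (Par (wterm t) A0) B)" using A0 by (auto intro: scong.par_ctx scong.refl)
    also have "scong \<dots> (Par (wterm t) (Par A0 B))" by (rule scong.par_assoc)
    finally show ?thesis using A0 y xy x0 by (intro exI[of _ "Par A0 B"]) auto
  next
    case 2
    then obtain y0 where y0: "y = add_mset t y0" by (metis multi_member_split)
    from Par.IH(2)[of t y0] y y0 obtain B0 where B0: "sem B0 = Some y0" "scong B (Par (wterm t) B0)" by auto
    have "scong (Par A B) (Par A (Par (wterm t) B0))" using B0 by (auto intro: scong.par_ctx scong.refl)
    also have "scong \<dots> (Par (Par A (wterm t)) B0)" by (rule scong.sym, rule scong.par_assoc)
    also have "scong \<dots> (Par (Par (wterm t) A) B0)" by (intro scong.par_ctx scong.par_comm scong.refl)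
    also have "scong \<dots> (Par (wterm t) (Par A B0))" by (rule scong.par_assoc)
    finally show ?thesis using B0 x xy y0 by (intro exI[of _ "Par A B0"]) auto
  qed
next
  case (Seq A B)
  then obtain x y where x: "sem A = Some x" and y: "sem B = Some y" and xy: "seqm x y = Some (add_mset t m0)"
    by (cases "sem A"; cases "sem B") auto
  from seqm_cases[OF xy] consider "x = {#}" "y = add_mset t m0" | "y = {#}" "x = add_mset t m0"
    | w w' where "x = {#w#}" "y = {#w'#}" "add_mset t m0 = {#w@w'#}" by auto
  then show ?case
  proof cases
    case 1
    from Seq.IH(2)[of t m0] y 1 obtain B0 where B0: "sem B0 = Some m0" "scong B (Par (wterm t) B0)" by auto
    have "scong (Seq A B) (Seq Eps B)" using sem_empty_scong[of A] x 1 by (auto intro: scong.seq_ctx scong.refl)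
    also have "scong \<dots> B" by (rule scong.seq_unitl)
    also have "scong \<dots> (Par (wterm t) B0)" by (rule B0)
    finally show ?thesis using B0 by auto
  next
    case 2
    from Seq.IH(1)[of t m0] x 2 obtain A0 where A0: "sem A0 = Some m0" "scong A (Par (wterm t) A0)" by auto
    have "scong (Seq A B) (Seq A Eps)" using sem_empty_scong[of B] y 2 by (auto intro: scong.seq_ctx scong.refl)
    also have "scong \<dots> A" by (rule scong.seq_unitr)
    also have "scong \<dots> (Par (wterm t) A0)" by (rule A0)
    finally show ?thesis using A0 by auto
  next
    case 3
    then have tm: "t = w @ w'" "m0 = {#}" by (auto simp: add_mset_eq_single)
    from Seq.IH(1)[of w "{#}"] x 3 obtain A0 where A0: "sem A0 = Some {#}" "scong A (Par (wterm w) A0)" by auto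
    from Seq.IH(2)[of w' "{#}"] y 3 obtain B0 where B0: "sem B0 = Some {#}" "scong B (Par (wterm w') B0)" by auto
    have "scong A (Par (wterm w) Eps)" using A0 sem_empty_scong[OF A0(1)]
      by (meson scong.par_ctx scong.refl scong.trans)
    then have a: "scong A (wterm w)" by (meson scong.par_unitr scong.trans)
    have "scong B (Par (wterm w') Eps)" using B0 sem_empty_scong[OF B0(1)]
      by (meson scong.par_ctx scong.refl scong.trans)
    then have b: "scong B (wterm w')" by (meson scong.par_unitr scong.trans)
    have "scong (Seq A B) (Seq (wterm w) (wterm w'))" using a b by (rule scong.seq_ctx)
    also have "scong \<dots> (wterm (w @ w'))" by (rule wterm_app)
    also have "scong \<dots> (Par (wterm (w@w')) Eps)" by (rule scong.sym, rule scong.par_unitr)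
    finally show ?thesis using tm by (intro exI[of _ Eps]) auto
  qed
qed

lemma fire:
  assumes "sem Q = Some (add_mset (c # rest) m0)" "Delta c l R"
  shows "\<exists>Q'. step Delta Q l Q' \<and> sem Q' = parO (seqO (sem R) (Some (wm rest))) (Some m0)"
proof -
  from decomp[OF assms(1)] obtain P0 where P0: "sem P0 = Some m0" "scong Q (Par (wterm (c#rest)) P0)" by blast
  have "step Delta (Cst c) l R" using assms(2) by (rule step.rule)
  then have "step Delta (Seq (Cst c) (wterm rest)) l (Seq R (wterm rest))" by (rule step.seq)
  then have "step Delta (Par (Seq (Cst c) (wterm rest)) P0) l (Par (Seq R (wterm rest)) P0)" by (rule step.parl)
  then have "step Delta Q l (Par (Seq R (wterm rest)) P0)"
    using P0 by (auto intro: step.cong scong.refl)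
  then show ?thesis using P0 by (auto simp: sem_wterm)
qed


locale pcpG =
  fixes Sig :: "'s set" and inst :: "'s pcp"
  assumes words: "\<forall>(u, v) \<in> set inst. u \<noteq> [] \<and> v \<noteq> [] \<and> set u \<subseteq> Sig \<and> set v \<subseteq> Sig"
begin

abbreviation "Delta \<equiv> rulesG Sig inst"

definition isctrl :: "'s const \<Rightarrow> bool" where
  "isctrl c \<longleftrightarrow> c \<in> {X, Y, D, C, I, S, C'}"

fun rw :: "'s const proc \<Rightarrow> 's const list" where
  "rw Eps = []"
| "rw (Cst c) = [c]"
| "rw (Seq P Q) = rw P @ rw Q"
| "rw (Par P Q) = []"

definition tmove :: "'s const list \<Rightarrow> 's act \<Rightarrow> 's const list \<Rightarrow> bool" where
  "tmove t l t' \<longleftrightarrow> (\<exists>c rest R. t = c # rest \<and> \<not> isctrl c \<and> Delta c l R \<and> t' = rw R @ rest)"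

definition cmove :: "'s const \<Rightarrow> 's act \<Rightarrow> 's const list multiset \<Rightarrow> bool" where
  "cmove c l r \<longleftrightarrow> isctrl c \<and> (\<exists>R. Delta c l R \<and> sem R = Some r)"

definition mstep :: "'s const list multiset \<Rightarrow> 's act \<Rightarrow> 's const list multiset \<Rightarrow> bool" where
  "mstep m l m' \<longleftrightarrow> (\<exists>t t' m0. m = add_mset t m0 \<and> tmove t l t' \<and> m' = m0 + wm t') \<or>
                    (\<exists>c r m0. m = add_mset [c] m0 \<and> cmove c l r \<and> m' = m0 + r)"

definition good :: "'s const list multiset \<Rightarrow> bool" where
  "good m \<longleftrightarrow> (\<forall>t\<in>#m. t \<noteq> [] \<and> (\<forall>c\<in>set t. isctrl c \<longrightarrow> t = [c]))"

lemma nonctrl_rule_sem: "Delta c l R \<Longrightarrow> \<not> isctrl c \<Longrightarrow> sem R = Some (wm (rw R))"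
  by (induction rule: rulesG.induct) (auto simp: isctrl_def Wset_def)

lemma nonctrl_rule_rw: "Delta c l R \<Longrightarrow> \<not> isctrl c \<Longrightarrow> \<forall>d\<in>set (rw R). \<not> isctrl d"
  by (induction rule: rulesG.induct) (auto simp: isctrl_def Wset_def)

lemma ctrl_rule_sem: "Delta c l R \<Longrightarrow> isctrl c \<Longrightarrow> \<exists>r. sem R = Some r \<and> good r"
  by (induction rule: rulesG.induct) (auto simp: isctrl_def good_def)

lemma step_mstep:
  assumes "step Delta P l P'" "sem P = Some m" "good m"
  shows "\<exists>m'. sem P' = Some m' \<and> mstep m l m'"
proof -
  from step_sem[OF assms(1,2)] obtain t m0 R where t: "m = add_mset t m0" "t \<noteq> []" "Delta (hd t) l R"
    "sem P' = parO (Some m0) (seqO (sem R) (Some (wm (tl t))))" by blast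
  obtain c rest where tc: "t = c # rest" using t(2) by (cases t) auto
  show ?thesis
  proof (cases "isctrl c")
    case True
    then have "rest = []" using assms(3) t(1) tc unfolding good_def by auto
    from ctrl_rule_sem[of c l R] True t(3) tc obtain r where "sem R = Some r" by auto
    then show ?thesis using t tc \<open>rest = []\<close> True
      by (auto simp: mstep_def cmove_def intro!: exI[of _ "m0 + r"]) (metis add.commute)
  next
    case False
    have "sem P' = Some (m0 + wm (rw R @ rest))"
      using t(3,4) tc False nonctrl_rule_sem[of c l R] seqO_wm[of "rw R" rest] by (simp add: add.commute)
    moreover have "tmove t l (rw R @ rest)" using t tc False unfolding tmove_def by auto
    ultimately show ?thesis using t(1) unfolding mstep_def by blast
  qed
qed

lemma mstep_step:
  assumes "sem Q = Some n" "mstep n l n'"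
  shows "\<exists>Q'. step Delta Q l Q' \<and> sem Q' = Some n'"
  using assms(2) unfolding mstep_def
proof (elim disjE exE conjE)
  fix t t' m0
  assume a: "n = add_mset t m0" "tmove t l t'" "n' = m0 + wm t'"
  then obtain c rest R where c: "t = c # rest" "\<not> isctrl c" "Delta c l R" "t' = rw R @ rest"
    unfolding tmove_def by blast
  from fire[of Q c rest m0 Delta l R] assms(1) a c obtain Q' where
    "step Delta Q l Q'" "sem Q' = parO (seqO (sem R) (Some (wm rest))) (Some m0)" by auto
  then show ?thesis using nonctrl_rule_sem[OF c(3,2)] seqO_wm[of "rw R" rest] a c
    by (auto simp: add.commute)
next
  fix c r m0
  assume a: "n = add_mset [c] m0" "cmove c l r" "n' = m0 + r"
  then obtain R where "Delta c l R" "sem R = Some r" unfolding cmove_def by blast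
  from fire[of Q c "[]" m0 Delta l R] assms(1) a this obtain Q' where
    "step Delta Q l Q'" "sem Q' = parO (seqO (sem R) (Some (wm []))) (Some m0)" by auto
  then show ?thesis using a \<open>sem R = _\<close> by (auto simp: add.commute)
qed

abbreviation mtau :: "'s const list multiset \<Rightarrow> 's const list multiset \<Rightarrow> bool" where
  "mtau \<equiv> (\<lambda>a b. mstep a Tau b)\<^sup>*\<^sup>*"

lemma mtau_weak:
  assumes "mtau n n''" "sem Q = Some n"
  shows "\<exists>Q''. weak_tau Delta Tau Q Q'' \<and> sem Q'' = Some n''"
  using assms
proof (induction arbitrary: Q rule: converse_rtranclp_induct)
  case base then show ?case by (auto simp: weak_tau_def)
next
  case (step a b)
  from mstep_step[OF step.prems step.hyps(1)] obtain Q1 where "step Delta Q Tau Q1" "sem Q1 = Some b" by blast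
  from step.IH[OF this(2)] obtain Q'' where "weak_tau Delta Tau Q1 Q''" "sem Q'' = Some n''" by blast
  then show ?case using \<open>step Delta Q Tau Q1\<close> unfolding weak_tau_def
    by (meson converse_rtranclp_into_rtranclp)
qed

lemma good_mstep: "good m \<Longrightarrow> mstep m l m' \<Longrightarrow> good m'"
  unfolding mstep_def
proof (elim disjE exE conjE)
  fix t t' m0 assume a: "good m" "m = add_mset t m0" "tmove t l t'" "m' = m0 + wm t'"
  then obtain c rest R where c: "t = c # rest" "\<not> isctrl c" "Delta c l R" "t' = rw R @ rest"
    unfolding tmove_def by blast
  have "\<forall>d\<in>set rest. \<not> isctrl d"
  proof
    fix d assume d: "d \<in> set rest"
    have "t \<in># m" using a(2) by simp
    then have "\<forall>c\<in>set t. isctrl c \<longrightarrow> t = [c]" using a(1) unfolding good_def by blast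
    then show "\<not> isctrl d" using d c(1) by auto
  qed
  then have "\<forall>d\<in>set t'. \<not> isctrl d" using nonctrl_rule_rw[OF c(3,2)] c(4) by auto
  have g0: "good m0" using a(1,2) unfolding good_def by simp
  have wm_mem: "x \<in># wm t' \<Longrightarrow> x = t' \<and> t' \<noteq> []" for x by (cases t') auto
  show "good m'" unfolding good_def
  proof
    fix x assume "x \<in># m'"
    then have "x \<in># m0 \<or> x \<in># wm t'" using a(4) by simp
    then show "x \<noteq> [] \<and> (\<forall>c\<in>set x. isctrl c \<longrightarrow> x = [c])"
    proof
      assume "x \<in># m0" then show ?thesis using g0 unfolding good_def by blast
    next
      assume "x \<in># wm t'" then show ?thesis using wm_mem \<open>\<forall>d\<in>set t'. \<not> isctrl d\<close> by blast
    qed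
  qed
next
  fix c r m0 assume a: "good m" "m = add_mset [c] m0" "cmove c l r" "m' = m0 + r"
  then show "good m'" using ctrl_rule_sem[of c l] unfolding cmove_def good_def by fastforce
qed

definition msim :: "('s const list multiset \<Rightarrow> 's const list multiset \<Rightarrow> bool) \<Rightarrow> bool" where
  "msim Rel \<longleftrightarrow> (\<forall>m n. Rel m n \<longrightarrow> good m \<and> good n \<and> Rel n m) \<and>
     (\<forall>m n l m'. Rel m n \<and> mstep m l m' \<longrightarrow>
        (\<exists>n'' n'. mtau n n'' \<and> mstep n'' l n' \<and> Rel m n'' \<and> Rel m' n') \<or> (l = Tau \<and> Rel m' n))"

lemma msim_bisim:
  assumes "msim Rel" "Rel m n" "sem P = Some m" "sem Q = Some n"
  shows "branching_bisimilar Delta Tau P Q"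
proof -
  define B where "B = (\<lambda>P Q. \<exists>m n. sem P = Some m \<and> sem Q = Some n \<and> Rel m n)"
  have sym: "Rel a b \<Longrightarrow> Rel b a" for a b using assms(1) unfolding msim_def by blast
  have gd: "Rel a b \<Longrightarrow> good a \<and> good b" for a b using assms(1) unfolding msim_def by blast
  have sim: "Rel a b \<Longrightarrow> mstep a l a' \<Longrightarrow>
        (\<exists>n'' n'. mtau b n'' \<and> mstep n'' l n' \<and> Rel a n'' \<and> Rel a' n') \<or> (l = Tau \<and> Rel a' b)" for a b l a'
    using assms(1) unfolding msim_def by blast
  have one: "\<exists>Q'' Q'. weak_tau Delta Tau Q Q'' \<and> step Delta Q'' l Q' \<and> B P Q'' \<and> B P' Q'
        \<or> (l = Tau \<and> B P' Q)" if "B P Q" "step Delta P l P'" for P Q l P'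
  proof -
    from that(1) obtain a b where ab: "sem P = Some a" "sem Q = Some b" "Rel a b" unfolding B_def by blast
    from step_mstep[OF that(2) ab(1)] gd[OF ab(3)] obtain a' where a': "sem P' = Some a'" "mstep a l a'" by blast
    from sim[OF ab(3) a'(2)] show ?thesis
    proof
      assume "\<exists>n'' n'. mtau b n'' \<and> mstep n'' l n' \<and> Rel a n'' \<and> Rel a' n'"
      then obtain n'' n' where n: "mtau b n''" "mstep n'' l n'" "Rel a n''" "Rel a' n'" by blast
      from mtau_weak[OF n(1) ab(2)] obtain Q'' where Q'': "weak_tau Delta Tau Q Q''" "sem Q'' = Some n''" by blast
      from mstep_step[OF Q''(2) n(2)] obtain Q' where "step Delta Q'' l Q'" "sem Q' = Some n'" by blast
      then show ?thesis using Q'' n ab a' unfolding B_def by blast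
    next
      assume "l = Tau \<and> Rel a' b"
      then show ?thesis using ab a' unfolding B_def by blast
    qed
  qed
  have "branching_bisim_rel Delta Tau B"
    unfolding branching_bisim_rel_def
  proof (intro conjI allI impI)
    fix P Q l P' assume "B P Q \<and> step Delta P l P'"
    then show "(\<exists>Q'' Q'. weak_tau Delta Tau Q Q'' \<and> step Delta Q'' l Q' \<and> B P Q'' \<and> B P' Q') \<or> l = Tau \<and> B P' Q"
      using one by blast
  next
    fix P Q l Q' assume a: "B P Q \<and> step Delta Q l Q'"
    have "B Q P" using a sym unfolding B_def by blast
    from one[OF this] a have "(\<exists>P'' P'. weak_tau Delta Tau P P'' \<and> step Delta P'' l P' \<and> B Q P'' \<and> B Q' P') \<or> (l = Tau \<and> B Q' P)"
      by blast
    then show "(\<exists>P'' P'. weak_tau Delta Tau P P'' \<and> step Delta P'' l P' \<and> B P'' Q \<and> B P' Q') \<or> l = Tau \<and> B P Q'"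
      using sym unfolding B_def by blast
  qed
  then show ?thesis using assms unfolding branching_bisimilar_def B_def by blast
qed

end


datatype 's av = Rig "'s const list" | AGvR | AGv "'s list" "nat list" | AZ "'s list" "nat list"
  | AP "'s list" "nat list"

context pcpG
begin

abbreviation "Ix \<equiv> idx inst"
abbreviation "Ws \<equiv> Wset inst"
abbreviation "uu \<equiv> uw inst"
abbreviation "vv \<equiv> vw inst"

lemma tm_Cons: "tmove (c # rest) l t' \<longleftrightarrow> \<not> isctrl c \<and> (\<exists>R. Delta c l R \<and> t' = rw R @ rest)"
  unfolding tmove_def by auto

lemma tm_Nil[simp]: "\<not> tmove [] l t'"
  unfolding tmove_def by auto

inductive_cases GuE: "rulesG Sig inst Gu l R"
inductive_cases GvE: "rulesG Sig inst Gv l R"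
inductive_cases Gv'E: "rulesG Sig inst Gv' l R"
inductive_cases ZE: "rulesG Sig inst Z l R"
inductive_cases GE: "rulesG Sig inst G l R"
inductive_cases G'E: "rulesG Sig inst G' l R"
inductive_cases UE: "rulesG Sig inst (U k) l R"
inductive_cases VE: "rulesG Sig inst (V k) l R"
inductive_cases WE: "rulesG Sig inst (W w j) l R"
inductive_cases XE: "rulesG Sig inst X l R"
inductive_cases YE: "rulesG Sig inst Y l R"
inductive_cases DE: "rulesG Sig inst D l R"
inductive_cases CE: "rulesG Sig inst C l R"
inductive_cases IE: "rulesG Sig inst I l R"
inductive_cases SE: "rulesG Sig inst S l R"
inductive_cases C'E: "rulesG Sig inst C' l R"

lemma tm_Gu: "tmove (Gu # r) l t' \<longleftrightarrow> (\<exists>k\<in>Ix. l = Tau \<and> t' = Gu # U k # r) \<or>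
    (\<exists>k\<in>Ix. l = LU \<and> t' = Gv # U k # r) \<or> (l = Tau \<and> t' = Gv' # r)"
  unfolding tm_Cons by (auto simp: isctrl_def elim!: GuE intro: rulesG.intros)

lemma tm_Gv: "tmove (Gv # r) l t' \<longleftrightarrow> (\<exists>k\<in>Ix. l = Tau \<and> t' = Gv # V k # r) \<or>
    (l = Tau \<and> t' = r) \<or> (l = LV \<and> t' = Z # r)"
  unfolding tm_Cons by (auto simp: isctrl_def elim!: GvE intro: rulesG.intros)

lemma tm_Gv': "tmove (Gv' # r) l t' \<longleftrightarrow> (\<exists>k\<in>Ix. l = Tau \<and> t' = Gv' # V k # r) \<or>
    (l = Tau \<and> t' = Z # r)"
  unfolding tm_Cons by (auto simp: isctrl_def elim!: Gv'E intro: rulesG.intros)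

lemma tm_Z: "tmove (Z # r) l t' \<longleftrightarrow> (l = Tau \<or> l = LZ) \<and> t' = r"
  unfolding tm_Cons by (auto simp: isctrl_def elim!: ZE intro: rulesG.intros)

lemma tm_G: "tmove (G # r) l t' \<longleftrightarrow> l = Tau \<and> ((\<exists>k\<in>Ix. t' = G # U k # r) \<or> (\<exists>k\<in>Ix. t' = G # V k # r) \<or> t' = r)"
  unfolding tm_Cons by (auto simp: isctrl_def elim!: GE intro: rulesG.intros)

lemma tm_G': "tmove (G' # r) l t' \<longleftrightarrow> l = Tau \<and> ((\<exists>k\<in>Ix. t' = G' # U k # r) \<or> (\<exists>k\<in>Ix. t' = G' # V k # r)
   \<or> (\<exists>w\<in>Ws. t' = G' # w # r) \<or> t' = Gv # r \<or> t' = Z # r)"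
  unfolding tm_Cons by (auto simp: isctrl_def elim!: G'E intro: rulesG.intros)

lemma tm_U: "tmove (U k # r) l t' \<longleftrightarrow> k \<in> Ix \<and> l = Tau \<and> t' = W (uu k) k # r"
  unfolding tm_Cons by (auto simp: isctrl_def elim!: UE intro: rulesG.intros)

lemma tm_V: "tmove (V k # r) l t' \<longleftrightarrow> k \<in> Ix \<and> l = Tau \<and> t' = W (vv k) k # r"
  unfolding tm_Cons by (auto simp: isctrl_def elim!: VE intro: rulesG.intros)

lemma zero_notin_idx[simp]: "0 \<notin> Ix" by (simp add: idx_def)

lemma tm_W: "tmove (W w j # r) l t' \<longleftrightarrow>
   (\<exists>a w'. w = a # w' \<and> a \<in> Sig \<and> W w j \<in> Ws \<and> (j = 0 \<or> j \<in> Ix) \<and> (l = Sym a \<or> l = Tau) \<and> t' = W w' j # r) \<or>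
   (j \<in> Ix \<and> W w j \<in> Ws \<and> (l = Idx j \<or> l = Tau) \<and> t' = W w 0 # r) \<or>
   (w = [] \<and> j = 0 \<and> W [] 0 \<in> Ws \<and> l = Tau \<and> t' = r)"
  unfolding tm_Cons by (auto simp: isctrl_def elim!: WE intro: rulesG.intros)

lemma tm_ctrl: "isctrl c \<Longrightarrow> \<not> tmove (c # r) l t'"
  unfolding tm_Cons by auto

lemma cm_D: "cmove D l r \<longleftrightarrow> (l = Tau \<and> r = {#[D],[Gu]#}) \<or> (l = LD \<and> r = {#[C]#})"
  unfolding cmove_def by (auto simp: isctrl_def elim!: DE intro: rulesG.intros)

lemma cm_X: "cmove X l r \<longleftrightarrow> (l = LU \<and> r = {#[D],[Gv]#}) \<or> (l = Tau \<and> r = {#[D]#})"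
  unfolding cmove_def by (auto simp: isctrl_def elim!: XE intro: rulesG.intros)

lemma cm_Y: "cmove Y l r \<longleftrightarrow> (l = Tau \<and> r = {#[D]#})"
  unfolding cmove_def by (auto simp: isctrl_def elim!: YE intro: rulesG.intros)

lemma cm_C: "cmove C l r \<longleftrightarrow> (l = LI \<and> r = {#[I]#}) \<or> (l = LS \<and> r = {#[S]#}) \<or>
     (l = Tau \<and> r = {#[C],[G]#}) \<or> (l = Tau \<and> r = {#[C],[Gv]#})"
  unfolding cmove_def by (auto simp: isctrl_def elim!: CE intro: rulesG.intros)

lemma cm_I: "cmove I l r \<longleftrightarrow> (l = LI \<and> r = {#[C']#}) \<or> (\<exists>k\<in>Ix. l = Idx k \<and> r = {#[I]#})"
  unfolding cmove_def by (auto simp: isctrl_def elim!: IE intro: rulesG.intros)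

lemma cm_S: "cmove S l r \<longleftrightarrow> (l = LS \<and> r = {#[C']#}) \<or> (\<exists>a\<in>Sig. l = Sym a \<and> r = {#[S]#})"
  unfolding cmove_def by (auto simp: isctrl_def elim!: SE intro: rulesG.intros)

lemma cm_C': "cmove C' l r \<longleftrightarrow> (l = Tau \<and> r = {#[C'],[G']#}) \<or> (l = Tau \<and> r = {#})"
  unfolding cmove_def by (auto simp: isctrl_def elim!: C'E intro: rulesG.intros)

end


context pcpG
begin

definition Uw :: "'s list \<Rightarrow> nat \<Rightarrow> bool" where
  "Uw w j \<longleftrightarrow> (\<exists>k\<in>Ix. (j = k \<or> j = 0) \<and> suffix w (uu k))"
definition Vw :: "'s list \<Rightarrow> nat \<Rightarrow> bool" where
  "Vw w j \<longleftrightarrow> (\<exists>k\<in>Ix. (j = k \<or> j = 0) \<and> suffix w (vv k))"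

lemma Ws_iff: "W w j \<in> Ws \<longleftrightarrow> Uw w j \<or> Vw w j"
  unfolding Wset_def Uw_def Vw_def by blast

lemma Ws_W: "c \<in> Ws \<Longrightarrow> \<exists>w j. c = W w j"
  unfolding Wset_def by blast

lemma uv_props: "k \<in> Ix \<Longrightarrow> uu k \<noteq> [] \<and> vv k \<noteq> [] \<and> set (uu k) \<subseteq> Sig \<and> set (vv k) \<subseteq> Sig"
proof -
  assume "k \<in> Ix"
  then have "k - 1 < length inst" "k \<ge> 1" by (auto simp: idx_def)
  then have "inst ! (k - 1) \<in> set inst" by simp
  moreover obtain u v where uv: "inst ! (k - 1) = (u, v)" by fastforce
  ultimately have "(u, v) \<in> set inst" by simp
  then have "u \<noteq> [] \<and> v \<noteq> [] \<and> set u \<subseteq> Sig \<and> set v \<subseteq> Sig" using words by blast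
  then show ?thesis unfolding uw_def vw_def uv by simp
qed

lemma W_sig: "W (a # w) j \<in> Ws \<Longrightarrow> a \<in> Sig"
  unfolding Ws_iff Uw_def Vw_def using uv_props
  by (auto dest!: set_mono_suffix) blast+

lemma W_suf: "W (a # w) j \<in> Ws \<Longrightarrow> W w j \<in> Ws"
  unfolding Ws_iff Uw_def Vw_def by (auto dest: suffix_ConsD)

lemma W_sufl: "W w0 j \<in> Ws \<Longrightarrow> suffix w w0 \<Longrightarrow> W w j \<in> Ws"
  unfolding Ws_iff Uw_def Vw_def by (meson suffix_order.trans)

lemma W_zero: "W w j \<in> Ws \<Longrightarrow> W w 0 \<in> Ws"
  unfolding Ws_iff Uw_def Vw_def by auto

lemma W_idx: "W w j \<in> Ws \<Longrightarrow> j \<noteq> 0 \<Longrightarrow> j \<in> Ix"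
  unfolding Ws_iff Uw_def Vw_def by auto

lemma W_nil: "W w j \<in> Ws \<Longrightarrow> W [] 0 \<in> Ws"
  unfolding Ws_iff Uw_def Vw_def by auto

lemma W_U: "k \<in> Ix \<Longrightarrow> W (uu k) k \<in> Ws"
  unfolding Ws_iff Uw_def by auto
lemma W_V: "k \<in> Ix \<Longrightarrow> W (vv k) k \<in> Ws"
  unfolding Ws_iff Vw_def by auto

abbreviation ttau :: "'s const list \<Rightarrow> 's const list \<Rightarrow> bool" where
  "ttau t t' \<equiv> tmove t Tau t'"
abbreviation ttaus :: "'s const list \<Rightarrow> 's const list \<Rightarrow> bool" where
  "ttaus \<equiv> ttau\<^sup>*\<^sup>*"

lemma tmove_app: "tmove t l t' \<Longrightarrow> tmove (t @ s) l (t' @ s)"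
  unfolding tmove_def by auto

lemma ttaus_app: "ttaus t t' \<Longrightarrow> ttaus (t @ s) (t' @ s)"
  by (induction rule: rtranclp_induct) (auto intro: rtranclp.rtrancl_into_rtrancl tmove_app)

lemma ttaus_step: "ttau t t' \<Longrightarrow> ttaus t t'" by auto

lemma W_skip: "W w0 j \<in> Ws \<Longrightarrow> suffix w w0 \<Longrightarrow> ttaus (W w0 j # r) (W w j # r)"
proof (induction w0 arbitrary: w)
  case Nil then show ?case by simp
next
  case (Cons a w0)
  show ?case
  proof (cases "w = a # w0")
    case True then show ?thesis by simp
  next
    case False
    then have "suffix w w0" using Cons.prems(2) by (auto simp: suffix_def Cons_eq_append_conv)
    have "ttau (W (a # w0) j # r) (W w0 j # r)"
      using Cons.prems(1) W_sig[OF Cons.prems(1)] W_idx[OF Cons.prems(1)] by (auto simp: tm_W)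
    then show ?thesis using Cons.IH[OF W_suf[OF Cons.prems(1)] \<open>suffix w w0\<close>]
      by (meson converse_rtranclp_into_rtranclp)
  qed
qed

lemma W_vanish: "W w j \<in> Ws \<Longrightarrow> ttaus (W w j # r) r"
proof -
  assume a: "W w j \<in> Ws"
  have 1: "ttaus (W w j # r) (W [] j # r)" using W_skip[OF a] by simp
  have "ttaus (W [] j # r) (W [] 0 # r)"
  proof (cases "j = 0")
    case False
    then show ?thesis using W_sufl[OF a, of "[]"] W_idx[OF a] by (auto simp: tm_W intro!: ttaus_step)
  qed simp
  moreover have "ttau (W [] 0 # r) r" using W_nil[OF a] by (simp add: tm_W)
  ultimately show ?thesis using 1 by (meson rtranclp.rtrancl_into_rtrancl rtranclp_trans)
qed

definition uvc :: "'s const \<Rightarrow> bool" where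
  "uvc c \<longleftrightarrow> (\<exists>k\<in>Ix. c = U k \<or> c = V k)"

definition basic :: "'s const \<Rightarrow> bool" where
  "basic c \<longleftrightarrow> uvc c \<or> c \<in> Ws"

lemma basic_vanish: "basic c \<Longrightarrow> ttaus (c # r) r"
proof -
  assume "basic c"
  then consider k where "k \<in> Ix" "c = U k" | k where "k \<in> Ix" "c = V k" | "c \<in> Ws"
    unfolding basic_def uvc_def by blast
  then show ?thesis
  proof cases
    case 1
    then have "ttau (c # r) (W (uu k) k # r)" by (simp add: tm_U)
    then show ?thesis using W_vanish[OF W_U[OF 1(1)]] by (meson converse_rtranclp_into_rtranclp)
  next
    case 2
    then have "ttau (c # r) (W (vv k) k # r)" by (simp add: tm_V)
    then show ?thesis using W_vanish[OF W_V[OF 2(1)]] by (meson converse_rtranclp_into_rtranclp)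
  next
    case 3 then show ?thesis using W_vanish Ws_W by blast
  qed
qed

lemma basics_vanish: "\<forall>c\<in>set t. basic c \<Longrightarrow> ttaus t []"
proof (induction t)
  case (Cons c t)
  then show ?case using basic_vanish[of c t] by (meson list.set_intros rtranclp_trans)
qed simp

end


context pcpG
begin

definition vuf :: "nat list \<Rightarrow> nat list \<Rightarrow> 's const list" where
  "vuf \<beta> \<alpha> = map V \<beta> @ map U \<alpha>"

lemma vuf_simps[simp]: "vuf (k # \<beta>) \<alpha> = V k # vuf \<beta> \<alpha>" "vuf [] \<alpha> = map U \<alpha>"
  by (auto simp: vuf_def)

lemma vuf_nil_iff[simp]: "vuf \<beta> \<alpha> = [] \<longleftrightarrow> \<beta> = [] \<and> \<alpha> = []"
  by (auto simp: vuf_def)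

abbreviation uvl :: "'s const list \<Rightarrow> bool" where "uvl g \<equiv> \<forall>c\<in>set g. uvc c"
abbreviation bl :: "'s const list \<Rightarrow> bool" where "bl g \<equiv> \<forall>c\<in>set g. basic c"

lemma uvc_simps[simp]: "uvc (U k) \<longleftrightarrow> k \<in> Ix" "uvc (V k) \<longleftrightarrow> k \<in> Ix" "\<not> uvc (W w j)"
  "\<not> uvc Gu" "\<not> uvc Gv" "\<not> uvc Gv'" "\<not> uvc G" "\<not> uvc G'" "\<not> uvc Z"
  by (auto simp: uvc_def)

lemma basic_simps[simp]: "basic (U k) \<longleftrightarrow> k \<in> Ix" "basic (V k) \<longleftrightarrow> k \<in> Ix" "basic (W w j) \<longleftrightarrow> W w j \<in> Ws"
  "\<not> basic Gu" "\<not> basic Gv" "\<not> basic Gv'" "\<not> basic G" "\<not> basic G'" "\<not> basic Z"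
  by (auto simp: basic_def uvc_def Wset_def)

lemma uvl_vuf: "set \<beta> \<subseteq> Ix \<Longrightarrow> set \<alpha> \<subseteq> Ix \<Longrightarrow> uvl (vuf \<beta> \<alpha>)"
  by (auto simp: vuf_def)

lemma uvl_bl: "uvl g \<Longrightarrow> bl g"
  by (auto simp: basic_def)

lemma Vw_suf: "Vw (a # w) j \<Longrightarrow> Vw w j" unfolding Vw_def by (auto dest: suffix_ConsD)
lemma Uw_suf: "Uw (a # w) j \<Longrightarrow> Uw w j" unfolding Uw_def by (auto dest: suffix_ConsD)
lemma Vw_zero: "Vw w j \<Longrightarrow> Vw w 0" unfolding Vw_def by auto
lemma Uw_zero: "Uw w j \<Longrightarrow> Uw w 0" unfolding Uw_def by auto

definition pureD :: "'s const list \<Rightarrow> bool" where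
  "pureD t \<longleftrightarrow> t \<noteq> [] \<and> ((\<exists>\<beta> \<alpha>. set \<beta> \<subseteq> Ix \<and> set \<alpha> \<subseteq> Ix \<and> t = vuf \<beta> \<alpha>) \<or>
     (\<exists>w j \<beta> \<alpha>. set \<beta> \<subseteq> Ix \<and> set \<alpha> \<subseteq> Ix \<and> Vw w j \<and> t = W w j # vuf \<beta> \<alpha>) \<or>
     (\<exists>w j \<alpha>. set \<alpha> \<subseteq> Ix \<and> Uw w j \<and> t = W w j # map U \<alpha>))"

definition pureC :: "'s const list \<Rightarrow> bool" where
  "pureC t \<longleftrightarrow> t \<noteq> [] \<and> (uvl t \<or> (\<exists>w j g. W w j \<in> Ws \<and> uvl g \<and> t = W w j # g))"

definition pureC' :: "'s const list \<Rightarrow> bool" where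
  "pureC' t \<longleftrightarrow> t \<noteq> [] \<and> bl t"

definition okD :: "'s const list \<Rightarrow> bool" where
  "okD t \<longleftrightarrow> (\<exists>\<alpha>. set \<alpha> \<subseteq> Ix \<and> t = Gu # map U \<alpha>) \<or>
     (\<exists>\<beta> \<alpha>. set \<beta> \<subseteq> Ix \<and> set \<alpha> \<subseteq> Ix \<and> (t = Gv' # vuf \<beta> \<alpha> \<or> t = Z # vuf \<beta> \<alpha> \<or> t = Gv # vuf \<beta> \<alpha>)) \<or>
     pureD t"

definition okC :: "'s const list \<Rightarrow> bool" where
  "okC t \<longleftrightarrow> (\<exists>\<alpha>. set \<alpha> \<subseteq> Ix \<and> t = Gu # map U \<alpha>) \<or>
     (\<exists>\<beta> \<alpha>. set \<beta> \<subseteq> Ix \<and> set \<alpha> \<subseteq> Ix \<and> t = Gv' # vuf \<beta> \<alpha>) \<or>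
     (\<exists>g. uvl g \<and> (t = G # g \<or> t = Gv # g \<or> t = Z # g)) \<or> pureC t"

definition okC' :: "'s const list \<Rightarrow> bool" where
  "okC' t \<longleftrightarrow> (\<exists>\<alpha>. set \<alpha> \<subseteq> Ix \<and> t = Gu # map U \<alpha>) \<or>
     (\<exists>\<beta> \<alpha>. set \<beta> \<subseteq> Ix \<and> set \<alpha> \<subseteq> Ix \<and> t = Gv' # vuf \<beta> \<alpha>) \<or>
     (\<exists>g. uvl g \<and> t = G # g) \<or>
     (\<exists>g. bl g \<and> (t = G' # g \<or> t = Gv # g \<or> t = Z # g)) \<or> pureC' t"

lemma pureD_VI: "set \<beta> \<subseteq> Ix \<Longrightarrow> set \<alpha> \<subseteq> Ix \<Longrightarrow> Vw w j \<Longrightarrow> t = W w j # vuf \<beta> \<alpha> \<Longrightarrow> pureD t"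
  unfolding pureD_def by blast
lemma pureD_UI: "set \<alpha> \<subseteq> Ix \<Longrightarrow> Uw w j \<Longrightarrow> t = W w j # map U \<alpha> \<Longrightarrow> pureD t"
  unfolding pureD_def by blast
lemma pureD_vufI: "set \<beta> \<subseteq> Ix \<Longrightarrow> set \<alpha> \<subseteq> Ix \<Longrightarrow> t = vuf \<beta> \<alpha> \<Longrightarrow> t \<noteq> [] \<Longrightarrow> pureD t"
  unfolding pureD_def by blast
lemma pureC_uvlI: "uvl t \<Longrightarrow> t \<noteq> [] \<Longrightarrow> pureC t" unfolding pureC_def by blast
lemma pureC_WI: "W w j \<in> Ws \<Longrightarrow> uvl g \<Longrightarrow> t = W w j # g \<Longrightarrow> pureC t" unfolding pureC_def by blast

lemma pureD_pureC: "pureD t \<Longrightarrow> pureC t"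
proof -
  assume "pureD t"
  then consider (a) \<beta> \<alpha> where "set \<beta> \<subseteq> Ix" "set \<alpha> \<subseteq> Ix" "t = vuf \<beta> \<alpha>" "t \<noteq> []"
    | (b) w j \<beta> \<alpha> where "set \<beta> \<subseteq> Ix" "set \<alpha> \<subseteq> Ix" "Vw w j" "t = W w j # vuf \<beta> \<alpha>"
    | (c) w j \<alpha> where "set \<alpha> \<subseteq> Ix" "Uw w j" "t = W w j # map U \<alpha>"
    unfolding pureD_def by blast
  then show ?thesis
  proof cases
    case a then show ?thesis using uvl_vuf[OF a(1,2)] by (intro pureC_uvlI) auto
  next
    case b then show ?thesis using uvl_vuf[OF b(1,2)] by (intro pureC_WI[of w j "vuf \<beta> \<alpha>"]) (auto simp: Ws_iff)
  next
    case c then show ?thesis using uvl_vuf[OF _ c(1), of "[]"] by (intro pureC_WI[of w j "map U \<alpha>"]) (auto simp: Ws_iff)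
  qed
qed


lemma pureC_bl: "pureC t \<Longrightarrow> bl t"
  unfolding pureC_def by (auto simp: basic_def)

lemma okC_okC': "okC t \<Longrightarrow> okC' t"
proof -
  assume "okC t"
  then consider "(\<exists>\<alpha>. set \<alpha> \<subseteq> Ix \<and> t = Gu # map U \<alpha>)" |
     "(\<exists>\<beta> \<alpha>. set \<beta> \<subseteq> Ix \<and> set \<alpha> \<subseteq> Ix \<and> t = Gv' # vuf \<beta> \<alpha>)" |
     "(\<exists>g. uvl g \<and> t = G # g)" | "(\<exists>g. uvl g \<and> (t = Gv # g \<or> t = Z # g))" | "pureC t"
    unfolding okC_def by blast
  then show ?thesis
  proof cases
    case 4 then show ?thesis unfolding okC'_def using uvl_bl by blast
  next
    case 5 then show ?thesis unfolding okC'_def pureC'_def using pureC_bl pureC_def by blast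
  qed (auto simp: okC'_def)
qed

lemma okD_GuI: "set \<alpha> \<subseteq> Ix \<Longrightarrow> t = Gu # map U \<alpha> \<Longrightarrow> okD t" unfolding okD_def by blast
lemma okD_Gv'I: "set \<beta> \<subseteq> Ix \<Longrightarrow> set \<alpha> \<subseteq> Ix \<Longrightarrow> t = Gv' # vuf \<beta> \<alpha> \<Longrightarrow> okD t" unfolding okD_def by blast
lemma okD_ZI: "set \<beta> \<subseteq> Ix \<Longrightarrow> set \<alpha> \<subseteq> Ix \<Longrightarrow> t = Z # vuf \<beta> \<alpha> \<Longrightarrow> okD t" unfolding okD_def by blast
lemma okD_GvI: "set \<beta> \<subseteq> Ix \<Longrightarrow> set \<alpha> \<subseteq> Ix \<Longrightarrow> t = Gv # vuf \<beta> \<alpha> \<Longrightarrow> okD t" unfolding okD_def by blast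
lemma okD_pI: "pureD t \<Longrightarrow> okD t" unfolding okD_def by blast
lemma okC_GuI: "set \<alpha> \<subseteq> Ix \<Longrightarrow> t = Gu # map U \<alpha> \<Longrightarrow> okC t" unfolding okC_def by blast
lemma okC_Gv'I: "set \<beta> \<subseteq> Ix \<Longrightarrow> set \<alpha> \<subseteq> Ix \<Longrightarrow> t = Gv' # vuf \<beta> \<alpha> \<Longrightarrow> okC t" unfolding okC_def by blast
lemma okC_GI: "uvl g \<Longrightarrow> t = G # g \<Longrightarrow> okC t" unfolding okC_def by blast
lemma okC_GvI: "uvl g \<Longrightarrow> t = Gv # g \<Longrightarrow> okC t" unfolding okC_def by blast
lemma okC_ZI: "uvl g \<Longrightarrow> t = Z # g \<Longrightarrow> okC t" unfolding okC_def by blast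
lemma okC_pI: "pureC t \<Longrightarrow> okC t" unfolding okC_def by blast

lemma okD_okC: "okD t \<Longrightarrow> okC t"
proof -
  assume "okD t"
  then consider (gu) \<alpha> where "set \<alpha> \<subseteq> Ix" "t = Gu # map U \<alpha>"
    | (gv') \<beta> \<alpha> where "set \<beta> \<subseteq> Ix" "set \<alpha> \<subseteq> Ix" "t = Gv' # vuf \<beta> \<alpha>"
    | (z) \<beta> \<alpha> where "set \<beta> \<subseteq> Ix" "set \<alpha> \<subseteq> Ix" "t = Z # vuf \<beta> \<alpha>"
    | (gv) \<beta> \<alpha> where "set \<beta> \<subseteq> Ix" "set \<alpha> \<subseteq> Ix" "t = Gv # vuf \<beta> \<alpha>"
    | (p) "pureD t"
    unfolding okD_def by blast
  then show ?thesis
  proof cases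
    case gu then show ?thesis by (rule okC_GuI)
  next
    case gv' then show ?thesis by (rule okC_Gv'I)
  next
    case z then show ?thesis using uvl_vuf by (intro okC_ZI) auto
  next
    case gv then show ?thesis using uvl_vuf by (intro okC_GvI) auto
  next
    case p then show ?thesis using pureD_pureC okC_pI by blast
  qed
qed

lemma okC'_GuI: "set \<alpha> \<subseteq> Ix \<Longrightarrow> t = Gu # map U \<alpha> \<Longrightarrow> okC' t" unfolding okC'_def by blast
lemma okC'_Gv'I: "set \<beta> \<subseteq> Ix \<Longrightarrow> set \<alpha> \<subseteq> Ix \<Longrightarrow> t = Gv' # vuf \<beta> \<alpha> \<Longrightarrow> okC' t" unfolding okC'_def by blast
lemma okC'_GI: "uvl g \<Longrightarrow> t = G # g \<Longrightarrow> okC' t" unfolding okC'_def by blast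
lemma okC'_G'I: "bl g \<Longrightarrow> t = G' # g \<Longrightarrow> okC' t" unfolding okC'_def by blast
lemma okC'_GvI: "bl g \<Longrightarrow> t = Gv # g \<Longrightarrow> okC' t" unfolding okC'_def by blast
lemma okC'_ZI: "bl g \<Longrightarrow> t = Z # g \<Longrightarrow> okC' t" unfolding okC'_def by blast
lemma okC'_pI: "pureC' t \<Longrightarrow> okC' t" unfolding okC'_def by blast


lemma pureD_close: "pureD t \<Longrightarrow> tmove t l t' \<Longrightarrow> t' = [] \<or> pureD t'"
proof -
  assume p: "pureD t" and m: "tmove t l t'"
  from p consider (a) \<beta> \<alpha> where "set \<beta> \<subseteq> Ix" "set \<alpha> \<subseteq> Ix" "t = vuf \<beta> \<alpha>" "t \<noteq> []"
    | (b) w j \<beta> \<alpha> where "set \<beta> \<subseteq> Ix" "set \<alpha> \<subseteq> Ix" "Vw w j" "t = W w j # vuf \<beta> \<alpha>"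
    | (c) w j \<alpha> where "set \<alpha> \<subseteq> Ix" "Uw w j" "t = W w j # map U \<alpha>"
    unfolding pureD_def by blast
  then show ?thesis
  proof cases
    case a
    show ?thesis
    proof (cases \<beta>)
      case (Cons k \<beta>')
      then have "t' = W (vv k) k # vuf \<beta>' \<alpha>" "k \<in> Ix" using m a by (auto simp: tm_V)
      moreover have "Vw (vv k) k" using \<open>k \<in> Ix\<close> unfolding Vw_def by auto
      ultimately show ?thesis using a Cons by (intro disjI2 pureD_VI[of \<beta>' \<alpha> "vv k" k]) auto
    next
      case Nil
      then obtain k \<alpha>' where "\<alpha> = k # \<alpha>'" using a by (cases \<alpha>) auto
      then have "t' = W (uu k) k # map U \<alpha>'" "k \<in> Ix" using m a Nil by (auto simp: tm_U)
      moreover have "Uw (uu k) k" using \<open>k \<in> Ix\<close> unfolding Uw_def by auto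
      ultimately show ?thesis using a \<open>\<alpha> = _\<close> by (intro disjI2 pureD_UI[of \<alpha>' "uu k" k]) auto
    qed
  next
    case b
    from m b consider (1) a w' where "w = a # w'" "t' = W w' j # vuf \<beta> \<alpha>" | (2) "t' = W w 0 # vuf \<beta> \<alpha>"
      | (3) "t' = vuf \<beta> \<alpha>" by (auto simp: tm_W)
    then show ?thesis
    proof cases
      case 1 then show ?thesis using b Vw_suf[of a w' j] by (intro disjI2 pureD_VI[of \<beta> \<alpha> w' j]) auto
    next
      case 2 then show ?thesis using b Vw_zero[of w j] by (intro disjI2 pureD_VI[of \<beta> \<alpha> w 0]) auto
    next
      case 3 then show ?thesis using b pureD_vufI[of \<beta> \<alpha> t'] by auto
    qed
  next
    case c
    from m c consider (1) a w' where "w = a # w'" "t' = W w' j # map U \<alpha>" | (2) "t' = W w 0 # map U \<alpha>"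
      | (3) "t' = map U \<alpha>" by (auto simp: tm_W)
    then show ?thesis
    proof cases
      case 1 then show ?thesis using c Uw_suf[of a w' j] by (intro disjI2 pureD_UI[of \<alpha> w' j]) auto
    next
      case 2 then show ?thesis using c Uw_zero[of w j] by (intro disjI2 pureD_UI[of \<alpha> w 0]) auto
    next
      case 3 then show ?thesis using c pureD_vufI[of "[]" \<alpha> t'] by auto
    qed
  qed
qed

lemma okD_close: "okD t \<Longrightarrow> tmove t l t' \<Longrightarrow> t' = [] \<or> okD t'"
proof -
  assume o: "okD t" and m: "tmove t l t'"
  from o consider (gu) \<alpha> where "set \<alpha> \<subseteq> Ix" "t = Gu # map U \<alpha>"
    | (gv') \<beta> \<alpha> where "set \<beta> \<subseteq> Ix" "set \<alpha> \<subseteq> Ix" "t = Gv' # vuf \<beta> \<alpha>"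
    | (z) \<beta> \<alpha> where "set \<beta> \<subseteq> Ix" "set \<alpha> \<subseteq> Ix" "t = Z # vuf \<beta> \<alpha>"
    | (gv) \<beta> \<alpha> where "set \<beta> \<subseteq> Ix" "set \<alpha> \<subseteq> Ix" "t = Gv # vuf \<beta> \<alpha>"
    | (p) "pureD t"
    unfolding okD_def by blast
  then show ?thesis
  proof cases
    case gu
    from m gu consider (1) k where "k \<in> Ix" "t' = Gu # U k # map U \<alpha>" | (2) k where "k \<in> Ix" "t' = Gv # U k # map U \<alpha>"
      | (3) "t' = Gv' # map U \<alpha>" by (auto simp: tm_Gu)
    then show ?thesis
    proof cases
      case 1 then show ?thesis using gu by (intro disjI2 okD_GuI[of "k # \<alpha>"]) auto
    next
      case 2 then show ?thesis using gu by (intro disjI2 okD_GvI[of "[]" "k # \<alpha>"]) auto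
    next
      case 3 then show ?thesis using gu by (intro disjI2 okD_Gv'I[of "[]" "\<alpha>"]) auto
    qed
  next
    case gv'
    from m gv' consider (1) k where "k \<in> Ix" "t' = Gv' # V k # vuf \<beta> \<alpha>" | (2) "t' = Z # vuf \<beta> \<alpha>"
      by (auto simp: tm_Gv')
    then show ?thesis
    proof cases
      case 1 then show ?thesis using gv' by (intro disjI2 okD_Gv'I[of "k # \<beta>" \<alpha>]) auto
    next
      case 2 then show ?thesis using gv' by (intro disjI2 okD_ZI[of \<beta> \<alpha>]) auto
    qed
  next
    case z
    then have "t' = vuf \<beta> \<alpha>" using m by (auto simp: tm_Z)
    then show ?thesis using z pureD_vufI[of \<beta> \<alpha> t'] okD_pI by blast
  next
    case gv
    from m gv consider (1) k where "k \<in> Ix" "t' = Gv # V k # vuf \<beta> \<alpha>" | (2) "t' = Z # vuf \<beta> \<alpha>"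
      | (3) "t' = vuf \<beta> \<alpha>"
      by (auto simp: tm_Gv)
    then show ?thesis
    proof cases
      case 1 then show ?thesis using gv by (intro disjI2 okD_GvI[of "k # \<beta>" \<alpha>]) auto
    next
      case 2 then show ?thesis using gv by (intro disjI2 okD_ZI[of \<beta> \<alpha>]) auto
    next
      case 3 then show ?thesis using gv pureD_vufI[of \<beta> \<alpha> t'] okD_pI by blast
    qed
  next
    case p
    then show ?thesis using pureD_close[OF p m] okD_pI by blast
  qed
qed

lemma pureC_close: "pureC t \<Longrightarrow> tmove t l t' \<Longrightarrow> t' = [] \<or> pureC t'"
proof -
  assume p: "pureC t" and m: "tmove t l t'"
  from p consider (a) c g where "uvc c" "uvl g" "t = c # g"
    | (b) w j g where "W w j \<in> Ws" "uvl g" "t = W w j # g"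
    unfolding pureC_def by (cases t) auto
  then show ?thesis
  proof cases
    case a
    then obtain k where k: "k \<in> Ix" "c = U k \<or> c = V k" unfolding uvc_def by blast
    then have "t' = W (uu k) k # g \<or> t' = W (vv k) k # g" using m a by (auto simp: tm_U tm_V)
    then show ?thesis using a k W_U W_V pureC_WI by blast
  next
    case b
    from m b consider (1) a w' where "w = a # w'" "t' = W w' j # g" | (2) "t' = W w 0 # g"
      | (3) "t' = g" by (auto simp: tm_W)
    then show ?thesis
    proof cases
      case 1 then show ?thesis using b W_suf pureC_WI by blast
    next
      case 2 then show ?thesis using b W_zero pureC_WI by blast
    next
      case 3 then show ?thesis using b pureC_uvlI by blast
    qed
  qed
qed

lemma okC_close: "okC t \<Longrightarrow> tmove t l t' \<Longrightarrow> t' = [] \<or> okC t'"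
proof -
  assume o: "okC t" and m: "tmove t l t'"
  from o consider (gu) \<alpha> where "set \<alpha> \<subseteq> Ix" "t = Gu # map U \<alpha>"
    | (gv') \<beta> \<alpha> where "set \<beta> \<subseteq> Ix" "set \<alpha> \<subseteq> Ix" "t = Gv' # vuf \<beta> \<alpha>"
    | (g) g where "uvl g" "t = G # g" | (gv) g where "uvl g" "t = Gv # g" | (z) g where "uvl g" "t = Z # g"
    | (p) "pureC t"
    unfolding okC_def by blast
  then show ?thesis
  proof cases
    case gu
    from m gu consider (1) k where "k \<in> Ix" "t' = Gu # U k # map U \<alpha>" | (2) k where "k \<in> Ix" "t' = Gv # U k # map U \<alpha>"
      | (3) "t' = Gv' # map U \<alpha>" by (auto simp: tm_Gu)
    then show ?thesis
    proof cases
      case 1 then show ?thesis using gu by (intro disjI2 okC_GuI[of "k # \<alpha>"]) auto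
    next
      case 2 then show ?thesis using gu by (intro disjI2 okC_GvI[of "U k # map U \<alpha>"]) auto
    next
      case 3 then show ?thesis using gu by (intro disjI2 okC_Gv'I[of "[]" "\<alpha>"]) auto
    qed
  next
    case gv'
    from m gv' consider (1) k where "k \<in> Ix" "t' = Gv' # V k # vuf \<beta> \<alpha>" | (2) "t' = Z # vuf \<beta> \<alpha>"
      by (auto simp: tm_Gv')
    then show ?thesis
    proof cases
      case 1 then show ?thesis using gv' by (intro disjI2 okC_Gv'I[of "k # \<beta>" \<alpha>]) auto
    next
      case 2 then show ?thesis using gv' uvl_vuf[of \<beta> \<alpha>] by (intro disjI2 okC_ZI[of "vuf \<beta> \<alpha>"]) auto
    qed
  next
    case g
    from m g consider (1) k where "k \<in> Ix" "t' = G # U k # g" | (2) k where "k \<in> Ix" "t' = G # V k # g"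
      | (3) "t' = g" by (auto simp: tm_G)
    then show ?thesis
    proof cases
      case 1 then show ?thesis using g by (intro disjI2 okC_GI[of "U k # g"]) auto
    next
      case 2 then show ?thesis using g by (intro disjI2 okC_GI[of "V k # g"]) auto
    next
      case 3 then show ?thesis using g pureC_uvlI okC_pI by blast
    qed
  next
    case gv
    from m gv consider (1) k where "k \<in> Ix" "t' = Gv # V k # g" | (2) "t' = Z # g"
      | (3) "t' = g" by (auto simp: tm_Gv)
    then show ?thesis
    proof cases
      case 1 then show ?thesis using gv by (intro disjI2 okC_GvI[of "V k # g"]) auto
    next
      case 2 then show ?thesis using gv by (intro disjI2 okC_ZI[of g]) auto
    next
      case 3 then show ?thesis using gv pureC_uvlI okC_pI by blast
    qed
  next
    case z
    then have "t' = g" using m by (auto simp: tm_Z)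
    then show ?thesis using z pureC_uvlI okC_pI by blast
  next
    case p
    then show ?thesis using pureC_close[OF p m] okC_pI by blast
  qed
qed

lemma pureC'_close: "pureC' t \<Longrightarrow> tmove t l t' \<Longrightarrow> t' = [] \<or> pureC' t'"
proof -
  assume p: "pureC' t" and m: "tmove t l t'"
  from p obtain c g where cg: "basic c" "bl g" "t = c # g" unfolding pureC'_def by (cases t) auto
  then consider (u) k where "k \<in> Ix" "c = U k \<or> c = V k" | (w) w j where "W w j \<in> Ws" "c = W w j"
    unfolding basic_def uvc_def Wset_def by blast
  then show ?thesis
  proof cases
    case u
    then have "t' = W (uu k) k # g \<or> t' = W (vv k) k # g" using m cg by (auto simp: tm_U tm_V)
    then show ?thesis using cg u W_U W_V unfolding pureC'_def by auto
  next
    case w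
    from m cg w consider (1) a w' where "w = a # w'" "t' = W w' j # g" | (2) "t' = W w 0 # g"
      | (3) "t' = g" by (auto simp: tm_W)
    then show ?thesis
    proof cases
      case 1 then show ?thesis using cg w W_suf[of a w' j] unfolding pureC'_def by auto
    next
      case 2 then show ?thesis using cg w W_zero[of w j] unfolding pureC'_def by auto
    next
      case 3 then show ?thesis using cg unfolding pureC'_def by auto
    qed
  qed
qed

lemma okC'_close: "okC' t \<Longrightarrow> tmove t l t' \<Longrightarrow> t' = [] \<or> okC' t'"
proof -
  assume o: "okC' t" and m: "tmove t l t'"
  from o consider (gu) \<alpha> where "set \<alpha> \<subseteq> Ix" "t = Gu # map U \<alpha>"
    | (gv') \<beta> \<alpha> where "set \<beta> \<subseteq> Ix" "set \<alpha> \<subseteq> Ix" "t = Gv' # vuf \<beta> \<alpha>"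
    | (g) g where "uvl g" "t = G # g" | (g') g where "bl g" "t = G' # g"
    | (gv) g where "bl g" "t = Gv # g" | (z) g where "bl g" "t = Z # g"
    | (p) "pureC' t"
    unfolding okC'_def by blast
  then show ?thesis
  proof cases
    case gu
    from m gu consider (1) k where "k \<in> Ix" "t' = Gu # U k # map U \<alpha>" | (2) k where "k \<in> Ix" "t' = Gv # U k # map U \<alpha>"
      | (3) "t' = Gv' # map U \<alpha>" by (auto simp: tm_Gu)
    then show ?thesis
    proof cases
      case 1 then show ?thesis using gu by (intro disjI2 okC'_GuI[of "k # \<alpha>"]) auto
    next
      case 2 then show ?thesis using gu by (intro disjI2 okC'_GvI[of "U k # map U \<alpha>"]) auto
    next
      case 3 then show ?thesis using gu by (intro disjI2 okC'_Gv'I[of "[]" "\<alpha>"]) auto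
    qed
  next
    case gv'
    from m gv' consider (1) k where "k \<in> Ix" "t' = Gv' # V k # vuf \<beta> \<alpha>" | (2) "t' = Z # vuf \<beta> \<alpha>"
      by (auto simp: tm_Gv')
    then show ?thesis
    proof cases
      case 1 then show ?thesis using gv' by (intro disjI2 okC'_Gv'I[of "k # \<beta>" \<alpha>]) auto
    next
      case 2 then show ?thesis using gv' uvl_bl[OF uvl_vuf[of \<beta> \<alpha>]] by (intro disjI2 okC'_ZI[of "vuf \<beta> \<alpha>"]) auto
    qed
  next
    case g
    from m g consider (1) k where "k \<in> Ix" "t' = G # U k # g" | (2) k where "k \<in> Ix" "t' = G # V k # g"
      | (3) "t' = g" by (auto simp: tm_G)
    then show ?thesis
    proof cases
      case 1 then show ?thesis using g by (intro disjI2 okC'_GI[of "U k # g"]) auto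
    next
      case 2 then show ?thesis using g by (intro disjI2 okC'_GI[of "V k # g"]) auto
    next
      case 3 then show ?thesis using g uvl_bl[of g] okC'_pI unfolding pureC'_def by blast
    qed
  next
    case g'
    from m g' consider (1) c where "basic c" "t' = G' # c # g" | (2) "t' = Gv # g" | (3) "t' = Z # g"
      by (auto simp: tm_G' basic_def uvc_def)
    then show ?thesis
    proof cases
      case 1 then show ?thesis using g' by (intro disjI2 okC'_G'I[of "c # g"]) auto
    next
      case 2 then show ?thesis using g' by (intro disjI2 okC'_GvI[of g]) auto
    next
      case 3 then show ?thesis using g' by (intro disjI2 okC'_ZI[of g]) auto
    qed
  next
    case gv
    from m gv consider (1) k where "k \<in> Ix" "t' = Gv # V k # g" | (2) "t' = Z # g"
      | (3) "t' = g" by (auto simp: tm_Gv)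
    then show ?thesis
    proof cases
      case 1 then show ?thesis using gv by (intro disjI2 okC'_GvI[of "V k # g"]) auto
    next
      case 2 then show ?thesis using gv by (intro disjI2 okC'_ZI[of g]) auto
    next
      case 3 then show ?thesis using gv okC'_pI unfolding pureC'_def by blast
    qed
  next
    case z
    then have "t' = g" using m by (auto simp: tm_Z)
    then show ?thesis using z okC'_pI unfolding pureC'_def by blast
  next
    case p
    then show ?thesis using pureC'_close[OF p m] okC'_pI by blast
  qed
qed

end


context pcpG
begin

definition cstr :: "'s const \<Rightarrow> 's list" where
  "cstr c = (case c of U k \<Rightarrow> uu k | V k \<Rightarrow> vv k | W w j \<Rightarrow> w | _ \<Rightarrow> [])"
definition cidx :: "'s const \<Rightarrow> nat list" where
  "cidx c = (case c of U k \<Rightarrow> [k] | V k \<Rightarrow> [k] | W w j \<Rightarrow> (if j = 0 then [] else [j]) | _ \<Rightarrow> [])"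

definition str :: "'s const list \<Rightarrow> 's list" where "str t = concat (map cstr t)"
definition idxs :: "'s const list \<Rightarrow> nat list" where "idxs t = concat (map cidx t)"

lemma str_simps[simp]: "str [] = []" "str (c # t) = cstr c @ str t" "str (a @ b) = str a @ str b"
  by (auto simp: str_def)
lemma idxs_simps[simp]: "idxs [] = []" "idxs (c # t) = cidx c @ idxs t" "idxs (a @ b) = idxs a @ idxs b"
  by (auto simp: idxs_def)
lemma cstr_simps[simp]: "cstr (U k) = uu k" "cstr (V k) = vv k" "cstr (W w j) = w"
  by (auto simp: cstr_def)
lemma cidx_simps[simp]: "cidx (U k) = [k]" "cidx (V k) = [k]" "cidx (W w j) = (if j = 0 then [] else [j])"
  by (auto simp: cidx_def)

definition vstr :: "nat list \<Rightarrow> 's list" where "vstr is = concat (map vv is)"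
definition realz :: "'s const list \<Rightarrow> bool" where "realz g \<longleftrightarrow> str g = vstr (idxs g)"

lemma str_mapV[simp]: "str (map V is) = vstr is" by (induction "is") (auto simp: vstr_def)
lemma idxs_mapV[simp]: "idxs (map V is) = is" by (induction "is") auto
lemma str_mapU[simp]: "str (map U is) = concat (map uu is)" by (induction "is") auto
lemma idxs_mapU[simp]: "idxs (map U is) = is" by (induction "is") auto
lemma vstr_simps[simp]: "vstr [] = []" "vstr (k # is) = vv k @ vstr is" "vstr (a @ b) = vstr a @ vstr b"
  by (auto simp: vstr_def)

lemma realz_V: "realz (V k # g) \<longleftrightarrow> realz g"
  by (simp add: realz_def)
lemma realz_mapV: "realz (map V is)" by (simp add: realz_def)

definition absD :: "'s const list \<Rightarrow> 's av option" where
  "absD t = (case t of [] \<Rightarrow> None | c # g \<Rightarrow> (case c of Gv \<Rightarrow> Some (if realz g then AGvR else AGv (str g) (idxs g)) | _ \<Rightarrow> None))"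

definition absC :: "'s const list \<Rightarrow> 's av option" where
  "absC t = (case t of [] \<Rightarrow> None | c # g \<Rightarrow> (case c of Gu \<Rightarrow> Some (Rig t) | Gv' \<Rightarrow> Some (Rig t) | G \<Rightarrow> Some (Rig t)
     | Gv \<Rightarrow> (if realz g then None else Some (AGv (str g) (idxs g))) | Z \<Rightarrow> Some (AZ (str g) (idxs g)) | _ \<Rightarrow> None))"

definition absI :: "'s const list \<Rightarrow> 's av option" where
  "absI t = (case t of [] \<Rightarrow> None | c # g \<Rightarrow> (case c of Gu \<Rightarrow> Some (Rig t) | Gv' \<Rightarrow> Some (Rig t) | G \<Rightarrow> Some (Rig t)
     | G' \<Rightarrow> Some (Rig t) | Gv \<Rightarrow> Some (AGv (str g) []) | Z \<Rightarrow> Some (AZ (str g) [])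
     | _ \<Rightarrow> (if str t = [] then None else Some (AP (str t) []))))"

definition absS :: "'s const list \<Rightarrow> 's av option" where
  "absS t = (case t of [] \<Rightarrow> None | c # g \<Rightarrow> (case c of Gu \<Rightarrow> Some (Rig t) | Gv' \<Rightarrow> Some (Rig t) | G \<Rightarrow> Some (Rig t)
     | G' \<Rightarrow> Some (Rig t) | Gv \<Rightarrow> Some (AGv [] (idxs g)) | Z \<Rightarrow> Some (AZ [] (idxs g))
     | _ \<Rightarrow> (if idxs t = [] then None else Some (AP [] (idxs t)))))"

definition absC' :: "'s const list \<Rightarrow> 's av option" where
  "absC' t = (case t of [] \<Rightarrow> None | c # g \<Rightarrow> (case c of Gu \<Rightarrow> Some (Rig t) | Gv' \<Rightarrow> Some (Rig t) | G \<Rightarrow> Some (Rig t)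
     | _ \<Rightarrow> None))"

lemmas abs_defs = absD_def absC_def absI_def absS_def absC'_def

lemma abs_Nil[simp]: "absD [] = None" "absC [] = None" "absI [] = None" "absS [] = None" "absC' [] = None"
  by (auto simp: abs_defs)

lemma absI_basic: "basic c \<Longrightarrow> absI (c # g) = (if str (c # g) = [] then None else Some (AP (str (c # g)) []))"
  unfolding basic_def uvc_def Wset_def absI_def by (auto simp del: str_simps)
lemma absS_basic: "basic c \<Longrightarrow> absS (c # g) = (if idxs (c # g) = [] then None else Some (AP [] (idxs (c # g))))"
  unfolding basic_def uvc_def Wset_def absS_def by (auto simp del: idxs_simps)
lemma absD_basic: "basic c \<Longrightarrow> absD (c # g) = None"
  unfolding basic_def uvc_def Wset_def absD_def by auto
lemma absC_basic: "basic c \<Longrightarrow> absC (c # g) = None"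
  unfolding basic_def uvc_def Wset_def absC_def by auto
lemma absC'_basic: "basic c \<Longrightarrow> absC' (c # g) = None"
  unfolding basic_def uvc_def Wset_def absC'_def by auto

definition am :: "('s const list \<Rightarrow> 's av option) \<Rightarrow> 's const list multiset \<Rightarrow> 's av multiset" where
  "am f T = image_mset (\<lambda>t. the (f t)) (filter_mset (\<lambda>t. f t \<noteq> None) T)"

lemma am_empty[simp]: "am f {#} = {#}" by (simp add: am_def)
lemma am_plus[simp]: "am f (A + B) = am f A + am f B" by (simp add: am_def)
lemma am_add_mset: "am f (add_mset t A) = (case f t of None \<Rightarrow> am f A | Some v \<Rightarrow> add_mset v (am f A))"
  by (cases "f t") (auto simp: am_def)
lemma am_add_none[simp]: "f t = None \<Longrightarrow> am f (add_mset t A) = am f A"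
  by (auto simp: am_def)
lemma am_add_some[simp]: "f t = Some v \<Longrightarrow> am f (add_mset t A) = add_mset v (am f A)"
  by (auto simp: am_def)
lemma am_add_mset': "am f (add_mset t A) = am f A + am f {#t#}"
  by (cases "f t") (auto simp: am_def)
lemma am_wm_Nil[simp]: "am f (wm []) = {#}" by simp
lemma am_wm_Cons[simp]: "am f (wm (c # g)) = am f {#c # g#}" by simp
lemma am_wm_plus: "am f (A + wm t) = am f A + am f (wm t)" by simp

lemma Gu_grow: "set \<alpha> \<subseteq> Ix \<Longrightarrow> ttaus (Gu # r) (Gu # map U \<alpha> @ r)"
proof (induction \<alpha>)
  case (Cons k \<alpha>)
  have "ttau (Gu # map U \<alpha> @ r) (Gu # U k # map U \<alpha> @ r)" using Cons.prems by (simp add: tm_Gu)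
  then show ?case using Cons by (auto intro: rtranclp.rtrancl_into_rtrancl)
qed simp

lemma Gv'_grow: "set \<beta> \<subseteq> Ix \<Longrightarrow> ttaus (Gv' # r) (Gv' # map V \<beta> @ r)"
proof (induction \<beta>)
  case (Cons k \<beta>)
  have "ttau (Gv' # map V \<beta> @ r) (Gv' # V k # map V \<beta> @ r)" using Cons.prems by (simp add: tm_Gv')
  then show ?case using Cons by (auto intro: rtranclp.rtrancl_into_rtrancl)
qed simp

lemma Gv_grow: "set \<beta> \<subseteq> Ix \<Longrightarrow> ttaus (Gv # r) (Gv # map V \<beta> @ r)"
proof (induction \<beta>)
  case (Cons k \<beta>)
  have "ttau (Gv # map V \<beta> @ r) (Gv # V k # map V \<beta> @ r)" using Cons.prems by (simp add: tm_Gv)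
  then show ?case using Cons by (auto intro: rtranclp.rtrancl_into_rtrancl)
qed simp

lemma G_grow: "uvl g \<Longrightarrow> ttaus (G # r) (G # g @ r)"
proof (induction g)
  case (Cons c g)
  then obtain k where k: "k \<in> Ix" "c = U k \<or> c = V k" unfolding uvc_def by auto
  have "ttau (G # g @ r) (G # c # g @ r)" using k by (auto simp: tm_G)
  then show ?case using Cons by (auto intro: rtranclp.rtrancl_into_rtrancl)
qed simp

lemma G'_grow: "bl g \<Longrightarrow> ttaus (G' # r) (G' # g @ r)"
proof (induction g)
  case (Cons c g)
  then have "basic c" by simp
  then have "ttau (G' # g @ r) (G' # c # g @ r)" unfolding basic_def uvc_def by (auto simp: tm_G')
  then show ?case using Cons by (auto intro: rtranclp.rtrancl_into_rtrancl)
qed simp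

lemma Wfrom: "W w0 k \<in> Ws \<Longrightarrow> k \<in> Ix \<Longrightarrow> suffix w w0 \<Longrightarrow> j = k \<or> j = 0 \<Longrightarrow> ttaus (W w0 k # r) (W w j # r)"
proof -
  assume a: "W w0 k \<in> Ws" "k \<in> Ix" "suffix w w0" "j = k \<or> j = 0"
  have 1: "ttaus (W w0 k # r) (W w k # r)" using W_skip[OF a(1,3)] .
  show ?thesis
  proof (cases "j = k")
    case False
    then have "j = 0" using a by auto
    have "ttau (W w k # r) (W w 0 # r)" using a W_sufl[OF a(1,3)] by (simp add: tm_W)
    then show ?thesis using 1 \<open>j = 0\<close> by (auto intro: rtranclp.rtrancl_into_rtrancl)
  qed (use 1 in simp)
qed

lemma ttaus_trans: "ttaus a b \<Longrightarrow> ttaus b c \<Longrightarrow> ttaus a c" by (rule rtranclp_trans)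
lemma ttaus_stepl: "ttau a b \<Longrightarrow> ttaus b c \<Longrightarrow> ttaus a c" by (rule converse_rtranclp_into_rtranclp)
lemma ttaus_snoc: "ttaus a b \<Longrightarrow> ttau b c \<Longrightarrow> ttaus a c" by (rule rtranclp.rtrancl_into_rtrancl)

lemma gen_vuf: "set \<beta> \<subseteq> Ix \<Longrightarrow> set \<alpha> \<subseteq> Ix \<Longrightarrow> ttaus [Gu] (Z # vuf \<beta> \<alpha>) \<and> ttaus [Gu] (Gv' # vuf \<beta> \<alpha>)"
proof -
  assume a: "set \<beta> \<subseteq> Ix" "set \<alpha> \<subseteq> Ix"
  have 1: "ttaus [Gu] (Gu # map U \<alpha>)" using Gu_grow[OF a(2), of "[]"] by simp
  have 2: "ttau (Gu # map U \<alpha>) (Gv' # map U \<alpha>)" by (simp add: tm_Gu)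
  have 3: "ttaus (Gv' # map U \<alpha>) (Gv' # vuf \<beta> \<alpha>)" using Gv'_grow[OF a(1)] by (simp add: vuf_def)
  have 4: "ttau (Gv' # vuf \<beta> \<alpha>) (Z # vuf \<beta> \<alpha>)" by (simp add: tm_Gv')
  have "ttaus [Gu] (Gv' # vuf \<beta> \<alpha>)" using ttaus_trans[OF ttaus_snoc[OF 1 2] 3] .
  then show ?thesis using 4 by (meson rtranclp.rtrancl_into_rtrancl)
qed

lemma genD: "okD t \<Longrightarrow> absD t = None \<Longrightarrow> ttaus [Gu] t"
proof -
  assume o: "okD t" and n: "absD t = None"
  from o consider (gu) \<alpha> where "set \<alpha> \<subseteq> Ix" "t = Gu # map U \<alpha>"
    | (gv') \<beta> \<alpha> where "set \<beta> \<subseteq> Ix" "set \<alpha> \<subseteq> Ix" "t = Gv' # vuf \<beta> \<alpha>"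
    | (z) \<beta> \<alpha> where "set \<beta> \<subseteq> Ix" "set \<alpha> \<subseteq> Ix" "t = Z # vuf \<beta> \<alpha>"
    | (gv) \<beta> \<alpha> where "set \<beta> \<subseteq> Ix" "set \<alpha> \<subseteq> Ix" "t = Gv # vuf \<beta> \<alpha>"
    | (p) "pureD t"
    unfolding okD_def by blast
  then show ?thesis
  proof cases
    case gu then show ?thesis using Gu_grow[of \<alpha> "[]"] by simp
  next
    case gv' then show ?thesis using gen_vuf by blast
  next
    case z then show ?thesis using gen_vuf by blast
  next
    case gv then show ?thesis using n by (simp add: absD_def)
  next
    case p
    have zv: "set \<beta> \<subseteq> Ix \<Longrightarrow> set \<alpha> \<subseteq> Ix \<Longrightarrow> ttaus [Gu] (vuf \<beta> \<alpha>)" for \<beta> \<alpha>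
      using gen_vuf[of \<beta> \<alpha>] ttaus_snoc[of "[Gu]" "Z # vuf \<beta> \<alpha>" "vuf \<beta> \<alpha>"] by (simp add: tm_Z)
    from p consider (a) \<beta> \<alpha> where "set \<beta> \<subseteq> Ix" "set \<alpha> \<subseteq> Ix" "t = vuf \<beta> \<alpha>"
      | (b) w j \<beta> \<alpha> where "set \<beta> \<subseteq> Ix" "set \<alpha> \<subseteq> Ix" "Vw w j" "t = W w j # vuf \<beta> \<alpha>"
      | (c) w j \<alpha> where "set \<alpha> \<subseteq> Ix" "Uw w j" "t = W w j # map U \<alpha>"
      unfolding pureD_def by blast
    then show ?thesis
    proof cases
      case a then show ?thesis using zv by blast
    next
      case b
      then obtain k where k: "k \<in> Ix" "j = k \<or> j = 0" "suffix w (vv k)" unfolding Vw_def by blast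
      have 1: "ttaus [Gu] (V k # vuf \<beta> \<alpha>)" using zv[of "k # \<beta>" \<alpha>] b k by simp
      have 2: "ttau (V k # vuf \<beta> \<alpha>) (W (vv k) k # vuf \<beta> \<alpha>)" using k by (simp add: tm_V)
      have 3: "ttaus (W (vv k) k # vuf \<beta> \<alpha>) t" using Wfrom[OF W_V[OF k(1)] k(1) k(3) k(2)] b by simp
      show ?thesis using ttaus_trans[OF ttaus_snoc[OF 1 2] 3] .
    next
      case c
      then obtain k where k: "k \<in> Ix" "j = k \<or> j = 0" "suffix w (uu k)" unfolding Uw_def by blast
      have 1: "ttaus [Gu] (U k # map U \<alpha>)" using zv[of "[]" "k # \<alpha>"] c k by simp
      have 2: "ttau (U k # map U \<alpha>) (W (uu k) k # map U \<alpha>)" using k by (simp add: tm_U)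
      have 3: "ttaus (W (uu k) k # map U \<alpha>) t" using Wfrom[OF W_U[OF k(1)] k(1) k(3) k(2)] c by simp
      show ?thesis using ttaus_trans[OF ttaus_snoc[OF 1 2] 3] .
    qed
  qed
qed

lemma genCp: "pureC t \<Longrightarrow> ttaus [G] t"
proof -
  assume p: "pureC t"
  have gg: "uvl g \<Longrightarrow> ttaus [G] g" for g
  proof -
    assume "uvl g"
    then have "ttaus [G] (G # g)" using G_grow[of g "[]"] by simp
    moreover have "ttau (G # g) g" by (simp add: tm_G)
    ultimately show ?thesis by (rule ttaus_snoc)
  qed
  from p consider (a) "uvl t" | (b) w j g where "W w j \<in> Ws" "uvl g" "t = W w j # g"
    unfolding pureC_def by blast
  then show ?thesis
  proof cases
    case a then show ?thesis using gg by blast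
  next
    case b
    from b(1) consider k where "k \<in> Ix" "j = k \<or> j = 0" "suffix w (uu k)" | k where "k \<in> Ix" "j = k \<or> j = 0" "suffix w (vv k)"
      unfolding Ws_iff Uw_def Vw_def by blast
    then show ?thesis
    proof cases
      case 1
      have "ttaus [G] (U k # g)" using gg[of "U k # g"] b 1 by simp
      moreover have "ttau (U k # g) (W (uu k) k # g)" using 1 by (simp add: tm_U)
      moreover have "ttaus (W (uu k) k # g) t" using Wfrom[OF W_U[OF 1(1)] 1(1) 1(3) 1(2)] b by simp
      ultimately show ?thesis using ttaus_trans ttaus_snoc by metis
    next
      case 2
      have "ttaus [G] (V k # g)" using gg[of "V k # g"] b 2 by simp
      moreover have "ttau (V k # g) (W (vv k) k # g)" using 2 by (simp add: tm_V)
      moreover have "ttaus (W (vv k) k # g) t" using Wfrom[OF W_V[OF 2(1)] 2(1) 2(3) 2(2)] b by simp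
      ultimately show ?thesis using ttaus_trans ttaus_snoc by metis
    qed
  qed
qed

lemma genCG: "uvl g \<Longrightarrow> ttaus [G] (G # g)"
  using G_grow[of g "[]"] by simp

lemma genCGv: "set \<beta> \<subseteq> Ix \<Longrightarrow> ttaus [Gv] (Gv # map V \<beta>)"
  using Gv_grow[of \<beta> "[]"] by simp

lemma genC': "okC' t \<Longrightarrow> absC' t = None \<Longrightarrow> ttaus [G'] t"
proof -
  assume o: "okC' t" and n: "absC' t = None"
  have g': "bl g \<Longrightarrow> ttaus [G'] (G' # g)" for g using G'_grow[of g "[]"] by simp
  from o consider (gu) \<alpha> where "set \<alpha> \<subseteq> Ix" "t = Gu # map U \<alpha>"
    | (gv') \<beta> \<alpha> where "set \<beta> \<subseteq> Ix" "set \<alpha> \<subseteq> Ix" "t = Gv' # vuf \<beta> \<alpha>"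
    | (g) g where "uvl g" "t = G # g" | (g2) g where "bl g" "t = G' # g"
    | (gv) g where "bl g" "t = Gv # g" | (z) g where "bl g" "t = Z # g"
    | (p) "pureC' t"
    unfolding okC'_def by blast
  then show ?thesis
  proof cases
    case g2 then show ?thesis using g' by blast
  next
    case gv then show ?thesis using g'[of g] ttaus_snoc[of "[G']" "G' # g" "Gv # g"] by (simp add: tm_G')
  next
    case z then show ?thesis using g'[of g] ttaus_snoc[of "[G']" "G' # g" "Z # g"] by (simp add: tm_G')
  next
    case p
    then have "ttaus [G'] (Z # t)" using g'[of t] ttaus_snoc[of "[G']" "G' # t" "Z # t"] unfolding pureC'_def by (simp add: tm_G')
    then show ?thesis using ttaus_snoc[of "[G']" "Z # t" t] by (simp add: tm_Z)
  qed (use n in \<open>auto simp: absC'_def\<close>)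
qed

lemma vuf_bl: "set \<beta> \<subseteq> Ix \<Longrightarrow> set \<alpha> \<subseteq> Ix \<Longrightarrow> bl (vuf \<beta> \<alpha>)"
  using uvl_bl uvl_vuf by blast

lemma van_Z: "bl g \<Longrightarrow> ttaus (Z # g) []"
  using basics_vanish[of g] ttaus_stepl[of "Z # g" g "[]"] by (simp add: tm_Z)

lemma van_Gv: "bl g \<Longrightarrow> ttaus (Gv # g) []"
  using basics_vanish[of g] ttaus_stepl[of "Gv # g" g "[]"] by (simp add: tm_Gv)

lemma van_Gv': "set \<beta> \<subseteq> Ix \<Longrightarrow> set \<alpha> \<subseteq> Ix \<Longrightarrow> ttaus (Gv' # vuf \<beta> \<alpha>) []"
  using van_Z[OF vuf_bl] ttaus_stepl[of "Gv' # vuf \<beta> \<alpha>" "Z # vuf \<beta> \<alpha>" "[]"] by (simp add: tm_Gv')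

lemma vanD: "okD t \<Longrightarrow> ttaus t []"
proof -
  assume o: "okD t"
  from o consider (gu) \<alpha> where "set \<alpha> \<subseteq> Ix" "t = Gu # map U \<alpha>"
    | (gv') \<beta> \<alpha> where "set \<beta> \<subseteq> Ix" "set \<alpha> \<subseteq> Ix" "t = Gv' # vuf \<beta> \<alpha>"
    | (z) \<beta> \<alpha> where "set \<beta> \<subseteq> Ix" "set \<alpha> \<subseteq> Ix" "t = Z # vuf \<beta> \<alpha>"
    | (gv) \<beta> \<alpha> where "set \<beta> \<subseteq> Ix" "set \<alpha> \<subseteq> Ix" "t = Gv # vuf \<beta> \<alpha>"
    | (p) "pureD t"
    unfolding okD_def by blast
  then show ?thesis
  proof cases
    case gu
    then show ?thesis using van_Gv'[of "[]" \<alpha>] ttaus_stepl[of t "Gv' # map U \<alpha>" "[]"] by (simp add: tm_Gu)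
  next
    case gv' then show ?thesis using van_Gv' by simp
  next
    case z then show ?thesis using van_Z vuf_bl by simp
  next
    case gv then show ?thesis using van_Gv vuf_bl by simp
  next
    case p then show ?thesis using basics_vanish pureC_bl pureD_pureC by blast
  qed
qed

lemma vanC: "okC t \<Longrightarrow> absC t = None \<Longrightarrow> ttaus t []"
proof -
  assume o: "okC t" and n: "absC t = None"
  from o consider (gu) \<alpha> where "set \<alpha> \<subseteq> Ix" "t = Gu # map U \<alpha>"
    | (gv') \<beta> \<alpha> where "set \<beta> \<subseteq> Ix" "set \<alpha> \<subseteq> Ix" "t = Gv' # vuf \<beta> \<alpha>"
    | (g) g where "uvl g" "t = G # g" | (gv) g where "uvl g" "t = Gv # g" | (z) g where "uvl g" "t = Z # g"
    | (p) "pureC t"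
    unfolding okC_def by blast
  then show ?thesis
  proof cases
    case gv then show ?thesis using van_Gv uvl_bl by simp
  next
    case p then show ?thesis using basics_vanish pureC_bl by blast
  qed (use n in \<open>auto simp: absC_def\<close>)
qed

lemma vanC': "okC' t \<Longrightarrow> absC' t = None \<Longrightarrow> ttaus t []"
proof -
  assume o: "okC' t" and n: "absC' t = None"
  from o consider (gu) \<alpha> where "set \<alpha> \<subseteq> Ix" "t = Gu # map U \<alpha>"
    | (gv') \<beta> \<alpha> where "set \<beta> \<subseteq> Ix" "set \<alpha> \<subseteq> Ix" "t = Gv' # vuf \<beta> \<alpha>"
    | (g) g where "uvl g" "t = G # g" | (g2) g where "bl g" "t = G' # g"
    | (gv) g where "bl g" "t = Gv # g" | (z) g where "bl g" "t = Z # g"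
    | (p) "pureC' t"
    unfolding okC'_def by blast
  then show ?thesis
  proof cases
    case g2 then show ?thesis using van_Z[of g] ttaus_stepl[of "G' # g" "Z # g" "[]"] by (simp add: tm_G')
  next
    case gv then show ?thesis using van_Gv by simp
  next
    case z then show ?thesis using van_Z by simp
  next
    case p then show ?thesis using basics_vanish unfolding pureC'_def by blast
  qed (use n in \<open>auto simp: absC'_def\<close>)
qed

end


context pcpG
begin

lemma ttaus_mtau: "ttaus t t' \<Longrightarrow> mtau (M + wm t) (M + wm t')"
proof (induction rule: rtranclp_induct)
  case (step t1 t2)
  then obtain c r where "t1 = c # r" unfolding tmove_def by auto
  then have "mstep (M + wm t1) Tau (M + wm t2)" using step.hyps(2) unfolding mstep_def by auto
  then show ?case using rtranclp.rtrancl_into_rtrancl[OF step.IH] by blast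
qed simp

lemma ttaus_mtau': "ttaus t t' \<Longrightarrow> t \<noteq> [] \<Longrightarrow> mtau (add_mset t M) (M + wm t')"
  using ttaus_mtau[of t t' M] by (cases t) (auto simp: add.commute)

lemma cmove_mstep: "cmove c l r \<Longrightarrow> mstep (add_mset [c] M) l (M + r)"
  unfolding mstep_def by blast

lemma gen1:
  assumes "cmove c Tau {#[c], [g]#}" "ttaus [g] t" "t \<noteq> []"
  shows "mtau (add_mset [c] M) (add_mset [c] (add_mset t M))"
proof -
  have "mstep (add_mset [c] M) Tau (M + {#[c], [g]#})" by (rule cmove_mstep[OF assms(1)])
  then have "mstep (add_mset [c] M) Tau (add_mset [c] M + wm [g])" by (simp add: add_mset_commute)
  then have 1: "mtau (add_mset [c] M) (add_mset [c] M + wm [g])" by (rule r_into_rtranclp)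
  have "mtau (add_mset [c] M + wm [g]) (add_mset [c] M + wm t)" by (rule ttaus_mtau[OF assms(2)])
  then show ?thesis using 1 assms(3) by (cases t) (auto simp: add_mset_commute intro: rtranclp_trans)
qed

lemma gen_many:
  assumes "\<forall>t\<in>#A. t \<noteq> [] \<and> (\<exists>g. cmove c Tau {#[c], [g]#} \<and> ttaus [g] t)"
  shows "mtau (add_mset [c] M) (add_mset [c] (M + A))"
  using assms
proof (induction A)
  case (add t A)
  then obtain g where "cmove c Tau {#[c], [g]#}" "ttaus [g] t" "t \<noteq> []" by auto
  from gen1[OF this, of "M + A"] add show ?case by (auto intro: rtranclp_trans)
qed simp

lemma van_many:
  assumes "\<forall>t\<in>#A. t \<noteq> [] \<and> ttaus t []"
  shows "mtau (M + A) M"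
  using assms
proof (induction A)
  case (add t A)
  then have "mtau (M + A + wm t) (M + A + wm [])" using ttaus_mtau[of t "[]" "M + A"] by auto
  then have "mtau (M + add_mset t A) (M + A)" using add by (cases t) auto
  then show ?case using add by (auto intro: rtranclp_trans)
qed simp

definition amh :: "('s av \<Rightarrow> 's av option) \<Rightarrow> 's av multiset \<Rightarrow> 's av multiset" where
  "amh h Vs = image_mset (\<lambda>v. the (h v)) (filter_mset (\<lambda>v. h v \<noteq> None) Vs)"

lemma am_bind: "\<forall>t\<in>#A. f2 t = Option.bind (f1 t) h \<Longrightarrow> am f2 A = amh h (am f1 A)"
proof (induction A)
  case (add t A)
  then show ?case by (cases "f1 t"; cases "f2 t") (auto simp: amh_def am_def)
qed (simp add: amh_def)

lemma am_filter_some: "am f (filter_mset (\<lambda>t. f t \<noteq> None) A) = am f A"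
  by (simp add: am_def filter_filter_mset)
lemma am_filter_none: "am f (filter_mset (\<lambda>t. f t = None) A) = {#}"
  by (simp add: am_def)
lemma am_all_none: "\<forall>t\<in>#A. f t = None \<Longrightarrow> am f A = {#}"
  by (induction A) auto
lemma am_image_same: "\<forall>t\<in>#A. f (g t) = f t \<Longrightarrow> am f (image_mset g A) = am f A"
proof (induction A)
  case (add x A)
  then show ?case by (cases "f x") auto
qed simp

lemma am_mem: "v \<in># am f T \<Longrightarrow> \<exists>t\<in>#T. f t = Some v"
  unfolding am_def by auto

definition phases :: "'s const set" where "phases = {D, C, I, S, C'}"

definition okf :: "'s const \<Rightarrow> 's const list \<Rightarrow> bool" where
  "okf c = (if c = D then okD else if c = C' then okC' else okC)"

definition absf :: "'s const \<Rightarrow> 's const list \<Rightarrow> 's av option" where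
  "absf c = (if c = D then absD else if c = C then absC else if c = I then absI else if c = S then absS else absC')"

lemma okf_simps[simp]: "okf D = okD" "okf C = okC" "okf I = okC" "okf S = okC" "okf C' = okC'"
  by (auto simp: okf_def)
lemma absf_simps[simp]: "absf D = absD" "absf C = absC" "absf I = absI" "absf S = absS" "absf C' = absC'"
  by (auto simp: absf_def)

definition okm :: "'s const \<Rightarrow> 's const list multiset \<Rightarrow> bool" where
  "okm c T \<longleftrightarrow> (\<forall>t\<in>#T. okf c t)"

lemma okm_simps[simp]: "okm c {#} = True" "okm c (add_mset t T) \<longleftrightarrow> okf c t \<and> okm c T"
  "okm c (A + B) \<longleftrightarrow> okm c A \<and> okm c B"
  by (auto simp: okm_def)

lemma okm_wm: "t = [] \<or> okf c t \<Longrightarrow> okm c (wm t)"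
  by (cases t) auto

lemma okm_filter: "okm c A \<Longrightarrow> okm c (filter_mset P A)"
  by (auto simp: okm_def)

definition ph :: "'s const \<Rightarrow> 's const list multiset \<Rightarrow> 's const list multiset \<Rightarrow> bool" where
  "ph c T T' \<longleftrightarrow> okm c T \<and> okm c T' \<and> am (absf c) T = am (absf c) T'"

definition phR :: "'s const list multiset \<Rightarrow> 's const list multiset \<Rightarrow> bool" where
  "phR m n \<longleftrightarrow> (\<exists>c T T'. c \<in> phases \<and> m = add_mset [c] T \<and> n = add_mset [c] T' \<and> ph c T T')"

lemma phR_I: "c \<in> phases \<Longrightarrow> ph c T T' \<Longrightarrow> phR (add_mset [c] T) (add_mset [c] T')"
  unfolding phR_def by blast

definition thr_ok :: "'s const \<Rightarrow> 's const list \<Rightarrow> 's act \<Rightarrow> 's const list \<Rightarrow> bool" where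
  "thr_ok c t l t' \<longleftrightarrow>
     (l = Tau \<and> am (absf c) (wm t') = am (absf c) {#t#}) \<or>
     (absf c t = None \<and> (\<exists>g tg tg'. cmove c Tau {#[c], [g]#} \<and> ttaus [g] tg \<and> okf c tg \<and> tg \<noteq> [] \<and>
         absf c tg = None \<and> tmove tg l tg' \<and> am (absf c) (wm tg') = am (absf c) (wm t') \<and> (tg' = [] \<or> okf c tg'))) \<or>
     (absf c t \<noteq> None \<and> (\<forall>t2. okf c t2 \<and> absf c t2 = absf c t \<longrightarrow>
         (\<exists>t2'' t2'. ttaus t2 t2'' \<and> okf c t2'' \<and> absf c t2'' = absf c t \<and> tmove t2'' l t2' \<and>
            am (absf c) (wm t2') = am (absf c) (wm t') \<and> (t2' = [] \<or> okf c t2')))) \<or>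
     (cmove c l {#[c]#} \<and> am (absf c) (wm t') = am (absf c) {#t#})"

lemma okf_nonempty: "okf c t \<Longrightarrow> t \<noteq> []"
  unfolding okf_def okD_def okC_def okC'_def pureD_def pureC_def pureC'_def by (auto split: if_splits)

lemma thread_resp:
  assumes c: "c \<in> phases" and p: "ph c T T'" and T: "T = add_mset t T0" and m: "tmove t l t'"
    and cl: "t' = [] \<or> okf c t'" and H: "thr_ok c t l t'"
  shows "(\<exists>n'' n'. mtau (add_mset [c] T') n'' \<and> mstep n'' l n' \<and> phR (add_mset [c] T) n'' \<and>
              phR (add_mset [c] (T0 + wm t')) n') \<or> (l = Tau \<and> phR (add_mset [c] (T0 + wm t')) (add_mset [c] T'))"
proof -
  let ?f = "absf c"
  have okT: "okm c T" "okm c T'" and amT: "am ?f T = am ?f T'" using p unfolding ph_def by auto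
  have okT0: "okm c (T0 + wm t')" using okT T okm_wm[OF cl] by auto
  from H[unfolded thr_ok_def] consider
      (inert) "l = Tau" "am ?f (wm t') = am ?f {#t#}"
    | (gen) g tg tg' where "?f t = None" "cmove c Tau {#[c], [g]#}" "ttaus [g] tg" "okf c tg" "tg \<noteq> []"
         "?f tg = None" "tmove tg l tg'" "am ?f (wm tg') = am ?f (wm t')" "tg' = [] \<or> okf c tg'"
    | (partner) "?f t \<noteq> None" "\<forall>t2. okf c t2 \<and> ?f t2 = ?f t \<longrightarrow>
         (\<exists>t2'' t2'. ttaus t2 t2'' \<and> okf c t2'' \<and> ?f t2'' = ?f t \<and> tmove t2'' l t2' \<and>
            am ?f (wm t2') = am ?f (wm t') \<and> (t2' = [] \<or> okf c t2'))"
    | (loop) "cmove c l {#[c]#}" "am ?f (wm t') = am ?f {#t#}"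
    by blast
  then show ?thesis
  proof cases
    case inert
    have "am ?f (T0 + wm t') = am ?f T'" using inert amT T am_add_mset'[of ?f t T0] by simp
    then have "phR (add_mset [c] (T0 + wm t')) (add_mset [c] T')"
      using okT0 okT c by (intro phR_I) (auto simp: ph_def)
    then show ?thesis using inert by blast
  next
    case gen
    let ?n'' = "add_mset [c] (add_mset tg T')" and ?n' = "add_mset [c] (T' + wm tg')"
    have 1: "mtau (add_mset [c] T') ?n''" using gen1[OF gen(2,3,5)] .
    have "mstep (add_mset tg (add_mset [c] T')) l (add_mset [c] T' + wm tg')"
      using gen(7) unfolding mstep_def by blast
    then have 2: "mstep ?n'' l ?n'" by (simp add: add_mset_commute add.commute)
    have 3: "phR (add_mset [c] T) ?n''" using gen okT amT c by (intro phR_I) (auto simp: ph_def)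
    have "am ?f T0 = am ?f T" using T gen(1) by simp
    then have "am ?f (T0 + wm t') = am ?f (T' + wm tg')" using amT gen(8) by simp
    then have 4: "phR (add_mset [c] (T0 + wm t')) ?n'"
      using okT0 okT gen(9) c okm_wm[of tg' c] by (intro phR_I) (auto simp: ph_def)
    show ?thesis using 1 2 3 4 by blast
  next
    case partner
    then obtain v where v: "?f t = Some v" by auto
    then have "v \<in># am ?f T'" using amT T by (metis am_add_some union_single_eq_member)
    then obtain t2 where t2: "t2 \<in># T'" "?f t2 = Some v" using am_mem by blast
    then obtain T2 where T2: "T' = add_mset t2 T2" by (metis multi_member_split)
    have "okf c t2" using okT T2 by simp
    then obtain t2'' t2' where q: "ttaus t2 t2''" "okf c t2''" "?f t2'' = ?f t" "tmove t2'' l t2'"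
        "am ?f (wm t2') = am ?f (wm t')" "t2' = [] \<or> okf c t2'"
      using partner(2) t2 v by metis
    let ?n'' = "add_mset [c] (add_mset t2'' T2)" and ?n' = "add_mset [c] (T2 + wm t2')"
    have "t2 \<noteq> []" using \<open>okf c t2\<close> okf_nonempty by blast
    then have "mtau (add_mset t2 (add_mset [c] T2)) (add_mset [c] T2 + wm t2'')"
      using ttaus_mtau'[OF q(1)] by blast
    then have 1: "mtau (add_mset [c] T') ?n''" using T2 okf_nonempty[OF q(2)]
      by (cases t2'') (auto simp: add_mset_commute)
    have "mstep (add_mset t2'' (add_mset [c] T2)) l (add_mset [c] T2 + wm t2')"
      using q(4) unfolding mstep_def by blast
    then have 2: "mstep ?n'' l ?n'" by (simp add: add_mset_commute add.commute)
    have amT2: "am ?f T0 = am ?f T2" using amT T T2 v t2(2) by simp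
    have 3: "phR (add_mset [c] T) ?n''" using okT T2 q(2,3) amT T v c t2(2) by (intro phR_I) (auto simp: ph_def)
    have 4: "phR (add_mset [c] (T0 + wm t')) ?n'"
      using okT0 okT T2 q(5,6) amT2 c okm_wm[of t2' c] by (intro phR_I) (auto simp: ph_def)
    show ?thesis using 1 2 3 4 by blast
  next
    case loop
    have 2: "mstep (add_mset [c] T') l (add_mset [c] T')" using cmove_mstep[OF loop(1), of T'] by simp
    have 3: "phR (add_mset [c] T) (add_mset [c] T')" using phR_I[OF c p] .
    have "am ?f (T0 + wm t') = am ?f T'" using loop amT T am_add_mset'[of ?f t T0] by simp
    then have 4: "phR (add_mset [c] (T0 + wm t')) (add_mset [c] T')"
      using okT0 okT c by (intro phR_I) (auto simp: ph_def)
    show ?thesis using 2 3 4 by blast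
  qed
qed

end


context pcpG
begin

lemma Rig_abs: "c \<in> phases \<Longrightarrow> absf c t = Some (Rig x) \<Longrightarrow> x = t"
  unfolding phases_def
  by (auto simp: abs_defs split: list.splits const.splits if_splits)

lemma rigid_ok:
  assumes "c \<in> phases" "absf c t = Some (Rig t)" "tmove t l t'" "t' = [] \<or> okf c t'" "okf c t"
  shows "thr_ok c t l t'"
proof -
  have "\<forall>t2. okf c t2 \<and> absf c t2 = absf c t \<longrightarrow> t2 = t" using Rig_abs[OF assms(1)] assms(2) by metis
  then show ?thesis unfolding thr_ok_def using assms by (metis rtranclp.rtrancl_refl option.distinct(1))
qed

lemma pureC_head: "pureC t \<Longrightarrow> \<exists>c g. t = c # g \<and> basic c"
  unfolding pureC_def basic_def by (cases t) auto

definition pI :: "'s list \<Rightarrow> 's av multiset" where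
  "pI s = (if s = [] then {#} else {#AP s []#})"
definition pS :: "nat list \<Rightarrow> 's av multiset" where
  "pS i = (if i = [] then {#} else {#AP [] i#})"

lemma amI_pure: "t = [] \<or> pureC t \<Longrightarrow> am absI (wm t) = pI (str t)"
proof -
  assume "t = [] \<or> pureC t"
  then show ?thesis
  proof
    assume "pureC t"
    then obtain c g where "t = c # g" "basic c" using pureC_head by blast
    then show ?thesis using absI_basic[of c g] by (auto simp: pI_def simp del: str_simps)
  qed (simp add: pI_def)
qed

lemma amS_pure: "t = [] \<or> pureC t \<Longrightarrow> am absS (wm t) = pS (idxs t)"
proof -
  assume "t = [] \<or> pureC t"
  then show ?thesis
  proof
    assume "pureC t"
    then obtain c g where "t = c # g" "basic c" using pureC_head by blast
    then show ?thesis using absS_basic[of c g] by (auto simp: pS_def simp del: idxs_simps)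
  qed (simp add: pS_def)
qed

lemma uvl_pure: "uvl g \<Longrightarrow> g = [] \<or> pureC g"
  unfolding pureC_def by auto

lemma uvl_idxs: "uvl g \<Longrightarrow> set (idxs g) \<subseteq> Ix"
  by (induction g) (auto simp: uvc_def)

lemma amC_pure: "t = [] \<or> pureC t \<Longrightarrow> am absC (wm t) = {#}"
  using pureC_head absC_basic by (cases t) fastforce+
lemma amD_pure: "t = [] \<or> pureC t \<Longrightarrow> am absD (wm t) = {#}"
  using pureC_head absD_basic by (cases t) fastforce+
lemma amC'_pure: "t = [] \<or> pureC' t \<Longrightarrow> am absC' (wm t) = {#}"
  unfolding pureC'_def using absC'_basic by (cases t) fastforce+

lemma normI_uvl: "uvl t \<Longrightarrow> str t = a # s \<Longrightarrow>
   \<exists>w2 j2 r2. ttaus t (W (a # w2) j2 # r2) \<and> W (a # w2) j2 \<in> Ws \<and> uvl r2 \<and> str (W (a # w2) j2 # r2) = a # s"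
proof -
  assume u: "uvl t" and s: "str t = a # s"
  then obtain c g where cg: "t = c # g" by (cases t) auto
  then have "uvc c" "uvl g" using u by auto
  then obtain k where k: "k \<in> Ix" "c = U k \<or> c = V k" unfolding uvc_def by auto
  from k(2) show ?thesis
  proof
    assume "c = U k"
    obtain b w' where bw: "uu k = b # w'" using uv_props[OF k(1)] by (cases "uu k") auto
    then have "b = a" using s cg \<open>c = U k\<close> by simp
    have "ttau t (W (uu k) k # g)" using cg \<open>c = U k\<close> k by (simp add: tm_U)
    then show ?thesis using bw \<open>b = a\<close> W_U[OF k(1)] \<open>uvl g\<close> s cg \<open>c = U k\<close>
      by (intro exI[of _ w'] exI[of _ k] exI[of _ g]) auto
  next
    assume "c = V k"
    obtain b w' where bw: "vv k = b # w'" using uv_props[OF k(1)] by (cases "vv k") auto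
    then have "b = a" using s cg \<open>c = V k\<close> by simp
    have "ttau t (W (vv k) k # g)" using cg \<open>c = V k\<close> k by (simp add: tm_V)
    then show ?thesis using bw \<open>b = a\<close> W_V[OF k(1)] \<open>uvl g\<close> s cg \<open>c = V k\<close>
      by (intro exI[of _ w'] exI[of _ k] exI[of _ g]) auto
  qed
qed

lemma normI: "pureC t \<Longrightarrow> str t = a # s \<Longrightarrow>
   \<exists>w2 j2 r2. ttaus t (W (a # w2) j2 # r2) \<and> W (a # w2) j2 \<in> Ws \<and> uvl r2 \<and> str (W (a # w2) j2 # r2) = a # s"
proof -
  assume p: "pureC t" and s: "str t = a # s"
  from p consider "uvl t" | w j g where "W w j \<in> Ws" "uvl g" "t = W w j # g" unfolding pureC_def by blast
  then show ?thesis
  proof cases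
    case 1 then show ?thesis using normI_uvl s by blast
  next
    case 2
    show ?thesis
    proof (cases w)
      case (Cons b w')
      then show ?thesis using 2 s by (intro exI[of _ w'] exI[of _ j] exI[of _ g]) auto
    next
      case Nil
      then have "str g = a # s" using 2 s by simp
      from normI_uvl[OF 2(2) this] obtain w2 j2 r2 where
        "ttaus g (W (a # w2) j2 # r2)" "W (a # w2) j2 \<in> Ws" "uvl r2" "str (W (a # w2) j2 # r2) = a # s" by blast
      moreover have "ttaus t g" using W_vanish[OF 2(1)] 2(3) by simp
      ultimately show ?thesis by (meson rtranclp_trans)
    qed
  qed
qed

lemma normS_uvl: "uvl t \<Longrightarrow> idxs t = j # i \<Longrightarrow>
   \<exists>w2 r2. ttaus t (W w2 j # r2) \<and> W w2 j \<in> Ws \<and> j \<in> Ix \<and> uvl r2 \<and> idxs r2 = i"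
proof -
  assume u: "uvl t" and s: "idxs t = j # i"
  then obtain c g where cg: "t = c # g" by (cases t) auto
  then have "uvc c" "uvl g" using u by auto
  then obtain k where k: "k \<in> Ix" "c = U k \<or> c = V k" unfolding uvc_def by auto
  then have "k = j" "idxs g = i" using s cg by auto
  from k(2) show ?thesis
  proof
    assume "c = U k"
    have "ttau t (W (uu k) k # g)" using cg \<open>c = U k\<close> k by (simp add: tm_U)
    then show ?thesis using W_U[OF k(1)] \<open>uvl g\<close> \<open>k = j\<close> \<open>idxs g = i\<close> k
      by (intro exI[of _ "uu k"] exI[of _ g]) auto
  next
    assume "c = V k"
    have "ttau t (W (vv k) k # g)" using cg \<open>c = V k\<close> k by (simp add: tm_V)
    then show ?thesis using W_V[OF k(1)] \<open>uvl g\<close> \<open>k = j\<close> \<open>idxs g = i\<close> k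
      by (intro exI[of _ "vv k"] exI[of _ g]) auto
  qed
qed

lemma normS: "pureC t \<Longrightarrow> idxs t = j # i \<Longrightarrow>
   \<exists>w2 r2. ttaus t (W w2 j # r2) \<and> W w2 j \<in> Ws \<and> j \<in> Ix \<and> uvl r2 \<and> idxs r2 = i"
proof -
  assume p: "pureC t" and s: "idxs t = j # i"
  from p consider "uvl t" | w j' g where "W w j' \<in> Ws" "uvl g" "t = W w j' # g" unfolding pureC_def by blast
  then show ?thesis
  proof cases
    case 1 then show ?thesis using normS_uvl s by blast
  next
    case 2
    show ?thesis
    proof (cases "j' = 0")
      case False
      then show ?thesis using 2 s W_idx[OF 2(1)] by (intro exI[of _ w] exI[of _ g]) auto
    next
      case True
      then have "idxs g = j # i" using 2 s by simp
      from normS_uvl[OF 2(2) this] obtain w2 r2 where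
        "ttaus g (W w2 j # r2)" "W w2 j \<in> Ws" "j \<in> Ix" "uvl r2" "idxs r2 = i" by blast
      moreover have "ttaus t g" using W_vanish[OF 2(1)] 2(3) by simp
      ultimately show ?thesis by (intro exI[of _ w2] exI[of _ r2]) (auto intro: rtranclp_trans)
    qed
  qed
qed

end


context pcpG
begin

lemma phases_simps[simp]: "D \<in> phases" "C \<in> phases" "I \<in> phases" "S \<in> phases" "C' \<in> phases"
  by (auto simp: phases_def)

lemma ok_cases_D:
  assumes "okD t"
  obtains (gu) \<alpha> where "set \<alpha> \<subseteq> Ix" "t = Gu # map U \<alpha>"
    | (gv') \<beta> \<alpha> where "set \<beta> \<subseteq> Ix" "set \<alpha> \<subseteq> Ix" "t = Gv' # vuf \<beta> \<alpha>"
    | (z) \<beta> \<alpha> where "set \<beta> \<subseteq> Ix" "set \<alpha> \<subseteq> Ix" "t = Z # vuf \<beta> \<alpha>"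
    | (gv) \<beta> \<alpha> where "set \<beta> \<subseteq> Ix" "set \<alpha> \<subseteq> Ix" "t = Gv # vuf \<beta> \<alpha>"
    | (p) "pureD t"
  using assms unfolding okD_def by blast

lemma ok_cases_C:
  assumes "okC t"
  obtains (gu) \<alpha> where "set \<alpha> \<subseteq> Ix" "t = Gu # map U \<alpha>"
    | (gv') \<beta> \<alpha> where "set \<beta> \<subseteq> Ix" "set \<alpha> \<subseteq> Ix" "t = Gv' # vuf \<beta> \<alpha>"
    | (g) g where "uvl g" "t = G # g" | (gv) g where "uvl g" "t = Gv # g" | (z) g where "uvl g" "t = Z # g"
    | (p) "pureC t"
  using assms unfolding okC_def by blast

lemma ok_cases_C':
  assumes "okC' t"
  obtains (gu) \<alpha> where "set \<alpha> \<subseteq> Ix" "t = Gu # map U \<alpha>"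
    | (gv') \<beta> \<alpha> where "set \<beta> \<subseteq> Ix" "set \<alpha> \<subseteq> Ix" "t = Gv' # vuf \<beta> \<alpha>"
    | (g) g where "uvl g" "t = G # g" | (g2) g where "bl g" "t = G' # g"
    | (gv) g where "bl g" "t = Gv # g" | (z) g where "bl g" "t = Z # g"
    | (p) "pureC' t"
  using assms unfolding okC'_def by blast

lemma uvl_vuf': "set \<beta> \<subseteq> Ix \<Longrightarrow> set \<alpha> \<subseteq> Ix \<Longrightarrow> vuf \<beta> \<alpha> = [] \<or> pureC (vuf \<beta> \<alpha>)"
  using uvl_vuf uvl_pure by blast

lemma pureC_absD: "pureC t \<Longrightarrow> absD t = None"
  by (metis pureC_head absD_basic)
lemma pureC_absC: "pureC t \<Longrightarrow> absC t = None"
  by (metis pureC_head absC_basic)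
lemma pureD_absD: "pureD t \<Longrightarrow> absD t = None"
  by (metis pureC_head absD_basic pureD_pureC)
lemma pureC'_absC': "pureC' t \<Longrightarrow> absC' t = None"
  unfolding pureC'_def using absC'_basic by (cases t) auto

lemma uvl_mapV: "set is \<subseteq> Ix \<Longrightarrow> uvl (map V is)" by auto

lemma thr_inert: "l = Tau \<Longrightarrow> am (absf c) (wm t') = am (absf c) {#t#} \<Longrightarrow> thr_ok c t l t'"
  unfolding thr_ok_def by blast
lemma thr_gen: "absf c t = None \<Longrightarrow> cmove c Tau {#[c], [g]#} \<Longrightarrow> ttaus [g] tg \<Longrightarrow> okf c tg \<Longrightarrow> tg \<noteq> [] \<Longrightarrow>
   absf c tg = None \<Longrightarrow> tmove tg l tg' \<Longrightarrow> am (absf c) (wm tg') = am (absf c) (wm t') \<Longrightarrow> (tg' = [] \<or> okf c tg') \<Longrightarrow>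
   thr_ok c t l t'"
  unfolding thr_ok_def by blast
lemma thr_partner: "absf c t \<noteq> None \<Longrightarrow> (\<And>t2. okf c t2 \<Longrightarrow> absf c t2 = absf c t \<Longrightarrow>
         (\<exists>t2'' t2'. ttaus t2 t2'' \<and> okf c t2'' \<and> absf c t2'' = absf c t \<and> tmove t2'' l t2' \<and>
            am (absf c) (wm t2') = am (absf c) (wm t') \<and> (t2' = [] \<or> okf c t2'))) \<Longrightarrow> thr_ok c t l t'"
  unfolding thr_ok_def by blast
lemma thr_loop: "cmove c l {#[c]#} \<Longrightarrow> am (absf c) (wm t') = am (absf c) {#t#} \<Longrightarrow> thr_ok c t l t'"
  unfolding thr_ok_def by blast

lemma tauD_ign: "okD t \<Longrightarrow> absD t = None \<Longrightarrow> tmove t Tau t' \<Longrightarrow> am absD (wm t') = {#}"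
proof -
  assume o: "okD t" and n: "absD t = None" and m: "tmove t Tau t'"
  from o show ?thesis
  proof (cases rule: ok_cases_D)
    case gu then show ?thesis using m by (auto simp: tm_Gu absD_def)
  next
    case gv' then show ?thesis using m by (auto simp: tm_Gv' absD_def)
  next
    case z then show ?thesis using m amD_pure uvl_vuf' by (auto simp: tm_Z)
  next
    case gv then show ?thesis using n by (simp add: absD_def)
  next
    case p then show ?thesis using pureD_close[OF p m] amD_pure pureD_pureC by blast
  qed
qed

lemma thrD: assumes o: "okD t" and m: "tmove t l t'" shows "thr_ok D t l t'"
proof -
  have cl: "t' = [] \<or> okD t'" using okD_close[OF o m] .
  show ?thesis
  proof (cases "absD t = None")
    case True
    show ?thesis
    proof (cases "l = Tau")
      case True
      then show ?thesis using tauD_ign[OF o \<open>absD t = None\<close>] m \<open>absD t = None\<close> unfolding thr_ok_def by simp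
    next
      case False
      have "cmove D Tau {#[D], [Gu]#}" by (simp add: cm_D)
      moreover have "ttaus [Gu] t" using genD[OF o True] .
      ultimately show ?thesis using True o m cl okf_nonempty[of D t]
        by (intro thr_gen[of D t Gu t l t']) auto
    qed
  next
    case False
    from o obtain \<beta> \<alpha> where ba: "set \<beta> \<subseteq> Ix" "set \<alpha> \<subseteq> Ix" "t = Gv # vuf \<beta> \<alpha>"
    proof (cases rule: ok_cases_D)
      case p then have "absD t = None" by (rule pureD_absD)
      then show ?thesis using False by simp
    qed (use False in \<open>auto simp: absD_def\<close>)
    let ?g = "vuf \<beta> \<alpha>"
    have part: "okD t2 \<Longrightarrow> absD t2 = absD t \<Longrightarrow> \<exists>\<beta>2 \<alpha>2. set \<beta>2 \<subseteq> Ix \<and> set \<alpha>2 \<subseteq> Ix \<and> t2 = Gv # vuf \<beta>2 \<alpha>2 \<and>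
         (realz (vuf \<beta>2 \<alpha>2) = realz ?g) \<and> (\<not> realz ?g \<longrightarrow> str (vuf \<beta>2 \<alpha>2) = str ?g \<and> idxs (vuf \<beta>2 \<alpha>2) = idxs ?g)" for t2
    proof -
      assume a: "okD t2" "absD t2 = absD t"
      then have "absD t2 \<noteq> None" using False by simp
      from a(1) show ?thesis
      proof (cases rule: ok_cases_D)
        case p then have "absD t2 = None" by (rule pureD_absD)
        then show ?thesis using \<open>absD t2 \<noteq> None\<close> by simp
      next
        case gv then show ?thesis using a(2) ba by (auto simp: absD_def split: if_splits)
      qed (use \<open>absD t2 \<noteq> None\<close> in \<open>auto simp: absD_def\<close>)
    qed
    from m ba consider (grow) k where "k \<in> Ix" "l = Tau" "t' = Gv # V k # ?g" | (drop) "l = Tau" "t' = ?g"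
      | (lv) "l = LV" "t' = Z # ?g" by (auto simp: tm_Gv)
    then show ?thesis
    proof cases
      case grow
      show ?thesis
      proof (cases "realz ?g")
        case True
        then show ?thesis using grow ba unfolding thr_ok_def by (auto simp: absD_def realz_V)
      next
        case nr: False
        have "\<forall>t2. okD t2 \<and> absD t2 = absD t \<longrightarrow> (\<exists>t2'' t2'. ttaus t2 t2'' \<and> okD t2'' \<and> absD t2'' = absD t \<and>
            tmove t2'' l t2' \<and> am absD (wm t2') = am absD (wm t') \<and> (t2' = [] \<or> okD t2'))"
        proof (intro allI impI)
          fix t2 assume a: "okD t2 \<and> absD t2 = absD t"
          then obtain \<beta>2 \<alpha>2 where b2: "set \<beta>2 \<subseteq> Ix" "set \<alpha>2 \<subseteq> Ix" "t2 = Gv # vuf \<beta>2 \<alpha>2"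
            "\<not> realz (vuf \<beta>2 \<alpha>2)" "str (vuf \<beta>2 \<alpha>2) = str ?g" "idxs (vuf \<beta>2 \<alpha>2) = idxs ?g"
            using part nr by blast
          have mv: "tmove t2 l (Gv # V k # vuf \<beta>2 \<alpha>2)" using b2 grow by (simp add: tm_Gv)
          show "\<exists>t2'' t2'. ttaus t2 t2'' \<and> okD t2'' \<and> absD t2'' = absD t \<and>
            tmove t2'' l t2' \<and> am absD (wm t2') = am absD (wm t') \<and> (t2' = [] \<or> okD t2')"
            using a mv okD_close[OF _ mv] b2 grow nr
            by (intro exI[of _ t2] exI[of _ "Gv # V k # vuf \<beta>2 \<alpha>2"]) (auto simp: absD_def realz_V)
        qed
        then show ?thesis using False unfolding thr_ok_def by auto
      qed
    next
      case drop
      have "\<forall>t2. okD t2 \<and> absD t2 = absD t \<longrightarrow> (\<exists>t2'' t2'. ttaus t2 t2'' \<and> okD t2'' \<and> absD t2'' = absD t \<and>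
          tmove t2'' l t2' \<and> am absD (wm t2') = am absD (wm t') \<and> (t2' = [] \<or> okD t2'))"
      proof (intro allI impI)
        fix t2 assume a: "okD t2 \<and> absD t2 = absD t"
        then obtain \<beta>2 \<alpha>2 where b2: "set \<beta>2 \<subseteq> Ix" "set \<alpha>2 \<subseteq> Ix" "t2 = Gv # vuf \<beta>2 \<alpha>2"
          using part by blast
        have mv: "tmove t2 l (vuf \<beta>2 \<alpha>2)" using b2 drop by (simp add: tm_Gv)
        show "\<exists>t2'' t2'. ttaus t2 t2'' \<and> okD t2'' \<and> absD t2'' = absD t \<and>
          tmove t2'' l t2' \<and> am absD (wm t2') = am absD (wm t') \<and> (t2' = [] \<or> okD t2')"
          using a mv okD_close[OF _ mv] b2 drop amD_pure uvl_vuf'[OF b2(1,2)] uvl_vuf'[OF ba(1,2)]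
          by (intro exI[of _ t2] exI[of _ "vuf \<beta>2 \<alpha>2"]) auto
      qed
      then show ?thesis using False unfolding thr_ok_def by auto
    next
      case lv
      have "\<forall>t2. okD t2 \<and> absD t2 = absD t \<longrightarrow> (\<exists>t2'' t2'. ttaus t2 t2'' \<and> okD t2'' \<and> absD t2'' = absD t \<and>
          tmove t2'' l t2' \<and> am absD (wm t2') = am absD (wm t') \<and> (t2' = [] \<or> okD t2'))"
      proof (intro allI impI)
        fix t2 assume a: "okD t2 \<and> absD t2 = absD t"
        then obtain \<beta>2 \<alpha>2 where b2: "set \<beta>2 \<subseteq> Ix" "set \<alpha>2 \<subseteq> Ix" "t2 = Gv # vuf \<beta>2 \<alpha>2"
          using part by blast
        have mv: "tmove t2 l (Z # vuf \<beta>2 \<alpha>2)" using b2 lv by (simp add: tm_Gv)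
        show "\<exists>t2'' t2'. ttaus t2 t2'' \<and> okD t2'' \<and> absD t2'' = absD t \<and>
          tmove t2'' l t2' \<and> am absD (wm t2') = am absD (wm t') \<and> (t2' = [] \<or> okD t2')"
          using a mv okD_close[OF _ mv] b2 lv
          by (intro exI[of _ t2] exI[of _ "Z # vuf \<beta>2 \<alpha>2"]) (auto simp: absD_def)
      qed
      then show ?thesis using False unfolding thr_ok_def by auto
    qed
  qed
qed

end


context pcpG
begin

lemma absI_pure: "pureC t \<Longrightarrow> absI t = (if str t = [] then None else Some (AP (str t) []))"
  by (metis pureC_head absI_basic)
lemma absS_pure: "pureC t \<Longrightarrow> absS t = (if idxs t = [] then None else Some (AP [] (idxs t)))"
  by (metis pureC_head absS_basic)

lemma absC_AGv: assumes "okC t2" "absC t2 = Some (AGv s i)"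
  shows "\<exists>g2. t2 = Gv # g2 \<and> uvl g2 \<and> \<not> realz g2 \<and> str g2 = s \<and> idxs g2 = i"
  using assms(1)
proof (cases rule: ok_cases_C)
  case p then show ?thesis using assms(2) pureC_absC by simp
qed (use assms(2) in \<open>auto simp: absC_def split: if_splits\<close>)

lemma absC_AZ: assumes "okC t2" "absC t2 = Some (AZ s i)"
  shows "\<exists>g2. t2 = Z # g2 \<and> uvl g2 \<and> str g2 = s \<and> idxs g2 = i"
  using assms(1)
proof (cases rule: ok_cases_C)
  case p then show ?thesis using assms(2) pureC_absC by simp
qed (use assms(2) in \<open>auto simp: absC_def split: if_splits\<close>)

lemma absI_AGv: assumes "okC t2" "absI t2 = Some (AGv s i)" shows "\<exists>g2. t2 = Gv # g2 \<and> uvl g2 \<and> str g2 = s"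
  using assms(1)
proof (cases rule: ok_cases_C)
  case p then show ?thesis using assms(2) absI_pure by (simp split: if_splits)
qed (use assms(2) in \<open>auto simp: absI_def\<close>)

lemma absI_AZ: assumes "okC t2" "absI t2 = Some (AZ s i)" shows "\<exists>g2. t2 = Z # g2 \<and> uvl g2 \<and> str g2 = s"
  using assms(1)
proof (cases rule: ok_cases_C)
  case p then show ?thesis using assms(2) absI_pure by (simp split: if_splits)
qed (use assms(2) in \<open>auto simp: absI_def\<close>)

lemma absI_AP: assumes "okC t2" "absI t2 = Some (AP s i)" shows "pureC t2 \<and> str t2 = s"
  using assms(1)
proof (cases rule: ok_cases_C)
  case p then show ?thesis using assms(2) absI_pure by (simp split: if_splits)
qed (use assms(2) in \<open>auto simp: absI_def\<close>)

lemma absS_AGv: assumes "okC t2" "absS t2 = Some (AGv s i)" shows "\<exists>g2. t2 = Gv # g2 \<and> uvl g2 \<and> idxs g2 = i"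
  using assms(1)
proof (cases rule: ok_cases_C)
  case p then show ?thesis using assms(2) absS_pure by (simp split: if_splits)
qed (use assms(2) in \<open>auto simp: absS_def\<close>)

lemma absS_AZ: assumes "okC t2" "absS t2 = Some (AZ s i)" shows "\<exists>g2. t2 = Z # g2 \<and> uvl g2 \<and> idxs g2 = i"
  using assms(1)
proof (cases rule: ok_cases_C)
  case p then show ?thesis using assms(2) absS_pure by (simp split: if_splits)
qed (use assms(2) in \<open>auto simp: absS_def\<close>)

lemma absS_AP: assumes "okC t2" "absS t2 = Some (AP s i)" shows "pureC t2 \<and> idxs t2 = i"
  using assms(1)
proof (cases rule: ok_cases_C)
  case p then show ?thesis using assms(2) absS_pure by (simp split: if_splits)
qed (use assms(2) in \<open>auto simp: absS_def\<close>)

lemma thrC: assumes o: "okC t" and m: "tmove t l t'" shows "thr_ok C t l t'"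
proof -
  have cl: "t' = [] \<or> okC t'" using okC_close[OF o m] .
  from o show ?thesis
  proof (cases rule: ok_cases_C)
    case gu then show ?thesis using rigid_ok[of C t l t'] m cl o by (simp add: absC_def)
  next
    case gv' then show ?thesis using rigid_ok[of C t l t'] m cl o by (simp add: absC_def)
  next
    case g then show ?thesis using rigid_ok[of C t l t'] m cl o by (simp add: absC_def)
  next
    case (gv g)
    from m gv consider (grow) k where "k \<in> Ix" "l = Tau" "t' = Gv # V k # g" | (drop) "l = Tau" "t' = g"
      | (lv) "l = LV" "t' = Z # g" by (auto simp: tm_Gv)
    note mcases = this
    note gp = uvl_pure[OF gv(1)]
    note c0 = amC_pure[OF gp]
    show ?thesis
    proof (cases "realz g")
      case True
      then have n: "absC t = None" using gv by (simp add: absC_def)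
      from mcases show ?thesis
      proof cases
        case grow then show ?thesis using n True by (intro thr_inert) (auto simp: absC_def realz_V)
      next
        case drop then show ?thesis using n c0 by (intro thr_inert) auto
      next
        case lv
        let ?is = "idxs g"
        have isI: "set ?is \<subseteq> Ix" using uvl_idxs[OF gv(1)] .
        show ?thesis
        proof (rule thr_gen[of C t Gv "Gv # map V ?is" l "Z # map V ?is"])
          show "ttaus [Gv] (Gv # map V ?is)" using genCGv[OF isI] .
          show "okf C (Gv # map V ?is)" using okC_GvI[OF uvl_mapV[OF isI]] by simp
          show "tmove (Gv # map V ?is) l (Z # map V ?is)" using lv by (simp add: tm_Gv)
          show "am (absf C) (wm (Z # map V ?is)) = am (absf C) (wm t')"
            using lv True by (simp add: absC_def realz_def)
          show "Z # map V ?is = [] \<or> okf C (Z # map V ?is)" using okC_ZI[OF uvl_mapV[OF isI]] by simp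
        qed (use n in \<open>auto simp: cm_C absC_def realz_mapV\<close>)
      qed
    next
      case nr: False
      have abt: "absC t = Some (AGv (str g) (idxs g))" using gv nr by (simp add: absC_def)
      show ?thesis
      proof (rule thr_partner)
        show "absf C t \<noteq> None" using abt by simp
      next
        fix t2 assume a: "okf C t2" "absf C t2 = absf C t"
        then obtain g2 where g2: "t2 = Gv # g2" "uvl g2" "\<not> realz g2" "str g2 = str g" "idxs g2 = idxs g"
          using absC_AGv[of t2] abt by auto
        from mcases show "\<exists>t2'' t2'. ttaus t2 t2'' \<and> okf C t2'' \<and> absf C t2'' = absf C t \<and> tmove t2'' l t2' \<and>
            am (absf C) (wm t2') = am (absf C) (wm t') \<and> (t2' = [] \<or> okf C t2')"
        proof cases
          case grow
          have mv: "tmove t2 l (Gv # V k # g2)" using g2 grow by (simp add: tm_Gv)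
          then show ?thesis using a okC_close[of t2 l] g2 grow nr
            by (intro exI[of _ t2] exI[of _ "Gv # V k # g2"]) (auto simp: absC_def realz_V)
        next
          case drop
          have mv: "tmove t2 l g2" using g2 drop by (simp add: tm_Gv)
          then show ?thesis using a okC_close[of t2 l] drop c0 amC_pure[OF uvl_pure[OF g2(2)]]
            by (intro exI[of _ t2] exI[of _ g2]) auto
        next
          case lv
          have mv: "tmove t2 l (Z # g2)" using g2 lv by (simp add: tm_Gv)
          then show ?thesis using a okC_close[of t2 l] g2 lv
            by (intro exI[of _ t2] exI[of _ "Z # g2"]) (auto simp: absC_def)
        qed
      qed
    qed
  next
    case (z g)
    then have lt: "(l = Tau \<or> l = LZ) \<and> t' = g" using m by (simp add: tm_Z)
    have abt: "absC t = Some (AZ (str g) (idxs g))" using z by (simp add: absC_def)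
    show ?thesis
    proof (rule thr_partner)
      show "absf C t \<noteq> None" using abt by simp
    next
      fix t2 assume a: "okf C t2" "absf C t2 = absf C t"
      then obtain g2 where g2: "t2 = Z # g2" "uvl g2" using absC_AZ[of t2] abt by auto
      have mv: "tmove t2 l g2" using g2 lt by (simp add: tm_Z)
      then show "\<exists>t2'' t2'. ttaus t2 t2'' \<and> okf C t2'' \<and> absf C t2'' = absf C t \<and> tmove t2'' l t2' \<and>
            am (absf C) (wm t2') = am (absf C) (wm t') \<and> (t2' = [] \<or> okf C t2')"
        using a okC_close[of t2 l] lt amC_pure[OF uvl_pure[OF g2(2)]] amC_pure[OF uvl_pure[OF z(1)]]
        by (intro exI[of _ t2] exI[of _ g2]) auto
    qed
  next
    case p
    have n: "absC t = None" using pureC_absC[OF p] .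
    show ?thesis
    proof (cases "l = Tau")
      case True
      then show ?thesis using n amC_pure pureC_close[OF p m] by (intro thr_inert) auto
    next
      case False
      show ?thesis
        by (rule thr_gen[of C t G t l t']) (use n o m cl genCp[OF p] okf_nonempty[of C t] in \<open>auto simp: cm_C\<close>)
    qed
  qed
qed

end


context pcpG
begin

lemma pure_cases:
  assumes "pureC t"
  obtains (u) k g where "k \<in> Ix" "uvl g" "t = U k # g" | (v) k g where "k \<in> Ix" "uvl g" "t = V k # g"
    | (w) w j g where "W w j \<in> Ws" "uvl g" "t = W w j # g"
  using assms unfolding pureC_def uvc_def by (cases t) auto

lemma thrI: assumes o: "okC t" and m: "tmove t l t'" shows "thr_ok I t l t'"
proof -
  have cl: "t' = [] \<or> okC t'" using okC_close[OF o m] .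
  from o show ?thesis
  proof (cases rule: ok_cases_C)
    case gu then show ?thesis using rigid_ok[of I t l t'] m cl o by (simp add: absI_def)
  next
    case gv' then show ?thesis using rigid_ok[of I t l t'] m cl o by (simp add: absI_def)
  next
    case g then show ?thesis using rigid_ok[of I t l t'] m cl o by (simp add: absI_def)
  next
    case (gv g)
    from m gv consider (grow) k where "k \<in> Ix" "l = Tau" "t' = Gv # V k # g" | (drop) "l = Tau" "t' = g"
      | (lv) "l = LV" "t' = Z # g" by (auto simp: tm_Gv)
    note mcases = this
    have abt: "absI t = Some (AGv (str g) [])" using gv by (simp add: absI_def)
    show ?thesis
    proof (rule thr_partner)
      show "absf I t \<noteq> None" using abt by simp
    next
      fix t2 assume a: "okf I t2" "absf I t2 = absf I t"
      then obtain g2 where g2: "t2 = Gv # g2" "uvl g2" "str g2 = str g"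
        using absI_AGv[of t2] abt by auto
      from mcases show "\<exists>t2'' t2'. ttaus t2 t2'' \<and> okf I t2'' \<and> absf I t2'' = absf I t \<and> tmove t2'' l t2' \<and>
          am (absf I) (wm t2') = am (absf I) (wm t') \<and> (t2' = [] \<or> okf I t2')"
      proof cases
        case grow
        have mv: "tmove t2 l (Gv # V k # g2)" using g2 grow by (simp add: tm_Gv)
        then show ?thesis using a okC_close[of t2 l] g2 grow
          by (intro exI[of _ t2] exI[of _ "Gv # V k # g2"]) (auto simp: absI_def)
      next
        case drop
        have mv: "tmove t2 l g2" using g2 drop by (simp add: tm_Gv)
        then show ?thesis using a okC_close[of t2 l] drop g2 amI_pure[OF uvl_pure[OF g2(2)]] amI_pure[OF uvl_pure[OF gv(1)]]
          by (intro exI[of _ t2] exI[of _ g2]) auto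
      next
        case lv
        have mv: "tmove t2 l (Z # g2)" using g2 lv by (simp add: tm_Gv)
        then show ?thesis using a okC_close[of t2 l] g2 lv
          by (intro exI[of _ t2] exI[of _ "Z # g2"]) (auto simp: absI_def)
      qed
    qed
  next
    case (z g)
    then have lt: "(l = Tau \<or> l = LZ) \<and> t' = g" using m by (simp add: tm_Z)
    have abt: "absI t = Some (AZ (str g) [])" using z by (simp add: absI_def)
    show ?thesis
    proof (rule thr_partner)
      show "absf I t \<noteq> None" using abt by simp
    next
      fix t2 assume a: "okf I t2" "absf I t2 = absf I t"
      then obtain g2 where g2: "t2 = Z # g2" "uvl g2" "str g2 = str g" using absI_AZ[of t2] abt by auto
      have mv: "tmove t2 l g2" using g2 lt by (simp add: tm_Z)
      then show "\<exists>t2'' t2'. ttaus t2 t2'' \<and> okf I t2'' \<and> absf I t2'' = absf I t \<and> tmove t2'' l t2' \<and>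
            am (absf I) (wm t2') = am (absf I) (wm t') \<and> (t2' = [] \<or> okf I t2')"
        using a okC_close[of t2 l] lt g2 amI_pure[OF uvl_pure[OF g2(2)]] amI_pure[OF uvl_pure[OF z(1)]]
        by (intro exI[of _ t2] exI[of _ g2]) auto
    qed
  next
    case p
    have clp: "t' = [] \<or> pureC t'" using pureC_close[OF p m] .
    have same: "str t' = str t \<Longrightarrow> am absI (wm t') = am absI {#t#}"
      using amI_pure[OF clp] amI_pure[of t] p by (cases t) (auto simp: pureC_def)
    from p show ?thesis
    proof (cases rule: pure_cases)
      case (u k g)
      then have "l = Tau" "str t' = str t" using m by (auto simp: tm_U)
      then show ?thesis using same by (intro thr_inert) auto
    next
      case (v k g)
      then have "l = Tau" "str t' = str t" using m by (auto simp: tm_V)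
      then show ?thesis using same by (intro thr_inert) auto
    next
      case (w w j g)
      from m w consider (sym) a w' where "w = a # w'" "a \<in> Sig" "l = Sym a \<or> l = Tau" "t' = W w' j # g"
          "j = 0 \<or> j \<in> Ix"
        | (ix) "j \<in> Ix" "l = Idx j \<or> l = Tau" "t' = W w 0 # g"
        | (nil) "w = []" "j = 0" "l = Tau" "t' = g"
        by (auto simp: tm_W)
      then show ?thesis
      proof cases
        case sym
        have abt: "absI t = Some (AP (str t) [])" using absI_pure[OF p] w sym by simp
        show ?thesis
        proof (rule thr_partner)
          show "absf I t \<noteq> None" using abt by simp
        next
          fix t2 assume a: "okf I t2" "absf I t2 = absf I t"
          then have p2: "pureC t2" "str t2 = str t" using absI_AP[of t2] abt by auto
          then have "str t2 = a # (w' @ str g)" using w sym by simp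
          from normI[OF p2(1) this] obtain w2 j2 r2 where n2: "ttaus t2 (W (a # w2) j2 # r2)"
            "W (a # w2) j2 \<in> Ws" "uvl r2" "str (W (a # w2) j2 # r2) = a # (w' @ str g)" by blast
          let ?t2'' = "W (a # w2) j2 # r2"
          have pp: "pureC ?t2''" using n2 pureC_WI by blast
          have mv: "tmove ?t2'' l (W w2 j2 # r2)" using n2(2) sym W_sig[OF n2(2)] W_idx[OF n2(2)]
            by (auto simp: tm_W)
          have p3: "pureC (W w2 j2 # r2)" using W_suf[OF n2(2)] n2(3) pureC_WI by blast
          have p4: "pureC t'" using W_suf[of a w' j] w sym pureC_WI by auto
          show "\<exists>t2'' t2'. ttaus t2 t2'' \<and> okf I t2'' \<and> absf I t2'' = absf I t \<and> tmove t2'' l t2' \<and>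
            am (absf I) (wm t2') = am (absf I) (wm t') \<and> (t2' = [] \<or> okf I t2')"
            using n2 pp mv p3 p4 abt absI_pure[OF pp] amI_pure[of "W w2 j2 # r2"] amI_pure[of t'] sym w okC_pI
            by (intro exI[of _ ?t2''] exI[of _ "W w2 j2 # r2"]) auto
        qed
      next
        case ix
        have "str t' = str t" using ix w by simp
        show ?thesis
        proof (cases "l = Tau")
          case True then show ?thesis using same \<open>str t' = str t\<close> by (intro thr_inert) auto
        next
          case False
          then have "l = Idx j" using ix by auto
          then show ?thesis using same \<open>str t' = str t\<close> ix by (intro thr_loop) (auto simp: cm_I)
        qed
      next
        case nil
        then show ?thesis using same w by (intro thr_inert) auto
      qed
    qed
  qed
qed

lemma thrS: assumes o: "okC t" and m: "tmove t l t'" shows "thr_ok S t l t'"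
proof -
  have cl: "t' = [] \<or> okC t'" using okC_close[OF o m] .
  from o show ?thesis
  proof (cases rule: ok_cases_C)
    case gu then show ?thesis using rigid_ok[of S t l t'] m cl o by (simp add: absS_def)
  next
    case gv' then show ?thesis using rigid_ok[of S t l t'] m cl o by (simp add: absS_def)
  next
    case g then show ?thesis using rigid_ok[of S t l t'] m cl o by (simp add: absS_def)
  next
    case (gv g)
    from m gv consider (grow) k where "k \<in> Ix" "l = Tau" "t' = Gv # V k # g" | (drop) "l = Tau" "t' = g"
      | (lv) "l = LV" "t' = Z # g" by (auto simp: tm_Gv)
    note mcases = this
    have abt: "absS t = Some (AGv [] (idxs g))" using gv by (simp add: absS_def)
    show ?thesis
    proof (rule thr_partner)
      show "absf S t \<noteq> None" using abt by simp
    next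
      fix t2 assume a: "okf S t2" "absf S t2 = absf S t"
      then obtain g2 where g2: "t2 = Gv # g2" "uvl g2" "idxs g2 = idxs g"
        using absS_AGv[of t2] abt by auto
      from mcases show "\<exists>t2'' t2'. ttaus t2 t2'' \<and> okf S t2'' \<and> absf S t2'' = absf S t \<and> tmove t2'' l t2' \<and>
          am (absf S) (wm t2') = am (absf S) (wm t') \<and> (t2' = [] \<or> okf S t2')"
      proof cases
        case grow
        have mv: "tmove t2 l (Gv # V k # g2)" using g2 grow by (simp add: tm_Gv)
        then show ?thesis using a okC_close[of t2 l] g2 grow
          by (intro exI[of _ t2] exI[of _ "Gv # V k # g2"]) (auto simp: absS_def)
      next
        case drop
        have mv: "tmove t2 l g2" using g2 drop by (simp add: tm_Gv)
        then show ?thesis using a okC_close[of t2 l] drop g2 amS_pure[OF uvl_pure[OF g2(2)]] amS_pure[OF uvl_pure[OF gv(1)]]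
          by (intro exI[of _ t2] exI[of _ g2]) auto
      next
        case lv
        have mv: "tmove t2 l (Z # g2)" using g2 lv by (simp add: tm_Gv)
        then show ?thesis using a okC_close[of t2 l] g2 lv
          by (intro exI[of _ t2] exI[of _ "Z # g2"]) (auto simp: absS_def)
      qed
    qed
  next
    case (z g)
    then have lt: "(l = Tau \<or> l = LZ) \<and> t' = g" using m by (simp add: tm_Z)
    have abt: "absS t = Some (AZ [] (idxs g))" using z by (simp add: absS_def)
    show ?thesis
    proof (rule thr_partner)
      show "absf S t \<noteq> None" using abt by simp
    next
      fix t2 assume a: "okf S t2" "absf S t2 = absf S t"
      then obtain g2 where g2: "t2 = Z # g2" "uvl g2" "idxs g2 = idxs g" using absS_AZ[of t2] abt by auto
      have mv: "tmove t2 l g2" using g2 lt by (simp add: tm_Z)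
      then show "\<exists>t2'' t2'. ttaus t2 t2'' \<and> okf S t2'' \<and> absf S t2'' = absf S t \<and> tmove t2'' l t2' \<and>
            am (absf S) (wm t2') = am (absf S) (wm t') \<and> (t2' = [] \<or> okf S t2')"
        using a okC_close[of t2 l] lt g2 amS_pure[OF uvl_pure[OF g2(2)]] amS_pure[OF uvl_pure[OF z(1)]]
        by (intro exI[of _ t2] exI[of _ g2]) auto
    qed
  next
    case p
    have clp: "t' = [] \<or> pureC t'" using pureC_close[OF p m] .
    have same: "idxs t' = idxs t \<Longrightarrow> am absS (wm t') = am absS {#t#}"
      using amS_pure[OF clp] amS_pure[of t] p by (cases t) (auto simp: pureC_def)
    from p show ?thesis
    proof (cases rule: pure_cases)
      case (u k g)
      then have "l = Tau" "idxs t' = idxs t" using m by (auto simp: tm_U idx_def)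
      then show ?thesis using same by (intro thr_inert) auto
    next
      case (v k g)
      then have "l = Tau" "idxs t' = idxs t" using m by (auto simp: tm_V idx_def)
      then show ?thesis using same by (intro thr_inert) auto
    next
      case (w w j g)
      from m w consider (sym) a w' where "w = a # w'" "a \<in> Sig" "l = Sym a \<or> l = Tau" "t' = W w' j # g"
          "j = 0 \<or> j \<in> Ix"
        | (ix) "j \<in> Ix" "l = Idx j \<or> l = Tau" "t' = W w 0 # g"
        | (nil) "w = []" "j = 0" "l = Tau" "t' = g"
        by (auto simp: tm_W)
      then show ?thesis
      proof cases
        case sym
        have "idxs t' = idxs t" using sym w by simp
        show ?thesis
        proof (cases "l = Tau")
          case True then show ?thesis using same \<open>idxs t' = idxs t\<close> by (intro thr_inert) auto
        next
          case False
          then have "l = Sym a" using sym by auto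
          then show ?thesis using same \<open>idxs t' = idxs t\<close> sym by (intro thr_loop) (auto simp: cm_S)
        qed
      next
        case ix
        have j0: "j \<noteq> 0" using ix by (auto simp: idx_def)
        have abt: "absS t = Some (AP [] (idxs t))" using absS_pure[OF p] w j0 by simp
        show ?thesis
        proof (rule thr_partner)
          show "absf S t \<noteq> None" using abt by simp
        next
          fix t2 assume a: "okf S t2" "absf S t2 = absf S t"
          then have p2: "pureC t2" "idxs t2 = idxs t" using absS_AP[of t2] abt by auto
          then have "idxs t2 = j # idxs g" using w j0 by simp
          from normS[OF p2(1) this] obtain w2 r2 where n2: "ttaus t2 (W w2 j # r2)"
            "W w2 j \<in> Ws" "j \<in> Ix" "uvl r2" "idxs r2 = idxs g" by blast
          let ?t2'' = "W w2 j # r2"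
          have pp: "pureC ?t2''" using n2 pureC_WI by blast
          have mv: "tmove ?t2'' l (W w2 0 # r2)" using n2(2,3) ix by (auto simp: tm_W)
          have p3: "pureC (W w2 0 # r2)" using W_zero[OF n2(2)] n2(4) pureC_WI by blast
          have p4: "pureC t'" using W_zero[of w j] w ix pureC_WI by auto
          show "\<exists>t2'' t2'. ttaus t2 t2'' \<and> okf S t2'' \<and> absf S t2'' = absf S t \<and> tmove t2'' l t2' \<and>
            am (absf S) (wm t2') = am (absf S) (wm t') \<and> (t2' = [] \<or> okf S t2')"
            using n2 pp mv p3 p4 abt absS_pure[OF pp] amS_pure[of "W w2 0 # r2"] amS_pure[of t'] ix w okC_pI j0
            by (intro exI[of _ ?t2''] exI[of _ "W w2 0 # r2"]) auto
        qed
      next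
        case nil
        then show ?thesis using same w by (intro thr_inert) auto
      qed
    qed
  qed
qed

lemma tauC'_ign: "okC' t \<Longrightarrow> absC' t = None \<Longrightarrow> tmove t Tau t' \<Longrightarrow> am absC' (wm t') = {#}"
proof -
  assume o: "okC' t" and n: "absC' t = None" and m: "tmove t Tau t'"
  from o show ?thesis
  proof (cases rule: ok_cases_C')
    case g2 then show ?thesis using m by (auto simp: tm_G' absC'_def)
  next
    case gv then show ?thesis using m amC'_pure by (auto simp: tm_Gv absC'_def pureC'_def)
  next
    case z then show ?thesis using m amC'_pure by (auto simp: tm_Z pureC'_def)
  next
    case p then show ?thesis using pureC'_close[OF p m] amC'_pure by blast
  qed (use n in \<open>auto simp: absC'_def\<close>)
qed

lemma thrC': assumes o: "okC' t" and m: "tmove t l t'" shows "thr_ok C' t l t'"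
proof -
  have cl: "t' = [] \<or> okC' t'" using okC'_close[OF o m] .
  show ?thesis
  proof (cases "absC' t = None")
    case n: True
    show ?thesis
    proof (cases "l = Tau")
      case True
      then show ?thesis using tauC'_ign[OF o n] m n by (intro thr_inert) auto
    next
      case False
      show ?thesis
        by (rule thr_gen[of C' t G' t l t']) (use n o m cl genC'[OF o n] okf_nonempty[of C' t] in \<open>auto simp: cm_C'\<close>)
    qed
  next
    case False
    have "absC' t = Some (Rig t)" using o
    proof (cases rule: ok_cases_C')
      case p then show ?thesis using pureC'_absC' False by simp
    qed (use False in \<open>auto simp: absC'_def\<close>)
    then show ?thesis using rigid_ok[of C' t l t'] m cl o by simp
  qed
qed

end


context pcpG
begin

lemma van_filter: "(\<And>t. okf c t \<Longrightarrow> P t \<Longrightarrow> ttaus t []) \<Longrightarrow> okm c A \<Longrightarrow>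
   mtau (add_mset x (filter_mset (\<lambda>t. \<not> P t) A + filter_mset P A)) (add_mset x (filter_mset (\<lambda>t. \<not> P t) A))"
proof -
  assume v: "\<And>t. okf c t \<Longrightarrow> P t \<Longrightarrow> ttaus t []" and o: "okm c A"
  have "\<forall>t\<in>#filter_mset P A. t \<noteq> [] \<and> ttaus t []" using v o okf_nonempty unfolding okm_def by auto
  from van_many[OF this, of "add_mset x (filter_mset (\<lambda>t. \<not> P t) A)"] show ?thesis by simp
qed

lemma part: "A = filter_mset (\<lambda>t. \<not> P t) A + filter_mset P A"
  using multiset_partition[of A P] by (simp add: add.commute)

definition hDC :: "'s av \<Rightarrow> 's av option" where
  "hDC v = (case v of AGv s i \<Rightarrow> Some (AGv s i) | _ \<Rightarrow> None)"

lemma compat_DC: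
  assumes "ph D T T'"
  shows "\<exists>T''. mtau (add_mset [D] T') (add_mset [D] T'') \<and> ph D T T'' \<and> ph C T T''"
proof -
  let ?P = "\<lambda>t. absD t = None"
  let ?T'' = "filter_mset (\<lambda>t. \<not> ?P t) T' + filter_mset ?P T"
  have o: "okm D T" "okm D T'" and a: "am absD T = am absD T'" using assms unfolding ph_def by auto
  have 1: "mtau (add_mset [D] T') (add_mset [D] (filter_mset (\<lambda>t. \<not> ?P t) T'))"
    using van_filter[of D ?P T' "[D]", OF _ o(2)] vanD part[of T' ?P] by simp
  have "\<forall>t\<in>#filter_mset ?P T. t \<noteq> [] \<and> (\<exists>g. cmove D Tau {#[D], [g]#} \<and> ttaus [g] t)"
    using o(1) genD okf_nonempty[of D] unfolding okm_def by (auto simp: cm_D)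
  from gen_many[OF this] have 2: "mtau (add_mset [D] (filter_mset (\<lambda>t. \<not> ?P t) T')) (add_mset [D] ?T'')" .
  have okT'': "okm D ?T''" using o by (auto simp: okm_def)
  have "am absD ?T'' = am absD T'" using am_filter_some[of absD T'] am_filter_none[of absD T] by simp
  then have p1: "ph D T ?T''" using o okT'' a unfolding ph_def by simp
  have bind: "\<forall>t\<in>#filter_mset (\<lambda>t. \<not> ?P t) X. absC t = Option.bind (absD t) hDC" if "okm D X" for X
  proof
    fix t assume "t \<in># filter_mset (\<lambda>t. \<not> ?P t) X"
    then have "okD t" "absD t \<noteq> None" using that unfolding okm_def by auto
    then show "absC t = Option.bind (absD t) hDC"
      by (cases rule: ok_cases_D) (auto simp: absD_def absC_def hDC_def dest: pureD_absD)
  qed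
  have e1: "am absC (filter_mset (\<lambda>t. \<not> ?P t) T') = am absC (filter_mset (\<lambda>t. \<not> ?P t) T)"
    using am_bind[OF bind[OF o(2)]] am_bind[OF bind[OF o(1)]] am_filter_some[of absD T] am_filter_some[of absD T'] a
    by simp
  have "am absC T = am absC (filter_mset (\<lambda>t. \<not> ?P t) T) + am absC (filter_mset ?P T)"
    using part[of T ?P] by (metis am_plus)
  then have "am absC ?T'' = am absC T" using e1 by simp
  moreover have "okm C T" "okm C ?T''" using o okT'' okD_okC unfolding okm_def by auto
  ultimately have p2: "ph C T ?T''" unfolding ph_def by simp
  show ?thesis using 1 2 p1 p2 by (meson rtranclp_trans)
qed

definition cpv :: "'s const list \<Rightarrow> 's const list" where
  "cpv t = (case t of Gv # g \<Rightarrow> Gv # map V (idxs g) | _ \<Rightarrow> t)"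

definition hCI :: "'s av \<Rightarrow> 's av option" where
  "hCI v = (case v of Rig x \<Rightarrow> Some (Rig x) | AGv s i \<Rightarrow> Some (AGv s []) | AZ s i \<Rightarrow> Some (AZ s []) | _ \<Rightarrow> None)"
definition hCS :: "'s av \<Rightarrow> 's av option" where
  "hCS v = (case v of Rig x \<Rightarrow> Some (Rig x) | AGv s i \<Rightarrow> Some (AGv [] i) | AZ s i \<Rightarrow> Some (AZ [] i) | _ \<Rightarrow> None)"

lemma ignC_cases: "okC t \<Longrightarrow> absC t = None \<Longrightarrow> (\<exists>g. t = Gv # g \<and> uvl g \<and> realz g) \<or> pureC t"
  by (cases rule: ok_cases_C) (auto simp: absC_def split: if_splits)

lemma cpv_props:
  assumes "okC t" "absC t = None"
  shows "okC (cpv t) \<and> absC (cpv t) = None \<and> absI (cpv t) = absI t \<and> absS (cpv t) = absS t \<and>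
     (\<exists>g. cmove C Tau {#[C], [g]#} \<and> ttaus [g] (cpv t))"
  using ignC_cases[OF assms]
proof
  assume "\<exists>g. t = Gv # g \<and> uvl g \<and> realz g"
  then obtain g where g: "t = Gv # g" "uvl g" "realz g" by blast
  then have cp: "cpv t = Gv # map V (idxs g)" by (simp add: cpv_def)
  have isI: "set (idxs g) \<subseteq> Ix" using uvl_idxs[OF g(2)] .
  have "cmove C Tau {#[C], [Gv]#}" by (simp add: cm_C)
  then show ?thesis using cp g okC_GvI[OF uvl_mapV[OF isI]] genCGv[OF isI]
    by (auto simp: absC_def absI_def absS_def realz_mapV realz_def)
next
  assume p: "pureC t"
  then obtain c g where "t = c # g" "basic c" using pureC_head by blast
  then have cp: "cpv t = t" unfolding cpv_def basic_def uvc_def Wset_def by auto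
  have "cmove C Tau {#[C], [G]#}" by (simp add: cm_C)
  then show ?thesis using cp p okC_pI genCp[OF p] pureC_absC by auto
qed

lemma okm_IS: "okm I T = okm C T" "okm S T = okm C T" by (auto simp: okm_def)

lemma compat_CX:
  assumes "ph C T T'" and Ph: "Ph = I \<or> Ph = S"
  shows "\<exists>T''. mtau (add_mset [C] T') (add_mset [C] T'') \<and> ph C T T'' \<and> ph Ph T T''"
proof -
  let ?P = "\<lambda>t. absC t = None"
  let ?T'' = "filter_mset (\<lambda>t. \<not> ?P t) T' + image_mset cpv (filter_mset ?P T)"
  let ?h = "if Ph = I then hCI else hCS"
  have o: "okm C T" "okm C T'" and a: "am absC T = am absC T'" using assms unfolding ph_def by auto
  have 1: "mtau (add_mset [C] T') (add_mset [C] (filter_mset (\<lambda>t. \<not> ?P t) T'))"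
    using van_filter[of C ?P T' "[C]", OF _ o(2)] vanC part[of T' ?P] by simp
  have cpp: "t \<in># filter_mset ?P T \<Longrightarrow> okC (cpv t) \<and> absC (cpv t) = None \<and> absI (cpv t) = absI t \<and> absS (cpv t) = absS t \<and>
     (\<exists>g. cmove C Tau {#[C], [g]#} \<and> ttaus [g] (cpv t))" for t
    using cpv_props o(1) unfolding okm_def by auto
  have "\<forall>t\<in>#image_mset cpv (filter_mset ?P T). t \<noteq> [] \<and> (\<exists>g. cmove C Tau {#[C], [g]#} \<and> ttaus [g] t)"
    using cpp okf_nonempty[of C] by auto
  from gen_many[OF this] have 2: "mtau (add_mset [C] (filter_mset (\<lambda>t. \<not> ?P t) T')) (add_mset [C] ?T'')" .
  have okT'': "okm C ?T''" using o cpp by (auto simp: okm_def)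
  have "am absC (image_mset cpv (filter_mset ?P T)) = {#}" using cpp by (intro am_all_none) auto
  then have "am absC ?T'' = am absC T'" using am_filter_some[of absC T'] by simp
  then have p1: "ph C T ?T''" using o okT'' a unfolding ph_def by simp
  have bind: "\<forall>t\<in>#filter_mset (\<lambda>t. \<not> ?P t) Y. absf Ph t = Option.bind (absC t) ?h" if "okm C Y" for Y
  proof
    fix t assume "t \<in># filter_mset (\<lambda>t. \<not> ?P t) Y"
    then have "okC t" "absC t \<noteq> None" using that unfolding okm_def by auto
    then show "absf Ph t = Option.bind (absC t) ?h" using Ph
    proof (cases rule: ok_cases_C)
      case p then show ?thesis using pureC_absC \<open>absC t \<noteq> None\<close> by simp
    qed (auto simp: absC_def absI_def absS_def hCI_def hCS_def)
  qed
  have e1: "am (absf Ph) (filter_mset (\<lambda>t. \<not> ?P t) T') = am (absf Ph) (filter_mset (\<lambda>t. \<not> ?P t) T)"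
    using am_bind[OF bind[OF o(2)]] am_bind[OF bind[OF o(1)]] am_filter_some[of absC T] am_filter_some[of absC T'] a
    by simp
  have e2: "am (absf Ph) (image_mset cpv (filter_mset ?P T)) = am (absf Ph) (filter_mset ?P T)"
    using cpp Ph by (intro am_image_same) auto
  have "am (absf Ph) T = am (absf Ph) (filter_mset (\<lambda>t. \<not> ?P t) T) + am (absf Ph) (filter_mset ?P T)"
    using part[of T ?P] by (metis am_plus)
  then have "am (absf Ph) ?T'' = am (absf Ph) T" using e1 e2 by simp
  moreover have "okm Ph T" "okm Ph ?T''" using o okT'' Ph by (auto simp: okm_IS)
  ultimately have p2: "ph Ph T ?T''" unfolding ph_def by simp
  show ?thesis using 1 2 p1 p2 by (meson rtranclp_trans)
qed

definition hIC' :: "'s av \<Rightarrow> 's av option" where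
  "hIC' v = (case v of Rig x \<Rightarrow> Some (Rig x) | _ \<Rightarrow> None)"

lemma compat_XC':
  assumes "ph Ph T T'" and Ph: "Ph = I \<or> Ph = S"
  shows "ph C' T T'"
proof -
  have o: "okm C T" "okm C T'" and a: "am (absf Ph) T = am (absf Ph) T'" using assms unfolding ph_def by (auto simp: okm_IS)
  have bind: "\<forall>t\<in>#Y. absC' t = Option.bind (absf Ph t) hIC'" if "okm C Y" for Y
  proof
    fix t assume "t \<in># Y"
    then have "okC t" using that unfolding okm_def by auto
    then show "absC' t = Option.bind (absf Ph t) hIC'" using Ph
    proof (cases rule: ok_cases_C)
      case p
      have "absC' t = None" using p pureC_head absC'_basic by metis
      then show ?thesis using absI_pure[OF p] absS_pure[OF p] Ph by (auto simp: hIC'_def)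
    qed (auto simp: absC'_def absI_def absS_def hIC'_def)
  qed
  have "am absC' T = am absC' T'" using am_bind[OF bind[OF o(1)]] am_bind[OF bind[OF o(2)]] a by simp
  moreover have "okm C' T" "okm C' T'" using o okC_okC' unfolding okm_def by auto
  ultimately show ?thesis unfolding ph_def by simp
qed

lemma compat_C'N:
  assumes "ph C' T T'"
  shows "mtau (add_mset [C'] T') (add_mset [C'] T)"
proof -
  let ?P = "\<lambda>t. absC' t = None"
  have o: "okm C' T" "okm C' T'" and a: "am absC' T = am absC' T'" using assms unfolding ph_def by auto
  have 1: "mtau (add_mset [C'] T') (add_mset [C'] (filter_mset (\<lambda>t. \<not> ?P t) T'))"
    using van_filter[of C' ?P T' "[C']", OF _ o(2)] vanC' part[of T' ?P] by simp
  have "\<forall>t\<in>#filter_mset ?P T. t \<noteq> [] \<and> (\<exists>g. cmove C' Tau {#[C'], [g]#} \<and> ttaus [g] t)"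
    using o(1) genC' okf_nonempty[of C'] unfolding okm_def by (auto simp: cm_C')
  from gen_many[OF this] have 2: "mtau (add_mset [C'] (filter_mset (\<lambda>t. \<not> ?P t) T'))
      (add_mset [C'] (filter_mset (\<lambda>t. \<not> ?P t) T' + filter_mset ?P T))" .
  have rig: "\<forall>t\<in>#Y. absC' t \<noteq> None \<longrightarrow> absC' t = Some (Rig t)" for Y
    by (auto simp: absC'_def split: list.splits const.splits)
  have im: "am absC' Y = image_mset Rig (filter_mset (\<lambda>t. \<not> ?P t) Y)" for Y
    unfolding am_def using rig[of Y] by (intro image_mset_cong) auto
  have "image_mset Rig (filter_mset (\<lambda>t. \<not> ?P t) T) = image_mset Rig (filter_mset (\<lambda>t. \<not> ?P t) T') + {#}"
    using a im by simp
  from image_mset_eq_image_mset_plusD[OF this] have "filter_mset (\<lambda>t. \<not> ?P t) T = filter_mset (\<lambda>t. \<not> ?P t) T'"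
    by (auto simp: inj_on_def)
  then have "filter_mset (\<lambda>t. \<not> ?P t) T' + filter_mset ?P T = T" using part[of T ?P] by simp
  then show ?thesis using 1 2 by (metis rtranclp_trans)
qed

end


context pcpG
begin

lemma basic_noctrl: "basic x \<Longrightarrow> \<not> isctrl x"
  unfolding basic_def uvc_def Wset_def isctrl_def by auto

lemma okC'_noctrl: assumes "okC' t" shows "\<forall>x\<in>set t. \<not> isctrl x"
  using assms
proof -
  have bl_nc: "bl g \<Longrightarrow> \<forall>x\<in>set g. \<not> isctrl x" for g using basic_noctrl by blast
  have nc: "\<not> isctrl Gu" "\<not> isctrl Gv" "\<not> isctrl Gv'" "\<not> isctrl G" "\<not> isctrl G'" "\<not> isctrl Z"
    by (auto simp: isctrl_def)
  from assms show ?thesis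
  proof (cases rule: ok_cases_C')
    case gu then show ?thesis using nc by (auto simp: isctrl_def)
  next
    case gv' then show ?thesis using bl_nc[OF uvl_bl[OF uvl_vuf[OF gv'(1,2)]]] nc by auto
  next
    case g then show ?thesis using bl_nc[OF uvl_bl[OF g(1)]] nc by auto
  next
    case g2 then show ?thesis using bl_nc[OF g2(1)] nc by auto
  next
    case gv then show ?thesis using bl_nc[OF gv(1)] nc by auto
  next
    case z then show ?thesis using bl_nc[OF z(1)] nc by auto
  next
    case p then show ?thesis using bl_nc unfolding pureC'_def by auto
  qed
qed

lemma okf_noctrl: "c \<in> phases \<Longrightarrow> okf c t \<Longrightarrow> \<forall>x\<in>set t. \<not> isctrl x"
  unfolding phases_def using okC'_noctrl okC_okC' okD_okC by (auto simp: okf_def split: if_splits)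

lemma phase_ctrl: "c \<in> phases \<Longrightarrow> isctrl c"
  unfolding phases_def isctrl_def by auto

lemma good_ph: "c \<in> phases \<Longrightarrow> okm c T \<Longrightarrow> good (add_mset [c] T)"
  unfolding good_def okm_def using okf_noctrl okf_nonempty by fastforce

definition Rel0 :: "'s const list multiset \<Rightarrow> 's const list multiset \<Rightarrow> bool" where
  "Rel0 m n \<longleftrightarrow> (m = n \<and> good m) \<or> (m = {#[X]#} \<and> n = {#[Y]#}) \<or>
     (m = {#[X]#} \<and> (\<exists>T'. n = add_mset [D] T' \<and> ph D {#} T')) \<or> phR m n"

definition Rel :: "'s const list multiset \<Rightarrow> 's const list multiset \<Rightarrow> bool" where
  "Rel m n \<longleftrightarrow> Rel0 m n \<or> Rel0 n m"

lemma Rel_sym: "Rel m n \<Longrightarrow> Rel n m" unfolding Rel_def by blast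
lemma Rel_id: "good m \<Longrightarrow> Rel m m" unfolding Rel_def Rel0_def by blast
lemma Rel_ph: "phR m n \<Longrightarrow> Rel m n" unfolding Rel_def Rel0_def by blast
lemma Rel_phI: "c \<in> phases \<Longrightarrow> ph c T T' \<Longrightarrow> Rel (add_mset [c] T) (add_mset [c] T')"
  using Rel_ph phR_I by blast

lemma mem_ctrl:
  assumes "c \<in> phases" "okm c T" "add_mset t m0 = add_mset [c] T" "\<not> isctrl (hd t) \<or> t \<noteq> [hd t]"
  shows "t \<in># T \<and> m0 = add_mset [c] (T - {#t#})"
proof -
  have "t \<noteq> [c]" using assms(4) phase_ctrl[OF assms(1)] by auto
  with assms(3) obtain K where "m0 = add_mset [c] K" "T = add_mset t K"
    by (auto simp: add_eq_conv_ex)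
  then show ?thesis by simp
qed

lemma thr_all: "c \<in> phases \<Longrightarrow> okf c t \<Longrightarrow> tmove t l t' \<Longrightarrow> thr_ok c t l t' \<and> (t' = [] \<or> okf c t')"
proof -
  assume a: "c \<in> phases" "okf c t" "tmove t l t'"
  consider "c = D" | "c = C" | "c = I" | "c = S" | "c = C'" using a(1) unfolding phases_def by auto
  then show ?thesis
  proof cases
    case 1 then show ?thesis using thrD okD_close a by simp
  next
    case 2 then show ?thesis using thrC okC_close a by simp
  next
    case 3 then show ?thesis using thrI okC_close a by simp
  next
    case 4 then show ?thesis using thrS okC_close a by simp
  next
    case 5 then show ?thesis using thrC' okC'_close a by simp
  qed
qed

lemma phase_sim:
  assumes "phR m n" "mstep m l m'"
  shows "(\<exists>n'' n'. mtau n n'' \<and> mstep n'' l n' \<and> Rel m n'' \<and> Rel m' n') \<or> (l = Tau \<and> Rel m' n)"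
proof -
  from assms(1) obtain c T T' where c: "c \<in> phases" and mn: "m = add_mset [c] T" "n = add_mset [c] T'"
    and p: "ph c T T'" unfolding phR_def by blast
  have okT: "okm c T" "okm c T'" using p unfolding ph_def by auto
  from assms(2)[unfolded mstep_def] show ?thesis
  proof (elim disjE exE conjE)
    fix t t' m0 assume a: "m = add_mset t m0" "tmove t l t'" "m' = m0 + wm t'"
    have "\<not> isctrl (hd t) \<or> t \<noteq> [hd t]" using a(2) tm_ctrl by (cases t) auto
    then have tT: "t \<in># T" "m0 = add_mset [c] (T - {#t#})" using mem_ctrl[OF c okT(1)] a(1) mn(1) by auto
    define T0 where "T0 = T - {#t#}"
    have T: "T = add_mset t T0" using tT T0_def by simp
    have okt: "okf c t" using okT(1) tT(1) unfolding okm_def by auto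
    from thr_all[OF c okt a(2)] have th: "thr_ok c t l t'" "t' = [] \<or> okf c t'" by auto
    from thread_resp[OF c p T a(2) th(2) th(1)]
    have r: "(\<exists>n'' n'. mtau (add_mset [c] T') n'' \<and> mstep n'' l n' \<and> phR (add_mset [c] T) n'' \<and>
              phR (add_mset [c] (T0 + wm t')) n') \<or> (l = Tau \<and> phR (add_mset [c] (T0 + wm t')) (add_mset [c] T'))" .
    have "m' = add_mset [c] (T0 + wm t')" using a(3) tT(2) T0_def by simp
    then show ?thesis using r mn Rel_ph by metis
  next
    fix x r m0 assume a: "m = add_mset [x] m0" "cmove x l r" "m' = m0 + r"
    have ix: "isctrl x" using a(2) unfolding cmove_def by auto
    have "[x] \<notin># T" using okT(1) okf_noctrl[OF c] ix unfolding okm_def by fastforce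
    then have xc: "x = c" "m0 = T" using a(1) mn(1) by (metis insert_noteq_member list.inject add_eq_conv_ex)+
    have gT: "good (add_mset [c] T)" using good_ph[OF c okT(1)] .
    consider "c = D" | "c = C" | "c = I" | "c = S" | "c = C'" using c unfolding phases_def by auto
    then show ?thesis
    proof cases
      case 1
      from a(2)[unfolded xc 1 cm_D] show ?thesis
      proof (elim disjE conjE)
        assume l: "l = Tau" "r = {#[D], [Gu]#}"
        have "ph D (add_mset [Gu] T) T'" using p okD_GuI[of "[]" "[Gu]"] 1 unfolding ph_def by (simp add: absD_def)
        then have "Rel (add_mset [D] (add_mset [Gu] T)) (add_mset [D] T')" by (intro Rel_phI) auto
        then show ?thesis using l a(3) xc mn 1 by (simp add: add_mset_commute)
      next
        assume l: "l = LD" "r = {#[C]#}"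
        from compat_DC[OF p[unfolded 1]] obtain T'' where
          t: "mtau (add_mset [D] T') (add_mset [D] T'')" "ph D T T''" "ph C T T''" by blast
        have "mstep (add_mset [D] T'') LD (T'' + {#[C]#})" using cmove_mstep[of D LD "{#[C]#}"] by (simp add: cm_D)
        moreover have "Rel m (add_mset [D] T'')" using Rel_phI[of D T T''] t(2) mn 1 by simp
        moreover have "Rel m' (T'' + {#[C]#})" using t(3) a(3) xc l Rel_phI[of C T T''] by simp
        ultimately show ?thesis using t(1) mn 1 l by blast
      qed
    next
      case 2
      from a(2)[unfolded xc 2 cm_C] show ?thesis
      proof (elim disjE conjE)
        assume l: "l = LI" "r = {#[I]#}"
        from compat_CX[OF p[unfolded 2], of I] obtain T'' where
          t: "mtau (add_mset [C] T') (add_mset [C] T'')" "ph C T T''" "ph I T T''" by blast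
        have "mstep (add_mset [C] T'') LI (T'' + {#[I]#})" using cmove_mstep[of C LI "{#[I]#}"] by (simp add: cm_C)
        moreover have "Rel m (add_mset [C] T'')" using Rel_phI[of C T T''] t(2) mn 2 by simp
        moreover have "Rel m' (T'' + {#[I]#})" using t(3) a(3) xc l Rel_phI[of I T T''] by simp
        ultimately show ?thesis using t(1) mn 2 l by blast
      next
        assume l: "l = LS" "r = {#[S]#}"
        from compat_CX[OF p[unfolded 2], of S] obtain T'' where
          t: "mtau (add_mset [C] T') (add_mset [C] T'')" "ph C T T''" "ph S T T''" by blast
        have "mstep (add_mset [C] T'') LS (T'' + {#[S]#})" using cmove_mstep[of C LS "{#[S]#}"] by (simp add: cm_C)
        moreover have "Rel m (add_mset [C] T'')" using Rel_phI[of C T T''] t(2) mn 2 by simp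
        moreover have "Rel m' (T'' + {#[S]#})" using t(3) a(3) xc l Rel_phI[of S T T''] by simp
        ultimately show ?thesis using t(1) mn 2 l by blast
      next
        assume l: "l = Tau" "r = {#[C], [G]#}"
        have "mstep n Tau (T' + {#[C], [G]#})" using cmove_mstep[of C Tau "{#[C], [G]#}" T'] mn 2 by (simp add: cm_C)
        moreover have "ph C (add_mset [G] T) (add_mset [G] T')" using p okC_GI[of "[]" "[G]"] 2
          unfolding ph_def by (simp add: absC_def)
        then have "Rel (add_mset [C] (add_mset [G] T)) (add_mset [C] (add_mset [G] T'))" by (intro Rel_phI) auto
        moreover have "Rel m n" using p mn c Rel_phI by blast
        ultimately show ?thesis using l a(3) xc 2 by (auto simp: add_mset_commute)
      next
        assume l: "l = Tau" "r = {#[C], [Gv]#}"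
        have "ph C (add_mset [Gv] T) T'" using p okC_GvI[of "[]" "[Gv]"] 2 unfolding ph_def
          by (simp add: absC_def realz_def)
        then have "Rel (add_mset [C] (add_mset [Gv] T)) (add_mset [C] T')" by (intro Rel_phI) auto
        then show ?thesis using l a(3) xc mn 2 by (simp add: add_mset_commute)
      qed
    next
      case 3
      from a(2)[unfolded xc 3 cm_I] show ?thesis
      proof (elim disjE conjE bexE)
        assume l: "l = LI" "r = {#[C']#}"
        have t: "ph C' T T'" using compat_XC'[OF p[unfolded 3]] by simp
        have "mstep n LI (T' + {#[C']#})" using cmove_mstep[of I LI "{#[C']#}" T'] mn 3 by (simp add: cm_I)
        moreover have "Rel m n" using p mn c Rel_phI by blast
        moreover have "Rel m' (T' + {#[C']#})" using t a(3) xc l Rel_phI[of C' T T'] by simp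
        ultimately show ?thesis using l by blast
      next
        fix k assume l: "k \<in> Ix" "l = Idx k" "r = {#[I]#}"
        have "mstep n l (T' + {#[I]#})" using cmove_mstep[of I l "{#[I]#}" T'] mn 3 l by (simp add: cm_I)
        moreover have "Rel m n" using p mn c Rel_phI by blast
        ultimately show ?thesis using l a(3) xc mn 3 by auto
      qed
    next
      case 4
      from a(2)[unfolded xc 4 cm_S] show ?thesis
      proof (elim disjE conjE bexE)
        assume l: "l = LS" "r = {#[C']#}"
        have t: "ph C' T T'" using compat_XC'[OF p[unfolded 4]] by simp
        have "mstep n LS (T' + {#[C']#})" using cmove_mstep[of S LS "{#[C']#}" T'] mn 4 by (simp add: cm_S)
        moreover have "Rel m n" using p mn c Rel_phI by blast
        moreover have "Rel m' (T' + {#[C']#})" using t a(3) xc l Rel_phI[of C' T T'] by simp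
        ultimately show ?thesis using l by blast
      next
        fix b assume l: "b \<in> Sig" "l = Sym b" "r = {#[S]#}"
        have "mstep n l (T' + {#[S]#})" using cmove_mstep[of S l "{#[S]#}" T'] mn 4 l by (simp add: cm_S)
        moreover have "Rel m n" using p mn c Rel_phI by blast
        ultimately show ?thesis using l a(3) xc mn 4 by auto
      qed
    next
      case 5
      from a(2)[unfolded xc 5 cm_C'] show ?thesis
      proof (elim disjE conjE)
        assume l: "l = Tau" "r = {#[C'], [G']#}"
        have "ph C' (add_mset [G'] T) T'" using p okC'_G'I[of "[]" "[G']"] 5 unfolding ph_def by (simp add: absC'_def)
        then have "Rel (add_mset [C'] (add_mset [G'] T)) (add_mset [C'] T')" by (intro Rel_phI) auto
        then show ?thesis using l a(3) xc mn 5 by (simp add: add_mset_commute)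
      next
        assume l: "l = Tau" "r = {#}"
        have t: "mtau (add_mset [C'] T') (add_mset [C'] T)" using compat_C'N[OF p[unfolded 5]] .
        have "mstep (add_mset [C'] T) Tau T" using cmove_mstep[of C' Tau "{#}" T] by (simp add: cm_C')
        moreover have "Rel m (add_mset [C'] T)" using gT mn 5 Rel_id by simp
        moreover have "good T" using gT unfolding good_def by simp
        ultimately show ?thesis using t l a(3) xc mn 5 Rel_id by auto
      qed
    qed
  qed
qed

end


context pcpG
begin

lemma good_single: "isctrl x \<Longrightarrow> good {#[x]#}"
  unfolding good_def by auto

lemma ctrl_XYD[simp]: "isctrl X" "isctrl Y" "isctrl D"
  by (auto simp: isctrl_def)

lemma mstep_single: "isctrl x \<Longrightarrow> mstep {#[x]#} l m' \<Longrightarrow> cmove x l m'"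
  unfolding mstep_def
proof (elim disjE exE conjE)
  fix t t' m0 assume "isctrl x" "{#[x]#} = add_mset t m0" "tmove t l t'"
  then show "cmove x l m'" using tm_ctrl[of x "[]" l t'] by (metis add_mset_eq_single)
next
  fix y r m0 assume "{#[x]#} = add_mset [y] m0" "cmove y l r" "m' = m0 + r"
  then show "cmove x l m'" by (metis add_0 add_mset_eq_single list.inject)
qed

lemma relD: "Rel n' {#[D]#} \<Longrightarrow> Rel n' {#[X]#}"
proof -
  assume "Rel n' {#[D]#}"
  then consider "n' = {#[D]#}" | "n' = {#[X]#}" | T'' where "n' = add_mset [D] T''" "ph D {#} T''"
    unfolding Rel_def Rel0_def phR_def
    by (auto simp: ph_def add_mset_eq_single)
  then show ?thesis
  proof cases
    case 1
    have "ph D {#} {#}" by (simp add: ph_def)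
    then show ?thesis using 1 unfolding Rel_def Rel0_def by blast
  next
    case 2 then show ?thesis using Rel_id good_single by simp
  next
    case 3 then show ?thesis unfolding Rel_def Rel0_def by blast
  qed
qed

lemma Xfam_resp:
  assumes "ph D {#} T'" "mstep (add_mset [D] T') l n'"
  shows "(\<exists>x'' x'. mtau {#[X]#} x'' \<and> mstep x'' l x' \<and> Rel (add_mset [D] T') x'' \<and> Rel n' x') \<or>
         (l = Tau \<and> Rel n' {#[X]#})"
proof -
  have "ph D T' {#}" using assms(1) unfolding ph_def by auto
  then have "phR (add_mset [D] T') {#[D]#}" using phR_I[of D T' "{#}"] by simp
  from phase_sim[OF this assms(2)] show ?thesis
  proof
    assume "\<exists>n'' n'a. mtau {#[D]#} n'' \<and> mstep n'' l n'a \<and> Rel (add_mset [D] T') n'' \<and> Rel n' n'a"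
    then obtain p'' p' where p: "mtau {#[D]#} p''" "mstep p'' l p'" "Rel (add_mset [D] T') p''" "Rel n' p'" by blast
    have "mstep {#[X]#} Tau {#[D]#}" using cmove_mstep[of X Tau "{#[D]#}" "{#}"] by (simp add: cm_X)
    then have "mtau {#[X]#} p''" using p(1) by (rule converse_rtranclp_into_rtranclp)
    then show ?thesis using p by blast
  next
    assume "l = Tau \<and> Rel n' {#[D]#}"
    then show ?thesis using relD by blast
  qed
qed

lemma X_resp:
  assumes solv: "sol \<noteq> []" "set sol \<subseteq> Ix" "concat (map uu sol) = concat (map vv sol)"
    and n: "n = {#[Y]#} \<or> (\<exists>T'. n = add_mset [D] T' \<and> ph D {#} T')"
    and m: "mstep {#[X]#} l m'"
  shows "(\<exists>n'' n'. mtau n n'' \<and> mstep n'' l n' \<and> Rel {#[X]#} n'' \<and> Rel m' n') \<or> (l = Tau \<and> Rel m' n)"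
proof -
  have RX: "Rel {#[X]#} n" using n unfolding Rel_def Rel0_def by blast
  obtain T' where T': "mtau n (add_mset [D] T')" "ph D {#} T'"
  proof (cases "n = {#[Y]#}")
    case True
    have "mstep {#[Y]#} Tau {#[D]#}" using cmove_mstep[of Y Tau "{#[D]#}" "{#}"] by (simp add: cm_Y)
    then have "mtau n (add_mset [D] {#})" using True by (simp add: r_into_rtranclp)
    moreover have "ph D {#} {#}" by (simp add: ph_def)
    ultimately show ?thesis using that by blast
  next
    case False
    then obtain T' where "n = add_mset [D] T'" "ph D {#} T'" using n by blast
    then show ?thesis using that by blast
  qed
  have okT': "okm D T'" and amT': "am absD T' = {#}" using T'(2) unfolding ph_def by auto
  from mstep_single[OF ctrl_XYD(1) m] have "cmove X l m'" .
  then consider (lu) "l = LU" "m' = {#[D], [Gv]#}" | (tau) "l = Tau" "m' = {#[D]#}" by (auto simp: cm_X)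
  then show ?thesis
  proof cases
    case tau
    show ?thesis
    proof (cases "n = {#[Y]#}")
      case True
      have "mstep {#[Y]#} Tau {#[D]#}" using cmove_mstep[of Y Tau "{#[D]#}" "{#}"] by (simp add: cm_Y)
      moreover have "Rel {#[D]#} {#[D]#}" using Rel_id good_single by simp
      ultimately show ?thesis using True tau RX by blast
    next
      case False
      then obtain T2 where "n = add_mset [D] T2" "ph D {#} T2" using n by blast
      then have "Rel {#[D]#} n" using Rel_phI[of D "{#}" T2] by simp
      then show ?thesis using tau by blast
    qed
  next
    case lu
    obtain i1 a' where sa: "sol = i1 # a'" using solv(1) by (cases sol) auto
    let ?gu = "Gu # map U a'" and ?gv = "Gv # map U sol"
    have ttg: "ttaus [Gu] ?gu" using Gu_grow[of a' "[]"] solv(2) sa by simp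
    have "mtau (add_mset [D] T') (add_mset [D] (add_mset ?gu T'))"
      using gen1[of D Gu ?gu T'] ttg by (simp add: cm_D)
    then have 1: "mtau n (add_mset [D] (add_mset ?gu T'))" using rtranclp_trans[OF T'(1)] by blast
    have "tmove ?gu LU ?gv" using sa solv(2) by (simp add: tm_Gu)
    then have "mstep (add_mset ?gu (add_mset [D] T')) LU (add_mset [D] T' + wm ?gv)"
      unfolding mstep_def by blast
    then have 2: "mstep (add_mset [D] (add_mset ?gu T')) LU (add_mset [D] (add_mset ?gv T'))"
      by (simp add: add_mset_commute)
    have okgu: "okD ?gu" using okD_GuI[of a' ?gu] solv(2) sa by simp
    have "ph D {#} (add_mset ?gu T')" using okgu okT' amT' by (simp add: ph_def absD_def)
    then have 3: "Rel {#[X]#} (add_mset [D] (add_mset ?gu T'))" unfolding Rel_def Rel0_def by blast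
    have r: "realz (map U sol)" using solv(3) by (simp add: realz_def vstr_def)
    have okgv: "okD ?gv" using okD_GvI[of "[]" sol ?gv] solv(2) by simp
    have okgv0: "okD [Gv]" using okD_GvI[of "[]" "[]" "[Gv]"] by simp
    have "ph D {#[Gv]#} (add_mset ?gv T')" using okgv okgv0 okT' amT' r
      by (simp add: ph_def absD_def realz_def)
    then have 4: "Rel m' (add_mset [D] (add_mset ?gv T'))" using lu Rel_phI[of D "{#[Gv]#}"] by simp
    show ?thesis using 1 2 3 4 lu by blast
  qed
qed

lemma msim_Rel:
  assumes solv: "sol \<noteq> []" "set sol \<subseteq> Ix" "concat (map uu sol) = concat (map vv sol)"
  shows "msim Rel"
  unfolding msim_def
proof (rule conjI; intro allI impI)
  fix m n assume "Rel m n"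
  have g0: "Rel0 a b \<Longrightarrow> good a \<and> good b" for a b
    unfolding Rel0_def phR_def ph_def
    using good_single good_ph by (auto simp: ph_def)
  show "good m \<and> good n \<and> Rel n m" using \<open>Rel m n\<close> g0 Rel_sym unfolding Rel_def by blast
next
  fix m n l m' assume a: "Rel m n \<and> mstep m l m'"
  have phs: "phR a b \<Longrightarrow> phR b a" for a b unfolding phR_def ph_def by metis
  have idr: "good m \<Longrightarrow> n = m \<Longrightarrow> (\<exists>n'' n'. mtau n n'' \<and> mstep n'' l n' \<and> Rel m n'' \<and> Rel m' n') \<or> (l = Tau \<and> Rel m' n)"
  proof -
    assume g: "good m" "n = m"
    have "mtau n n" by simp
    moreover have "mstep n l m'" using a g by simp
    moreover have "Rel m n" using Rel_id g by simp
    moreover have "Rel m' m'" using Rel_id[OF good_mstep[OF g(1)]] a by blast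
    ultimately show "(\<exists>n'' n'. mtau n n'' \<and> mstep n'' l n' \<and> Rel m n'' \<and> Rel m' n') \<or> (l = Tau \<and> Rel m' n)" by blast
  qed
  from a have "Rel0 m n \<or> Rel0 n m" unfolding Rel_def by blast
  then consider (id) "n = m" "good m" | (xy) "m = {#[X]#}" "n = {#[Y]#}"
    | (xf) T' where "m = {#[X]#}" "n = add_mset [D] T'" "ph D {#} T'"
    | (yx) "m = {#[Y]#}" "n = {#[X]#}"
    | (fx) T' where "n = {#[X]#}" "m = add_mset [D] T'" "ph D {#} T'"
    | (ph) "phR m n"
    unfolding Rel0_def using phs by blast
  then show "(\<exists>n'' n'. mtau n n'' \<and> mstep n'' l n' \<and> Rel m n'' \<and> Rel m' n') \<or> (l = Tau \<and> Rel m' n)"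
  proof cases
    case id then show ?thesis using idr by blast
  next
    case xy then show ?thesis using X_resp[OF solv, of n l m'] a by blast
  next
    case xf then show ?thesis using X_resp[OF solv, of n l m'] a by blast
  next
    case yx
    from mstep_single[OF ctrl_XYD(2)] a yx have "cmove Y l m'" by simp
    then have l: "l = Tau" "m' = {#[D]#}" by (auto simp: cm_Y)
    have "mstep {#[X]#} Tau {#[D]#}" using cmove_mstep[of X Tau "{#[D]#}" "{#}"] by (simp add: cm_X)
    moreover have "Rel {#[Y]#} {#[X]#}" unfolding Rel_def Rel0_def by blast
    moreover have "Rel {#[D]#} {#[D]#}" using Rel_id good_single by simp
    ultimately show ?thesis using l yx by blast
  next
    case fx
    from Xfam_resp[OF fx(3)] a fx show ?thesis by (metis Rel_sym)
  next
    case ph then show ?thesis using phase_sim a by blast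
  qed
qed

lemma XY_bisim:
  assumes "sol \<noteq> []" "set sol \<subseteq> Ix" "concat (map uu sol) = concat (map vv sol)"
  shows "branching_bisimilar Delta Tau (Cst X) (Cst Y)"
proof -
  have "Rel {#[X]#} {#[Y]#}" unfolding Rel_def Rel0_def by blast
  then show ?thesis using msim_bisim[OF msim_Rel[OF assms]] by simp
qed

end

theorem lemma6:
  fixes Sig :: "'s set" and inst :: "'s pcp"
  assumes "finite Sig" and "card Sig \<ge> 2"
    and "\<forall>(u, v) \<in> set inst. u \<noteq> [] \<and> v \<noteq> [] \<and> set u \<subseteq> Sig \<and> set v \<subseteq> Sig"
    and "pcp_solvable inst"
  shows "branching_bisimilar (rulesG Sig inst) Tau (Cst X) (Cst Y)"
proof -
  interpret pcpG Sig inst using assms(3) by unfold_locales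
  from assms(4) obtain sol where "sol \<noteq> []" "set sol \<subseteq> idx inst"
    "concat (map (uw inst) sol) = concat (map (vw inst) sol)" unfolding pcp_solvable_def by blast
  then show ?thesis using XY_bisim by blast
qed


end
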